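(* Consider Problem (P) under Assumption (A) over a graph satisfying Assumption (B), and run SONATA with weight matrix satisfying Assumption (W) and surrogates satisfying Assumption (C), where $\tilde\mu_{\min}\ge D^\ell_{\min}$. Then there exists a step-size threshold $\bar\alpha\in(0,1]$ such that for every step-size $\alpha\in(0,\bar\alpha)$ and every agent $i\in\{1,\dots,m\}$, the sequence $\{U(x_i^\nu)\}_{\nu\ge0}$ converges to $U^\star$ at an R-linear rate, i.e. $|U(x_i^\nu)-U^\star|=O(z^\nu)$ for some $z\in(0,1)$.
   Context: Problem (P): minimize $U(x):=F(x)+G(x)$ subject to $x\in\mathcal K$, where $F(x)=\frac1m\sum_{i=1}^m f_i(x)$. Assumption (A): $\mathcal K\subseteq\mathbb R^d$ is nonempty, closed, convex; each $f_i:\mathcal O\to\mathbb R$ is twice differentiable and convex on an open set $\mathcal O\supseteq\mathcal K$; $\mu I\preceq\nabla^2F(x)\preceq LI$ for all $x\in\mathcal K$, with $\mu>0$, $L<\infty$; $G:\mathcal K\to\mathbb R$ is convex (possibly nonsmooth). Let $x^\star$ be the unique minimizer and $U^\star=U(x^\star)$. Assumption (B): agents communicate over a connected undirected graph on nodes $\{1,\dots,m\}$ with edge set $\mathcal E$. Assumption (W): $W=(w_{ij})$ satisfies $w_{ii}>0$, $w_{ij}>0$ if $(i,j)\in\mathcal E$ and $w_{ij}=0$ otherwise ($i\neq j$), and $W$ is doubly stochastic. Assumption (C): each surrogate $\tilde f_i:\mathcal O\times\mathcal O\to\mathbb R$ is $C^2$ and, for all $x\in\mathcal K$: $\nabla\tilde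 f_i(x;x)=\nabla f_i(x)$ (gradient in the first argument); $\nabla\tilde f_i(\cdot;x)$ is $\tilde L_i$-Lipschitz on $\mathcal K$; $\tilde f_i(\cdot;x)$ is $\tilde\mu_i$-strongly convex on $\mathcal K$ ($\tilde\mu_i>0$). Constants $D_i^\ell\le D_i^u$ are such that $D_i^\ell I\preceq\nabla^2\tilde f_i(x;y)-\nabla^2F(x)\preceq D_i^uI$ for all $x,y\in\mathcal K$ (Hessian of $\tilde f_i$ in its first argument); $\tilde\mu_{\min}=\min_i\tilde\mu_i$, $D^\ell_{\min}=\min_iD_i^\ell$. SONATA (step-size $\alpha\in(0,1]$): initialize $x_i^0\in\mathcal K$, $y_i^0=\nabla f_i(x_i^0)$; for $\nu=0,1,\dots$ each agent computes $\hat x_i^\nu=\arg\min_{x_i\in\mathcal K}\tilde f_i(x_i;x_i^\nu)+(y_i^\nu-\nabla f_i(x_i^\nu))^\top(x_i-x_i^\nu)+G(x_i)$, $x_i^{\nu+1/2}=x_i^\nu+\alpha(\hat x_i^\nu-x_i^\nu)$, $x_i^{\nu+1}=\sum_jw_{ij}x_j^{\nu+1/2}$, $y_i^{\nu+1}=\sum_jw_{ij}\big(y_j^\nu+\nabla f_j(x_j^{\nu+1})-\nabla f_j(x_j^\nu)\big)$. *)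

theory Defs
  imports "HOL-Analysis.Analysis"
begin

definition C2_on :: "'b::euclidean_space set \<Rightarrow> ('b \<Rightarrow> real) \<Rightarrow> bool" where
  "C2_on S g \<longleftrightarrow>
     (\<exists>(g1 :: 'b \<Rightarrow> 'b \<Rightarrow>\<^sub>L real) (g2 :: 'b \<Rightarrow> 'b \<Rightarrow>\<^sub>L ('b \<Rightarrow>\<^sub>L real)).
        (\<forall>x\<in>S. (g has_derivative blinfun_apply (g1 x)) (at x)) \<and>
        (\<forall>x\<in>S. (g1 has_derivative blinfun_apply (g2 x)) (at x)) \<and>
        continuous_on S g2)"

definition strongly_convex_on :: "real \<Rightarrow> 'b::real_inner set \<Rightarrow> ('b \<Rightarrow> real) \<Rightarrow> bool" where
  "strongly_convex_on c S f \<longleftrightarrow> convex_on S (\<lambda>x. f x - (c / 2) * (norm x)\<^sup>2)"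

definition connected_undirected_graph :: "nat \<Rightarrow> (nat \<times> nat) set \<Rightarrow> bool" where
  "connected_undirected_graph m E \<longleftrightarrow>
     E \<subseteq> {0..<m} \<times> {0..<m} \<and> sym E \<and> (\<forall>i. (i, i) \<notin> E) \<and>
     (\<forall>i<m. \<forall>j<m. (i, j) \<in> E\<^sup>*)"

definition weight_matrix_ok :: "nat \<Rightarrow> (nat \<times> nat) set \<Rightarrow> (nat \<Rightarrow> nat \<Rightarrow> real) \<Rightarrow> bool" where
  "weight_matrix_ok m E W \<longleftrightarrow>
     (\<forall>i<m. W i i > 0) \<and>
     (\<forall>i<m. \<forall>j<m. i \<noteq> j \<longrightarrow> ((i, j) \<in> E \<longrightarrow> W i j > 0) \<and> ((i, j) \<notin> E \<longrightarrow> W i j = 0)) \<and>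
     (\<forall>i<m. \<forall>j<m. W i j \<ge> 0) \<and>
     (\<forall>i<m. (\<Sum>j<m. W i j) = 1) \<and>
     (\<forall>j<m. (\<Sum>i<m. W i j) = 1)"

definition is_argmin_on :: "('b \<Rightarrow> real) \<Rightarrow> 'b set \<Rightarrow> 'b \<Rightarrow> bool" where
  "is_argmin_on h K z \<longleftrightarrow> z \<in> K \<and> (\<forall>w\<in>K. h z \<le> h w)"

text \<open>A run of SONATA with step-size alpha. x i \<nu>, y i \<nu>, xh i \<nu> are
  x_i^\<nu>, y_i^\<nu>, hat x_i^\<nu> (agents indexed 0..<m).\<close>
definition sonata_run ::
  "nat \<Rightarrow> 'b::real_inner set \<Rightarrow> (nat \<Rightarrow> nat \<Rightarrow> real) \<Rightarrow> (nat \<Rightarrow> 'b \<Rightarrow> 'b)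
   \<Rightarrow> (nat \<Rightarrow> 'b \<Rightarrow> 'b \<Rightarrow> real) \<Rightarrow> ('b \<Rightarrow> real) \<Rightarrow> real
   \<Rightarrow> (nat \<Rightarrow> nat \<Rightarrow> 'b) \<Rightarrow> (nat \<Rightarrow> nat \<Rightarrow> 'b) \<Rightarrow> (nat \<Rightarrow> nat \<Rightarrow> 'b) \<Rightarrow> bool" where
  "sonata_run m K W gf ft G \<alpha> x y xh \<longleftrightarrow>
     (\<forall>i<m. x i 0 \<in> K \<and> y i 0 = gf i (x i 0)) \<and>
     (\<forall>\<nu>. \<forall>i<m.
        is_argmin_on
          (\<lambda>z. ft i z (x i \<nu>) + (y i \<nu> - gf i (x i \<nu>)) \<bullet> (z - x i \<nu>) + G z)
          K (xh i \<nu>)) \<and>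
     (\<forall>\<nu>. \<forall>i<m.
        x i (Suc \<nu>) = (\<Sum>j<m. W i j *\<^sub>R (x j \<nu> + \<alpha> *\<^sub>R (xh j \<nu> - x j \<nu>)))) \<and>
     (\<forall>\<nu>. \<forall>i<m.
        y i (Suc \<nu>) = (\<Sum>j<m. W i j *\<^sub>R (y j \<nu> + gf j (x j (Suc \<nu>)) - gf j (x j \<nu>))))"

end

theory Submission
  imports Defs "HOL-Analysis.Analysis"
begin

lemma deriv_approx:
  assumes "(g has_derivative g') (at x)" "e > 0"
  shows "\<exists>r>0. \<forall>v. norm v < r \<longrightarrow> norm (g (x + v) - g x - g' v) \<le> e * norm v"
proof -
  from assms(1)[unfolded has_derivative_at_alt] assms(2)
  obtain r where r: "r > 0" "\<And>y. norm (y - x) < r \<Longrightarrow> norm (g y - g x - g' (y - x)) \<le> e * norm (y - x)"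
    by blast
  show ?thesis using r(1) r(2)[of "x + _"] by (intro exI[of _ r]) auto
qed

lemma eps_limit:
  fixes A B :: real
  assumes "\<And>t. 0 < t \<Longrightarrow> t \<le> 1 \<Longrightarrow> 0 \<le> A + t * B"
  shows "0 \<le> A"
proof (rule ccontr)
  assume "\<not> 0 \<le> A"
  hence A: "A < 0" by simp
  define t where "t = min 1 ((- A) / (2 * (\<bar>B\<bar> + 1)))"
  have "0 < (- A) / (2 * (\<bar>B\<bar> + 1))" using A by (intro divide_pos_pos) auto
  hence tpos: "0 < t" by (simp add: t_def)
  have t1: "t \<le> 1" by (simp add: t_def)
  have "t * (\<bar>B\<bar> + 1) \<le> (- A) / (2 * (\<bar>B\<bar> + 1)) * (\<bar>B\<bar> + 1)"
    by (intro mult_right_mono) (auto simp: t_def)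
  also have "\<dots> = - A / 2" by (simp add: field_simps)
  finally have "t * (\<bar>B\<bar> + 1) \<le> - A / 2" .
  moreover have "t * B \<le> t * (\<bar>B\<bar> + 1)" using tpos by (intro mult_left_mono) auto
  ultimately have "A + t * B < 0" using A by linarith
  with assms[OF tpos t1] show False by linarith
qed

lemma tangent_convex:
  fixes g :: "'a::real_inner \<Rightarrow> real"
  assumes cv: "convex_on S g" and S: "convex S" and w: "w \<in> S" and z: "z \<in> S"
    and d: "(g has_derivative (\<lambda>h. gg \<bullet> h)) (at w)"
  shows "g z \<ge> g w + gg \<bullet> (z - w)"
proof -
  let ?v = "z - w"
  have key: "gg \<bullet> ?v - e * norm ?v \<le> g z - g w" if e: "e > 0" for e
  proof -
    obtain r where r: "r > 0" "\<And>v. norm v < r \<Longrightarrow> norm (g (w + v) - g w - gg \<bullet> v) \<le> e * norm v"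
      using deriv_approx[OF d e] by blast
    define t where "t = min 1 (r / (2 * (norm ?v + 1)))"
    have "0 < 2 * (norm ?v + 1)" by (smt (verit) norm_ge_zero)
    hence rpos: "0 < r / (2 * (norm ?v + 1))" using r(1) by (intro divide_pos_pos)
    hence t0: "0 < t" by (simp add: t_def)
    have t1: "t \<le> 1" by (simp add: t_def)
    have "norm (t *\<^sub>R ?v) = t * norm ?v" using t0 by simp
    also have "\<dots> \<le> r / (2 * (norm ?v + 1)) * (norm ?v + 1)"
      using rpos by (intro mult_mono) (auto simp: t_def)
    also have "\<dots> = r / 2"
      using \<open>0 < 2 * (norm ?v + 1)\<close> by (simp add: field_simps)
    also have "\<dots> < r" using r by simp
    finally have nr: "norm (t *\<^sub>R ?v) < r" .
    have A: "g (w + t *\<^sub>R ?v) - g w - t * (gg \<bullet> ?v) \<ge> - (e * (t * norm ?v))"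
      using r(2)[OF nr] t0 by (auto simp: abs_le_iff inner_scaleR_right)
    have "w + t *\<^sub>R ?v = (1 - t) *\<^sub>R w + t *\<^sub>R z" by (simp add: algebra_simps)
    hence B: "g (w + t *\<^sub>R ?v) \<le> (1 - t) * g w + t * g z"
      using convex_onD[OF cv, of t w z] t0 t1 w z by simp
    from A B have "t * (gg \<bullet> ?v) - e * (t * norm ?v) \<le> t * (g z - g w)"
      by (simp add: algebra_simps)
    hence "t * (gg \<bullet> ?v - e * norm ?v) \<le> t * (g z - g w)" by (simp add: algebra_simps)
    thus ?thesis using t0 by simp
  qed
  show ?thesis
  proof (rule field_le_epsilon)
    fix e :: real assume e: "e > 0"
    have "gg \<bullet> ?v - (e / (norm ?v + 1)) * norm ?v \<le> g z - g w"
    proof (rule key)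
      have "0 < norm ?v + 1" by (smt (verit) norm_ge_zero)
      thus "0 < e / (norm ?v + 1)" using e by simp
    qed
    moreover have "(e / (norm ?v + 1)) * norm ?v \<le> e"
    proof -
      have np: "0 < norm ?v + 1" by (smt (verit) norm_ge_zero)
      have "(e / (norm ?v + 1)) * norm ?v \<le> (e / (norm ?v + 1)) * (norm ?v + 1)"
        using e np by (intro mult_left_mono) auto
      also have "\<dots> = e" using np by simp
      finally show ?thesis .
    qed
    ultimately show "g w + gg \<bullet> (z - w) \<le> g z + e" by linarith
  qed
qed

lemma seg_deriv:
  fixes g :: "'a::real_inner \<Rightarrow> 'b::real_normed_vector"
  assumes "(g has_derivative g') (at (w + t *\<^sub>R v))"
  shows "((\<lambda>s. g (w + s *\<^sub>R v)) has_derivative (\<lambda>s. g' (s *\<^sub>R v))) (at t)"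
proof -
  have "((\<lambda>s. w + s *\<^sub>R v) has_derivative (\<lambda>s. s *\<^sub>R v)) (at t)"
    by (auto intro!: derivative_eq_intros)
  from has_derivative_compose[OF this assms] show ?thesis by simp
qed

lemma seg_deriv_real:
  fixes g :: "'a::real_inner \<Rightarrow> real"
  assumes "(g has_derivative (\<lambda>h. gg \<bullet> h)) (at (w + t *\<^sub>R v))"
  shows "((\<lambda>s. g (w + s *\<^sub>R v)) has_real_derivative (gg \<bullet> v)) (at t)"
proof -
  have "((\<lambda>s. g (w + s *\<^sub>R v)) has_derivative (\<lambda>s. gg \<bullet> (s *\<^sub>R v))) (at t)"
    by (rule seg_deriv[OF assms])
  moreover have "(\<lambda>s. gg \<bullet> (s *\<^sub>R v)) = (*) (gg \<bullet> v)" by (auto simp: fun_eq_iff)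
  ultimately show ?thesis by (simp add: has_field_derivative_def)
qed

lemma seg_in:
  assumes "convex K" "w \<in> K" "z \<in> K" "0 \<le> t" "t \<le> 1"
  shows "w + t *\<^sub>R (z - w) \<in> K"
proof -
  have "w + t *\<^sub>R (z - w) = (1 - t) *\<^sub>R w + t *\<^sub>R z" by (simp add: algebra_simps)
  thus ?thesis using assms convexD_alt by fastforce
qed

lemma descent_lip:
  fixes g :: "'a::real_inner \<Rightarrow> real"
  assumes K: "convex K" and w: "w \<in> K" and z: "z \<in> K"
    and d: "\<And>u. u \<in> K \<Longrightarrow> (g has_derivative (\<lambda>h. gg u \<bullet> h)) (at u)"
    and lip: "\<And>u u'. u \<in> K \<Longrightarrow> u' \<in> K \<Longrightarrow> norm (gg u - gg u') \<le> c * norm (u - u')"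
  shows "g z \<le> g w + gg w \<bullet> (z - w) + c / 2 * (norm (z - w))\<^sup>2"
proof -
  define v where "v = z - w"
  define \<phi> where "\<phi> = (\<lambda>t. g (w + t *\<^sub>R v) - t * (gg w \<bullet> v) - c / 2 * t\<^sup>2 * (norm v)\<^sup>2)"
  have "\<phi> 1 \<le> \<phi> 0"
  proof (rule DERIV_nonpos_imp_nonincreasing[of 0 1 \<phi>])
    fix t :: real assume t: "0 \<le> t" "t \<le> 1"
    have inK: "w + t *\<^sub>R v \<in> K" using seg_in[OF K w z t] by (simp add: v_def)
    have D: "(\<phi> has_real_derivative (gg (w + t *\<^sub>R v) \<bullet> v - gg w \<bullet> v - c * t * (norm v)\<^sup>2)) (at t)"
      unfolding \<phi>_def
      by (rule derivative_eq_intros seg_deriv_real d inK refl | simp)+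
    have "gg (w + t *\<^sub>R v) \<bullet> v - gg w \<bullet> v = (gg (w + t *\<^sub>R v) - gg w) \<bullet> v"
      by (simp add: inner_diff_left)
    also have "\<dots> \<le> norm (gg (w + t *\<^sub>R v) - gg w) * norm v" by (rule norm_cauchy_schwarz)
    also have "\<dots> \<le> c * norm (t *\<^sub>R v) * norm v"
      using lip[OF inK w] by (intro mult_right_mono) auto
    also have "\<dots> = c * t * (norm v)\<^sup>2" using t by (simp add: power2_eq_square)
    finally show "\<exists>y. (\<phi> has_real_derivative y) (at t) \<and> y \<le> 0" using D by force
  qed simp
  thus ?thesis by (simp add: \<phi>_def v_def)
qed

lemma second_order_lo:
  fixes g :: "'a::real_inner \<Rightarrow> real"
  assumes K: "convex K" and w: "w \<in> K" and z: "z \<in> K"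
    and d: "\<And>u. u \<in> K \<Longrightarrow> (g has_derivative (\<lambda>h. gg u \<bullet> h)) (at u)"
    and d2: "\<And>u. u \<in> K \<Longrightarrow> (gg has_derivative Hg u) (at u)"
    and q: "\<And>u h. u \<in> K \<Longrightarrow> c * (norm h)\<^sup>2 \<le> h \<bullet> Hg u h"
  shows "g z \<ge> g w + gg w \<bullet> (z - w) + c / 2 * (norm (z - w))\<^sup>2"
    and "(gg z - gg w) \<bullet> (z - w) \<ge> c * (norm (z - w))\<^sup>2"
proof -
  define v where "v = z - w"
  have mono: "(gg (w + t *\<^sub>R v) - gg w) \<bullet> v \<ge> c * t * (norm v)\<^sup>2" if t: "0 \<le> t" "t \<le> 1" for t
  proof -
    define \<psi> where "\<psi> = (\<lambda>s. gg (w + s *\<^sub>R v) \<bullet> v - c * s * (norm v)\<^sup>2)"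
    have "\<psi> 0 \<le> \<psi> t"
    proof (rule DERIV_nonneg_imp_nondecreasing[of 0 t \<psi>])
      fix s :: real assume s: "0 \<le> s" "s \<le> t"
      have inK: "w + s *\<^sub>R v \<in> K" using seg_in[OF K w z, of s] s t by (simp add: v_def)
      have lin: "linear (Hg (w + s *\<^sub>R v))"
        using d2[OF inK] has_derivative_linear by blast
      have D1: "((\<lambda>s. gg (w + s *\<^sub>R v)) has_derivative (\<lambda>r. Hg (w + s *\<^sub>R v) (r *\<^sub>R v))) (at s)"
        by (rule seg_deriv[OF d2[OF inK]])
      have D2: "((\<lambda>s. gg (w + s *\<^sub>R v) \<bullet> v) has_derivative (\<lambda>r. Hg (w + s *\<^sub>R v) (r *\<^sub>R v) \<bullet> v)) (at s)"
        using has_derivative_inner_left[OF D1] by simp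
      have eq: "(\<lambda>r. Hg (w + s *\<^sub>R v) (r *\<^sub>R v) \<bullet> v) = (*) (v \<bullet> Hg (w + s *\<^sub>R v) v)"
        using linear_scale[OF lin] by (auto simp: fun_eq_iff inner_commute)
      have D3: "((\<lambda>s. gg (w + s *\<^sub>R v) \<bullet> v) has_real_derivative (v \<bullet> Hg (w + s *\<^sub>R v) v)) (at s)"
        using D2 unfolding eq has_field_derivative_def .
      have D: "(\<psi> has_real_derivative (v \<bullet> Hg (w + s *\<^sub>R v) v - c * (norm v)\<^sup>2)) (at s)"
        unfolding \<psi>_def by (rule derivative_eq_intros D3 refl | simp)+
      show "\<exists>y. (\<psi> has_real_derivative y) (at s) \<and> 0 \<le> y"
        using D q[OF inK, of v] by force
    qed (use t in simp)
    thus ?thesis by (simp add: \<psi>_def inner_diff_left)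
  qed
  define \<phi> where "\<phi> = (\<lambda>t. g (w + t *\<^sub>R v) - t * (gg w \<bullet> v) - c / 2 * t\<^sup>2 * (norm v)\<^sup>2)"
  have "\<phi> 0 \<le> \<phi> 1"
  proof (rule DERIV_nonneg_imp_nondecreasing[of 0 1 \<phi>])
    fix t :: real assume t: "0 \<le> t" "t \<le> 1"
    have inK: "w + t *\<^sub>R v \<in> K" using seg_in[OF K w z t] by (simp add: v_def)
    have D: "(\<phi> has_real_derivative (gg (w + t *\<^sub>R v) \<bullet> v - gg w \<bullet> v - c * t * (norm v)\<^sup>2)) (at t)"
      unfolding \<phi>_def
      by (rule derivative_eq_intros seg_deriv_real d inK refl | simp)+
    show "\<exists>y. (\<phi> has_real_derivative y) (at t) \<and> 0 \<le> y"
      using D mono[OF t] by (intro exI[of _ "gg (w + t *\<^sub>R v) \<bullet> v - gg w \<bullet> v - c * t * (norm v)\<^sup>2"])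
        (auto simp: inner_diff_left)
  qed simp
  thus "g z \<ge> g w + gg w \<bullet> (z - w) + c / 2 * (norm (z - w))\<^sup>2" by (simp add: \<phi>_def v_def)
  show "(gg z - gg w) \<bullet> (z - w) \<ge> c * (norm (z - w))\<^sup>2" using mono[of 1] by (simp add: v_def)
qed

lemma schwarz_aux:
  fixes f :: "'a::real_inner \<Rightarrow> real" and gf :: "'a \<Rightarrow> 'a"
  assumes d: "\<And>z. z \<in> ball x r \<Longrightarrow> (f has_derivative (\<lambda>h. gf z \<bullet> h)) (at z)"
    and lin: "linear H"
    and app: "\<And>v. norm v < r \<Longrightarrow> norm (gf (x + v) - gf x - H v) \<le> e * norm v"
    and s: "0 < s" "s * (norm h + norm k) < r" and e: "e \<ge> 0"
  shows "\<bar>(f (x + s *\<^sub>R h + s *\<^sub>R k) - f (x + s *\<^sub>R k) - f (x + s *\<^sub>R h) + f x) - s\<^sup>2 * (H h \<bullet> k)\<bar>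
          \<le> e * s\<^sup>2 * ((norm h + 2 * norm k) * norm k)"
proof -
  define g where "g = (\<lambda>t. f (x + s *\<^sub>R h + t *\<^sub>R k) - f (x + t *\<^sub>R k))"
  have nb: "norm (a *\<^sub>R h + b *\<^sub>R k) < r" if "0 \<le> a" "a \<le> s" "0 \<le> b" "b \<le> s" for a b
  proof -
    have "norm (a *\<^sub>R h + b *\<^sub>R k) \<le> a * norm h + b * norm k"
      using that by (smt (verit) norm_scaleR norm_triangle_ineq abs_of_nonneg)
    also have "\<dots> \<le> s * norm h + s * norm k"
      using that by (intro add_mono mult_right_mono) auto
    finally show ?thesis using s by (simp add: algebra_simps)
  qed
  have inb: "x + (a *\<^sub>R h + b *\<^sub>R k) \<in> ball x r" if "0 \<le> a" "a \<le> s" "0 \<le> b" "b \<le> s" for a b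
  proof -
    have dv: "\<And>v. dist x (x + v) = norm v" by (simp add: dist_norm)
    show ?thesis using nb[OF that] by (simp only: mem_ball dv)
  qed
  have "\<exists>\<tau>. 0 < \<tau> \<and> \<tau> < s \<and> g s - g 0 = (s - 0) * ((gf (x + s *\<^sub>R h + \<tau> *\<^sub>R k) - gf (x + \<tau> *\<^sub>R k)) \<bullet> k)"
  proof (rule MVT2[OF s(1)])
    fix t :: real assume t: "0 \<le> t" "t \<le> s"
    have b1: "(x + s *\<^sub>R h) + t *\<^sub>R k \<in> ball x r" using inb[of s t] t s by (simp add: add.assoc)
    have b2: "x + t *\<^sub>R k \<in> ball x r" using inb[of 0 t] t s by simp
    have D1: "((\<lambda>t. f ((x + s *\<^sub>R h) + t *\<^sub>R k)) has_real_derivative (gf (x + s *\<^sub>R h + t *\<^sub>R k) \<bullet> k)) (at t)"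
      by (rule seg_deriv_real) (use d[OF b1] in simp)
    have D2: "((\<lambda>t. f (x + t *\<^sub>R k)) has_real_derivative (gf (x + t *\<^sub>R k) \<bullet> k)) (at t)"
      by (rule seg_deriv_real) (use d[OF b2] in simp)
    show "(g has_real_derivative ((gf (x + s *\<^sub>R h + t *\<^sub>R k) - gf (x + t *\<^sub>R k)) \<bullet> k)) (at t)"
      unfolding g_def using DERIV_diff[OF D1 D2] by (simp add: inner_diff_left add.assoc)
  qed
  then obtain \<tau> where tau: "0 < \<tau>" "\<tau> < s"
    and mv: "g s - g 0 = s * ((gf (x + s *\<^sub>R h + \<tau> *\<^sub>R k) - gf (x + \<tau> *\<^sub>R k)) \<bullet> k)" by auto
  define v1 where "v1 = s *\<^sub>R h + \<tau> *\<^sub>R k"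
  define v2 where "v2 = \<tau> *\<^sub>R k"
  have n1: "norm v1 < r" unfolding v1_def using nb[of s \<tau>] tau s by simp
  have n2: "norm v2 < r" unfolding v2_def using nb[of 0 \<tau>] tau s by simp
  define R1 where "R1 = gf (x + v1) - gf x - H v1"
  define R2 where "R2 = gf (x + v2) - gf x - H v2"
  have R1: "norm R1 \<le> e * norm v1" using app[OF n1] by (simp add: R1_def)
  have R2: "norm R2 \<le> e * norm v2" using app[OF n2] by (simp add: R2_def)
  have Hv: "H v1 - H v2 = s *\<^sub>R H h"
    unfolding v1_def v2_def using lin by (simp add: linear_add linear_scale)
  have "gf (x + s *\<^sub>R h + \<tau> *\<^sub>R k) - gf (x + \<tau> *\<^sub>R k) = (H v1 - H v2) + (R1 - R2)"
    by (simp add: R1_def R2_def v1_def v2_def add.assoc)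
  hence "gf (x + s *\<^sub>R h + \<tau> *\<^sub>R k) - gf (x + \<tau> *\<^sub>R k) = s *\<^sub>R H h + (R1 - R2)"
    using Hv by simp
  hence "(gf (x + s *\<^sub>R h + \<tau> *\<^sub>R k) - gf (x + \<tau> *\<^sub>R k)) \<bullet> k = s * (H h \<bullet> k) + (R1 - R2) \<bullet> k"
    by (simp add: inner_add_left)
  hence eq: "g s - g 0 = s\<^sup>2 * (H h \<bullet> k) + s * ((R1 - R2) \<bullet> k)"
    using mv by (simp add: power2_eq_square distrib_left)
  have nv1: "norm v1 \<le> s * norm h + s * norm k"
    unfolding v1_def using tau s by (smt (verit) norm_scaleR norm_triangle_ineq abs_of_nonneg mult_right_mono norm_ge_zero)
  have nv2: "norm v2 \<le> s * norm k"
    unfolding v2_def using tau s by (simp add: mult_right_mono)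
  have "\<bar>(R1 - R2) \<bullet> k\<bar> \<le> norm (R1 - R2) * norm k" by (rule Cauchy_Schwarz_ineq2)
  also have "\<dots> \<le> (norm R1 + norm R2) * norm k" by (intro mult_right_mono norm_triangle_ineq4) auto
  also have "\<dots> \<le> (e * norm v1 + e * norm v2) * norm k" using R1 R2 by (intro mult_right_mono) auto
  also have "\<dots> \<le> (e * (s * norm h + s * norm k) + e * (s * norm k)) * norm k"
    using nv1 nv2 e by (intro mult_right_mono add_mono mult_left_mono) auto
  also have "\<dots> = e * s * ((norm h + 2 * norm k) * norm k)" by (simp add: algebra_simps)
  finally have b: "\<bar>(R1 - R2) \<bullet> k\<bar> \<le> e * s * ((norm h + 2 * norm k) * norm k)" .
  have "\<bar>s * ((R1 - R2) \<bullet> k)\<bar> \<le> s * (e * s * ((norm h + 2 * norm k) * norm k))"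
    using b s by (simp add: abs_mult mult_left_mono)
  moreover have "g s - g 0 = f (x + s *\<^sub>R h + s *\<^sub>R k) - f (x + s *\<^sub>R k) - f (x + s *\<^sub>R h) + f x"
    by (simp add: g_def)
  ultimately show ?thesis using eq by (simp add: power2_eq_square algebra_simps)
qed

lemma schwarz:
  fixes f :: "'a::real_inner \<Rightarrow> real" and gf :: "'a \<Rightarrow> 'a"
  assumes O: "open S" "x \<in> S"
    and d: "\<And>z. z \<in> S \<Longrightarrow> (f has_derivative (\<lambda>h. gf z \<bullet> h)) (at z)"
    and d2: "(gf has_derivative H) (at x)"
  shows "H h \<bullet> k = H k \<bullet> h"
proof -
  have lin: "linear H" using d2 has_derivative_linear by blast
  obtain r1 where r1: "r1 > 0" "ball x r1 \<subseteq> S" using O open_contains_ball by blast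
  define C where "C = (norm h + 2 * norm k) * norm k + (norm k + 2 * norm h) * norm h"
  have key: "\<bar>H h \<bullet> k - H k \<bullet> h\<bar> \<le> 2 * e * C" if e: "e > 0" for e
  proof -
    obtain r0 where r0: "r0 > 0" "\<And>v. norm v < r0 \<Longrightarrow> norm (gf (x + v) - gf x - H v) \<le> e * norm v"
      using deriv_approx[OF d2 e] by blast
    define r where "r = min r0 r1"
    have r: "r > 0" using r0 r1 by (simp add: r_def)
    have app: "\<And>v. norm v < r \<Longrightarrow> norm (gf (x + v) - gf x - H v) \<le> e * norm v"
      using r0 by (simp add: r_def)
    have dd: "\<And>z. z \<in> ball x r \<Longrightarrow> (f has_derivative (\<lambda>h. gf z \<bullet> h)) (at z)"
      using d r1 by (auto simp: r_def)
    define s where "s = r / (2 * (norm h + norm k + 1))"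
    have den: "0 < 2 * (norm h + norm k + 1)" by (smt (verit) norm_ge_zero)
    have s0: "0 < s" using r den by (simp add: s_def)
    have "s * (norm h + norm k) \<le> s * (norm h + norm k + 1)" using s0 by simp
    also have "\<dots> = r / 2" using den by (simp add: s_def field_simps)
    also have "\<dots> < r" using r by simp
    finally have sr: "s * (norm h + norm k) < r" .
    have sr': "s * (norm k + norm h) < r" using sr by (simp add: add.commute)
    let ?D = "f (x + s *\<^sub>R h + s *\<^sub>R k) - f (x + s *\<^sub>R k) - f (x + s *\<^sub>R h) + f x"
    have A: "\<bar>?D - s\<^sup>2 * (H h \<bullet> k)\<bar> \<le> e * s\<^sup>2 * ((norm h + 2 * norm k) * norm k)"
      by (rule schwarz_aux[OF dd lin app s0 sr]) (use e in auto)
    have B0: "\<bar>(f (x + s *\<^sub>R k + s *\<^sub>R h) - f (x + s *\<^sub>R h) - f (x + s *\<^sub>R k) + f x) - s\<^sup>2 * (H k \<bullet> h)\<bar>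
         \<le> e * s\<^sup>2 * ((norm k + 2 * norm h) * norm h)"
      by (rule schwarz_aux[OF dd lin app s0 sr']) (use e in auto)
    have xx: "x + s *\<^sub>R k + s *\<^sub>R h = x + s *\<^sub>R h + s *\<^sub>R k" by (simp add: algebra_simps)
    have B: "\<bar>?D - s\<^sup>2 * (H k \<bullet> h)\<bar> \<le> e * s\<^sup>2 * ((norm k + 2 * norm h) * norm h)"
      using B0 unfolding xx by linarith
    have "s\<^sup>2 * \<bar>H h \<bullet> k - H k \<bullet> h\<bar> = \<bar>s\<^sup>2 * (H h \<bullet> k) - s\<^sup>2 * (H k \<bullet> h)\<bar>"
      by (simp only: right_diff_distrib[symmetric] abs_mult abs_power2)
    also have "\<dots> \<le> e * s\<^sup>2 * ((norm h + 2 * norm k) * norm k) + e * s\<^sup>2 * ((norm k + 2 * norm h) * norm h)"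
      using A B by linarith
    also have "\<dots> = s\<^sup>2 * (e * C)" by (simp add: C_def algebra_simps)
    finally have "\<bar>H h \<bullet> k - H k \<bullet> h\<bar> \<le> e * C" using s0 by simp
    moreover have "e * C \<le> 2 * e * C" using e by (simp add: C_def)
    ultimately show ?thesis by linarith
  qed
  show ?thesis
  proof (rule ccontr)
    assume ne: "H h \<bullet> k \<noteq> H k \<bullet> h"
    define a where "a = \<bar>H h \<bullet> k - H k \<bullet> h\<bar>"
    have a: "a > 0" using ne by (simp add: a_def)
    have C0: "C \<ge> 0" by (simp add: C_def)
    define e where "e = a / (4 * (C + 1))"
    have e: "e > 0" using a C0 by (simp add: e_def)
    have "a \<le> 2 * e * C" using key[OF e] by (simp add: a_def)
    also have "\<dots> \<le> 2 * e * (C + 1)" using e by simp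
    also have "\<dots> = a / 2" using C0 by (simp add: e_def field_simps)
    finally show False using a by simp
  qed
qed

lemma grad_mono_convex:
  fixes f :: "'a::real_inner \<Rightarrow> real"
  assumes cv: "convex_on S f" and x: "x \<in> S" and z: "z \<in> S"
    and dx: "(f has_derivative (\<lambda>h. gx \<bullet> h)) (at x)"
    and dz: "(f has_derivative (\<lambda>h. gz \<bullet> h)) (at z)"
  shows "(gz - gx) \<bullet> (z - x) \<ge> 0"
proof -
  have S: "convex S" using cv convex_on_imp_convex by blast
  have 1: "f z \<ge> f x + gx \<bullet> (z - x)" by (rule tangent_convex[OF cv S x z dx])
  have 2: "f x \<ge> f z + gz \<bullet> (x - z)" by (rule tangent_convex[OF cv S z x dz])
  have "gz \<bullet> (x - z) = - (gz \<bullet> (z - x))" by (simp add: inner_diff_right)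
  with 1 2 show ?thesis by (simp add: inner_diff_left)
qed

lemma psd_convex:
  fixes f :: "'a::real_inner \<Rightarrow> real"
  assumes cv: "convex_on S f" and S: "open S" and x: "x \<in> S"
    and d: "\<And>z. z \<in> S \<Longrightarrow> (f has_derivative (\<lambda>h. gf z \<bullet> h)) (at z)"
    and d2: "(gf has_derivative H) (at x)"
  shows "h \<bullet> H h \<ge> 0"
proof -
  have lin: "linear H" using d2 has_derivative_linear by blast
  obtain r1 where r1: "r1 > 0" "ball x r1 \<subseteq> S" using S x open_contains_ball by blast
  have key: "H h \<bullet> h \<ge> - (e * (norm h)\<^sup>2)" if e: "e > 0" for e
  proof -
    obtain r0 where r0: "r0 > 0" "\<And>v. norm v < r0 \<Longrightarrow> norm (gf (x + v) - gf x - H v) \<le> e * norm v"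
      using deriv_approx[OF d2 e] by blast
    define r where "r = min r0 r1"
    have r: "r > 0" using r0 r1 by (simp add: r_def)
    define t where "t = r / (2 * (norm h + 1))"
    have den: "0 < 2 * (norm h + 1)" by (smt (verit) norm_ge_zero)
    have t0: "0 < t" using r den by (simp add: t_def)
    have "norm (t *\<^sub>R h) = t * norm h" using t0 by simp
    also have "\<dots> \<le> t * (norm h + 1)" using t0 by simp
    also have "\<dots> = r / 2" using den by (simp add: t_def field_simps)
    also have "\<dots> < r" using r by simp
    finally have nt: "norm (t *\<^sub>R h) < r" .
    have inS: "x + t *\<^sub>R h \<in> S" using nt r1 by (auto simp: r_def dist_norm)
    have mono: "(gf (x + t *\<^sub>R h) - gf x) \<bullet> ((x + t *\<^sub>R h) - x) \<ge> 0"
      by (rule grad_mono_convex[OF cv x inS d[OF x] d[OF inS]])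
    define R where "R = gf (x + t *\<^sub>R h) - gf x - H (t *\<^sub>R h)"
    have R: "norm R \<le> e * (t * norm h)" using r0(2)[of "t *\<^sub>R h"] nt t0 by (simp add: R_def r_def)
    have eq: "gf (x + t *\<^sub>R h) - gf x = t *\<^sub>R H h + R"
      using lin by (simp add: R_def linear_scale)
    have "0 \<le> (t *\<^sub>R H h + R) \<bullet> (t *\<^sub>R h)" using mono eq by simp
    also have "\<dots> = t * t * (H h \<bullet> h) + t * (R \<bullet> h)" by (simp add: inner_add_left) (metis distrib_left mult.assoc)
    finally have A: "0 \<le> t * t * (H h \<bullet> h) + t * (R \<bullet> h)" .
    have "R \<bullet> h \<le> norm R * norm h" by (rule norm_cauchy_schwarz)
    also have "\<dots> \<le> e * (t * norm h) * norm h" using R by (intro mult_right_mono) auto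
    finally have "t * (R \<bullet> h) \<le> t * (e * (t * norm h) * norm h)" using t0 by simp
    with A have "0 \<le> t * t * (H h \<bullet> h + e * (norm h)\<^sup>2)"
      by (simp add: algebra_simps power2_eq_square)
    hence "0 \<le> H h \<bullet> h + e * (norm h)\<^sup>2" using t0 by (smt (verit) zero_le_mult_iff mult_pos_pos)
    thus ?thesis by simp
  qed
  have "H h \<bullet> h \<ge> 0"
  proof (rule ccontr)
    assume "\<not> H h \<bullet> h \<ge> 0"
    hence a: "H h \<bullet> h < 0" by simp
    define e where "e = - (H h \<bullet> h) / (2 * ((norm h)\<^sup>2 + 1))"
    have den: "0 < 2 * ((norm h)\<^sup>2 + 1)" by (smt (verit) zero_le_power2)
    have e: "e > 0" using a den unfolding e_def by (intro divide_pos_pos) auto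
    have "e * (norm h)\<^sup>2 \<le> e * ((norm h)\<^sup>2 + 1)" using e by simp
    also have "\<dots> = - (H h \<bullet> h) / 2" using den by (simp add: e_def field_simps)
    finally show False using key[OF e] a by linarith
  qed
  thus ?thesis by (simp add: inner_commute)
qed

lemma symm_opnorm:
  fixes H :: "'a::real_inner \<Rightarrow> 'a"
  assumes lin: "linear H" and sym: "\<And>h k. H h \<bullet> k = H k \<bullet> h"
    and lo: "\<And>h. 0 \<le> h \<bullet> H h" and up: "\<And>h. h \<bullet> H h \<le> c * (norm h)\<^sup>2"
  shows "norm (H h) \<le> c * norm h"
proof (cases "H h = 0")
  case True
  show ?thesis
  proof (cases "h = 0")
    case False
    have "0 < (norm h)\<^sup>2" using False by simp
    moreover have "0 \<le> c * (norm h)\<^sup>2" using up[of h] lo[of h] by linarith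
    ultimately have "c \<ge> 0" by (simp add: zero_le_mult_iff)
    thus ?thesis using True by simp
  qed (use True in simp)
next
  case False
  hence nH: "norm (H h) > 0" by simp
  define l where "l = norm h / norm (H h)"
  define k where "k = l *\<^sub>R H h"
  have pol: "4 * (H h \<bullet> k) = (h + k) \<bullet> H (h + k) - (h - k) \<bullet> H (h - k)"
    using lin sym[of h k] by (simp add: linear_add linear_diff inner_add_left inner_add_right
        inner_diff_left inner_diff_right inner_commute algebra_simps)
  have "4 * (H h \<bullet> k) \<le> c * (norm (h + k))\<^sup>2" using pol up[of "h + k"] lo[of "h - k"] by linarith
  also have "norm (h + k) \<le> norm h + norm k" by (rule norm_triangle_ineq)
  hence "(norm (h + k))\<^sup>2 \<le> (norm h + norm k)\<^sup>2" by (simp add: power_mono)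
  moreover have "norm k = norm h" using nH by (simp add: k_def l_def)
  ultimately have "(norm (h + k))\<^sup>2 \<le> 4 * (norm h)\<^sup>2" by (simp add: power2_eq_square)
  have c0: "c \<ge> 0"
  proof (cases "h = 0")
    case True with False lin show ?thesis by (simp add: linear_0)
  next
    case False
    have "0 < (norm h)\<^sup>2" using False by simp
    moreover have "0 \<le> c * (norm h)\<^sup>2" using up[of h] lo[of h] by linarith
    ultimately show ?thesis by (simp add: zero_le_mult_iff)
  qed
  have HK: "H h \<bullet> k = norm h * norm (H h)"
    using nH by (simp add: k_def l_def power2_norm_eq_inner[symmetric] power2_eq_square)
  have "4 * (norm h * norm (H h)) \<le> c * (norm (h + k))\<^sup>2"
    using \<open>4 * (H h \<bullet> k) \<le> c * (norm (h + k))\<^sup>2\<close> HK by simp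
  also have "\<dots> \<le> c * (4 * (norm h)\<^sup>2)"
    using \<open>(norm (h + k))\<^sup>2 \<le> 4 * (norm h)\<^sup>2\<close> c0 by (intro mult_left_mono)
  finally have "norm h * norm (H h) \<le> norm h * (c * norm h)" by (simp add: power2_eq_square algebra_simps)
  moreover have "norm h > 0"
  proof -
    have "h \<noteq> 0" using False lin by (auto simp: linear_0)
    thus ?thesis by simp
  qed
  ultimately show ?thesis by simp
qed

lemma lip_from_bound:
  fixes g :: "'a::euclidean_space \<Rightarrow> 'b::real_normed_vector"
  assumes K: "convex K" and x: "x \<in> K" and y: "y \<in> K"
    and d: "\<And>u. u \<in> K \<Longrightarrow> (g has_derivative H u) (at u)"
    and b: "\<And>u h. u \<in> K \<Longrightarrow> norm (H u h) \<le> c * norm h"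
  shows "norm (g x - g y) \<le> c * norm (x - y)"
proof (rule differentiable_bound[OF K _ _ x y])
  fix u assume u: "u \<in> K"
  show "(g has_derivative H u) (at u within K)" using d[OF u] by (rule has_derivative_at_withinI)
  show "onorm (H u) \<le> c" using b[OF u] by (intro onorm_le) auto
qed

lemma two_mul_le: "2 * (x * y) \<le> \<eta> * x\<^sup>2 + (1 / \<eta>) * y\<^sup>2" if "\<eta> > 0" for x y \<eta> :: real
proof -
  have "0 \<le> (\<eta> * x - y)\<^sup>2 / \<eta>" using that by simp
  also have "\<dots> = \<eta> * x\<^sup>2 + (1 / \<eta>) * y\<^sup>2 - 2 * (x * y)"
    using that by (simp add: power2_diff field_simps power2_eq_square)
  finally show ?thesis by simp
qed

lemma norm_add_sq_eta:
  fixes a b :: "'a::real_inner"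
  assumes "\<eta> > 0"
  shows "(norm (a + b))\<^sup>2 \<le> (1 + \<eta>) * (norm a)\<^sup>2 + (1 + 1 / \<eta>) * (norm b)\<^sup>2"
proof -
  have "(norm (a + b))\<^sup>2 = (norm a)\<^sup>2 + 2 * (a \<bullet> b) + (norm b)\<^sup>2"
    by (simp add: power2_norm_eq_inner inner_add_left inner_add_right inner_commute)
  moreover have "a \<bullet> b \<le> norm a * norm b" by (rule norm_cauchy_schwarz)
  moreover have "2 * (norm a * norm b) \<le> \<eta> * (norm a)\<^sup>2 + (1 / \<eta>) * (norm b)\<^sup>2"
    by (rule two_mul_le[OF assms])
  ultimately show ?thesis by (simp add: algebra_simps)
qed

lemma norm_add_sq: "(norm (a + b))\<^sup>2 \<le> 2 * (norm a)\<^sup>2 + 2 * (norm (b::'a::real_inner))\<^sup>2"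
  using norm_add_sq_eta[of 1 a b] by simp

lemma path_bound:
  fixes E :: "(nat \<times> nat) set"
  assumes "(j, k) \<in> E\<^sup>*" "finite E"
  shows "\<exists>c\<ge>0. \<forall>v::nat \<Rightarrow> 'a::real_inner.
           (norm (v j - v k))\<^sup>2 \<le> c * (\<Sum>(a, b)\<in>E. (norm (v a - v b))\<^sup>2)"
  using assms(1)
proof (induction rule: rtrancl_induct)
  case base
  show ?case by (intro exI[of _ 0]) simp
next
  case (step k l)
  then obtain c where c: "c \<ge> 0" "\<And>v::nat \<Rightarrow> 'a. (norm (v j - v k))\<^sup>2 \<le> c * (\<Sum>(a, b)\<in>E. (norm (v a - v b))\<^sup>2)"
    by blast
  show ?case
  proof (intro exI[of _ "2 * c + 2"] conjI allI)
    fix v :: "nat \<Rightarrow> 'a"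
    let ?S = "\<Sum>(a, b)\<in>E. (norm (v a - v b))\<^sup>2"
    have kl: "(norm (v k - v l))\<^sup>2 \<le> ?S"
      using member_le_sum[of "(k, l)" E "\<lambda>(a, b). (norm (v a - v b))\<^sup>2"] step assms(2) by auto
    have "v j - v l = (v j - v k) + (v k - v l)" by simp
    hence "(norm (v j - v l))\<^sup>2 \<le> 2 * (norm (v j - v k))\<^sup>2 + 2 * (norm (v k - v l))\<^sup>2"
      using norm_add_sq[of "v j - v k" "v k - v l"] by simp
    also have "\<dots> \<le> 2 * (c * ?S) + 2 * ?S" using c(2)[of v] kl by linarith
    finally show "(norm (v j - v l))\<^sup>2 \<le> (2 * c + 2) * ?S" by (simp add: algebra_simps)
  qed (use c in simp)
qed

lemma dsum_split:
  fixes A B C :: "nat \<Rightarrow> nat \<Rightarrow> real"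
  shows "(\<Sum>j<m. \<Sum>k<m. A j k + B j k - C j k) = (\<Sum>j<m. \<Sum>k<m. A j k) + (\<Sum>j<m. \<Sum>k<m. B j k) - (\<Sum>j<m. \<Sum>k<m. C j k)"
  by (simp only: sum.distrib sum_subtractf)

lemma norm_sum_sq_expand:
  fixes w :: "nat \<Rightarrow> real" and v :: "nat \<Rightarrow> 'a::real_inner"
  shows "(norm (\<Sum>j<m. w j *\<^sub>R v j))\<^sup>2 = (\<Sum>j<m. \<Sum>k<m. w j * w k * (v j \<bullet> v k))"
proof -
  have "(norm (\<Sum>j<m. w j *\<^sub>R v j))\<^sup>2 = (\<Sum>j<m. w j *\<^sub>R v j) \<bullet> (\<Sum>k<m. w k *\<^sub>R v k)"
    by (simp only: power2_norm_eq_inner)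
  also have "\<dots> = (\<Sum>j<m. \<Sum>k<m. (w j *\<^sub>R v j) \<bullet> (w k *\<^sub>R v k))"
    by (simp only: inner_sum_left inner_sum_right) (rule sum.swap)
  also have "\<dots> = (\<Sum>j<m. \<Sum>k<m. w j * w k * (v j \<bullet> v k))"
    by (intro sum.cong refl) simp
  finally show ?thesis .
qed

lemma sq_diff_expand:
  fixes a b :: "'a::real_inner"
  shows "(norm (a - b))\<^sup>2 = (norm a)\<^sup>2 + (norm b)\<^sup>2 - 2 * (a \<bullet> b)"
  by (simp add: power2_norm_eq_inner inner_diff_left inner_diff_right inner_commute)

lemma sq_conv_comb:
  fixes w :: "nat \<Rightarrow> real" and v :: "nat \<Rightarrow> 'a::real_inner"
  assumes w1: "(\<Sum>j<m. w j) = 1"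
  shows "(norm (\<Sum>j<m. w j *\<^sub>R v j))\<^sup>2 =
           (\<Sum>j<m. w j * (norm (v j))\<^sup>2) - (1/2) * (\<Sum>j<m. \<Sum>k<m. w j * w k * (norm (v j - v k))\<^sup>2)"
proof -
  have "(\<Sum>j<m. \<Sum>k<m. w j * w k * (norm (v j - v k))\<^sup>2)
      = (\<Sum>j<m. \<Sum>k<m. w j * w k * (norm (v j))\<^sup>2 + w j * w k * (norm (v k))\<^sup>2 - 2 * (w j * w k * (v j \<bullet> v k)))"
    by (intro sum.cong refl) (simp only: sq_diff_expand algebra_simps)
  also have "\<dots> = (\<Sum>j<m. \<Sum>k<m. w j * w k * (norm (v j))\<^sup>2) + (\<Sum>j<m. \<Sum>k<m. w j * w k * (norm (v k))\<^sup>2)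
       - (\<Sum>j<m. \<Sum>k<m. 2 * (w j * w k * (v j \<bullet> v k)))"
    by (rule dsum_split)
  also have "(\<Sum>j<m. \<Sum>k<m. 2 * (w j * w k * (v j \<bullet> v k))) = 2 * (\<Sum>j<m. \<Sum>k<m. w j * w k * (v j \<bullet> v k))"
    by (simp only: sum_distrib_left)
  also have "(\<Sum>j<m. \<Sum>k<m. w j * w k * (norm (v j))\<^sup>2) = (\<Sum>j<m. w j * (norm (v j))\<^sup>2)"
  proof -
    have "(\<Sum>j<m. \<Sum>k<m. w j * w k * (norm (v j))\<^sup>2) = (\<Sum>j<m. (w j * (norm (v j))\<^sup>2) * (\<Sum>k<m. w k))"
      by (intro sum.cong refl) (simp add: sum_distrib_left[symmetric] sum_distrib_right[symmetric] mult_ac)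
    thus ?thesis using w1 by simp
  qed
  also have "(\<Sum>j<m. \<Sum>k<m. w j * w k * (norm (v k))\<^sup>2) = (\<Sum>j<m. w j * (norm (v j))\<^sup>2)"
  proof -
    have "(\<Sum>j<m. \<Sum>k<m. w j * w k * (norm (v k))\<^sup>2) = (\<Sum>k<m. \<Sum>j<m. w j * w k * (norm (v k))\<^sup>2)"
      by (rule sum.swap)
    also have "\<dots> = (\<Sum>k<m. (w k * (norm (v k))\<^sup>2) * (\<Sum>j<m. w j))"
      by (intro sum.cong refl) (simp add: sum_distrib_left[symmetric] sum_distrib_right[symmetric] mult_ac)
    finally show ?thesis using w1 by simp
  qed
  finally show ?thesis using norm_sum_sq_expand[of w v m] by (simp add: field_simps)
qed

lemma sum_pairs_sq:
  fixes v :: "nat \<Rightarrow> 'a::real_inner"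
  assumes "(\<Sum>j<m. v j) = 0"
  shows "(\<Sum>j<m. \<Sum>k<m. (norm (v j - v k))\<^sup>2) = 2 * real m * (\<Sum>j<m. (norm (v j))\<^sup>2)"
proof -
  have "(\<Sum>j<m. \<Sum>k<m. (norm (v j - v k))\<^sup>2) = (\<Sum>j<m. \<Sum>k<m. (norm (v j))\<^sup>2 + (norm (v k))\<^sup>2 - 2 * (v j \<bullet> v k))"
    by (intro sum.cong refl) (rule sq_diff_expand)
  also have "\<dots> = (\<Sum>j<m. \<Sum>k<m. (norm (v j))\<^sup>2) + (\<Sum>j<m. \<Sum>k<m. (norm (v k))\<^sup>2) - (\<Sum>j<m. \<Sum>k<m. 2 * (v j \<bullet> v k))"
    by (rule dsum_split)
  also have "(\<Sum>j<m. \<Sum>k<m. (norm (v j))\<^sup>2) = real m * (\<Sum>j<m. (norm (v j))\<^sup>2)"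
    by (simp add: sum_distrib_left)
  also have "(\<Sum>j<m. \<Sum>k<m. (norm (v k))\<^sup>2) = real m * (\<Sum>j<m. (norm (v j))\<^sup>2)"
    by simp
  also have "(\<Sum>j<m. \<Sum>k<m. 2 * (v j \<bullet> v k)) = 0"
  proof -
    have "(\<Sum>j<m. \<Sum>k<m. 2 * (v j \<bullet> v k)) = (\<Sum>j<m. 2 * (v j \<bullet> (\<Sum>k<m. v k)))"
      by (intro sum.cong refl) (simp only: inner_sum_right sum_distrib_left)
    thus ?thesis using assms by simp
  qed
  finally show ?thesis by simp
qed

lemma W_facts:
  assumes "weight_matrix_ok m E W"
  shows "\<And>i j. i < m \<Longrightarrow> j < m \<Longrightarrow> W i j \<ge> 0"
    and "\<And>i. i < m \<Longrightarrow> (\<Sum>j<m. W i j) = 1"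
    and "\<And>j. j < m \<Longrightarrow> (\<Sum>i<m. W i j) = 1"
    and "\<And>i. i < m \<Longrightarrow> W i i > 0"
    and "\<And>i j. i < m \<Longrightarrow> j < m \<Longrightarrow> (i, j) \<in> E \<Longrightarrow> i \<noteq> j \<Longrightarrow> W i j > 0"
  using assms unfolding weight_matrix_ok_def by auto

lemma avg_W:
  fixes z :: "nat \<Rightarrow> 'a::real_vector"
  assumes "weight_matrix_ok m E W"
  shows "(\<Sum>i<m. \<Sum>j<m. W i j *\<^sub>R z j) = (\<Sum>j<m. z j)"
proof -
  have "(\<Sum>i<m. \<Sum>j<m. W i j *\<^sub>R z j) = (\<Sum>j<m. \<Sum>i<m. W i j *\<^sub>R z j)" by (rule sum.swap)
  also have "\<dots> = (\<Sum>j<m. (\<Sum>i<m. W i j) *\<^sub>R z j)" by (simp add: scaleR_sum_left)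
  also have "\<dots> = (\<Sum>j<m. z j)" using W_facts(3)[OF assms] by simp
  finally show ?thesis .
qed

lemma consensus_contraction0:
  fixes W :: "nat \<Rightarrow> nat \<Rightarrow> real" and E :: "(nat \<times> nat) set"
  assumes m: "m \<ge> 1" and G: "connected_undirected_graph m E" and W: "weight_matrix_ok m E W"
  shows "\<exists>\<rho>. 0 < \<rho> \<and> \<rho> < 1 \<and> (\<forall>v::nat \<Rightarrow> 'a::real_inner. (\<Sum>j<m. v j) = 0 \<longrightarrow>
           (\<Sum>i<m. (norm (\<Sum>j<m. W i j *\<^sub>R v j))\<^sup>2) \<le> \<rho> * (\<Sum>j<m. (norm (v j))\<^sup>2))"
proof -
  have Esub: "E \<subseteq> {..<m} \<times> {..<m}" using G unfolding connected_undirected_graph_def by auto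
  have finE: "finite E" using Esub finite_subset by blast
  have conn: "\<And>j k. j < m \<Longrightarrow> k < m \<Longrightarrow> (j, k) \<in> E\<^sup>*"
    using G unfolding connected_undirected_graph_def by auto
  have noloop: "\<And>i. (i, i) \<notin> E" using G unfolding connected_undirected_graph_def by auto
  define S where "S = (\<lambda>v::nat \<Rightarrow> 'a. \<Sum>(a, b)\<in>E. (norm (v a - v b))\<^sup>2)"
  have S0: "S v \<ge> 0" for v unfolding S_def by (intro sum_nonneg) auto
  have "\<forall>p. \<exists>c. fst p < m \<longrightarrow> snd p < m \<longrightarrow> c \<ge> 0 \<and> (\<forall>v::nat \<Rightarrow> 'a. (norm (v (fst p) - v (snd p)))\<^sup>2 \<le> c * S v)"
  proof
    fix p :: "nat \<times> nat"
    show "\<exists>c. fst p < m \<longrightarrow> snd p < m \<longrightarrow> c \<ge> 0 \<and> (\<forall>v::nat \<Rightarrow> 'a. (norm (v (fst p) - v (snd p)))\<^sup>2 \<le> c * S v)"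
    proof (cases "fst p < m \<and> snd p < m")
      case True
      then obtain c where "c \<ge> 0" "\<forall>v::nat \<Rightarrow> 'a. (norm (v (fst p) - v (snd p)))\<^sup>2 \<le> c * S v"
        using path_bound[OF conn finE, of "fst p" "snd p"] unfolding S_def by blast
      thus ?thesis by blast
    qed auto
  qed
  then obtain c where c: "\<And>p. fst p < m \<Longrightarrow> snd p < m \<Longrightarrow> c p \<ge> 0 \<and> (\<forall>v::nat \<Rightarrow> 'a. (norm (v (fst p) - v (snd p)))\<^sup>2 \<le> c p * S v)"
    using choice[of "\<lambda>p c. fst p < m \<longrightarrow> snd p < m \<longrightarrow> c \<ge> 0 \<and> (\<forall>v::nat \<Rightarrow> 'a. (norm (v (fst p) - v (snd p)))\<^sup>2 \<le> c * S v)"]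
    by blast
  define Cs where "Cs = (\<Sum>j<m. \<Sum>k<m. c (j, k))"
  have Cs0: "Cs \<ge> 0" unfolding Cs_def using c by (intro sum_nonneg) auto
  have pairs: "(\<Sum>j<m. \<Sum>k<m. (norm (v j - v k))\<^sup>2) \<le> Cs * S v" for v :: "nat \<Rightarrow> 'a"
  proof -
    have "(\<Sum>j<m. \<Sum>k<m. (norm (v j - v k))\<^sup>2) \<le> (\<Sum>j<m. \<Sum>k<m. c (j, k) * S v)"
      using c by (intro sum_mono) (metis fst_conv snd_conv lessThan_iff)
    also have "\<dots> = Cs * S v" by (simp add: Cs_def sum_distrib_right)
    finally show ?thesis .
  qed
  define \<delta> where "\<delta> = Min (insert 1 ((\<lambda>(a, b). W a a * W a b) ` E))"
  have \<delta>pos: "\<delta> > 0"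
  proof -
    have "\<forall>x\<in>insert 1 ((\<lambda>(a, b). W a a * W a b) ` E). x > 0"
    proof
      fix x assume "x \<in> insert 1 ((\<lambda>(a, b). W a a * W a b) ` E)"
      then consider "x = 1" | a b where "(a, b) \<in> E" "x = W a a * W a b" by auto
      thus "x > 0"
      proof cases
        case 2
        have ab: "a < m" "b < m" "a \<noteq> b" using 2 Esub noloop by auto
        have "W a a > 0" using W_facts(4)[OF W ab(1)] .
        moreover have "W a b > 0" using W_facts(5)[OF W ab(1,2) 2(1) ab(3)] .
        ultimately show ?thesis using 2 by simp
      qed simp
    qed
    thus ?thesis unfolding \<delta>_def using finE by (subst Min_gr_iff) auto
  qed
  have \<delta>le: "\<delta> \<le> W a a * W a b" if "(a, b) \<in> E" for a b
    unfolding \<delta>_def using finE that by (intro Min_le) auto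
  define \<kappa> where "\<kappa> = \<delta> * real m / (Cs + 1)"
  have \<kappa>pos: "\<kappa> > 0" unfolding \<kappa>_def using \<delta>pos m Cs0 by (intro divide_pos_pos mult_pos_pos) auto
  define \<rho> where "\<rho> = max (1/2) (1 - \<kappa>)"
  show ?thesis
  proof (intro exI[of _ \<rho>] conjI allI impI)
    show "0 < \<rho>" by (simp add: \<rho>_def)
    show "\<rho> < 1" using \<kappa>pos by (simp add: \<rho>_def)
    fix v :: "nat \<Rightarrow> 'a" assume v0: "(\<Sum>j<m. v j) = 0"
    define X where "X = (\<lambda>i j k. W i j * W i k * (norm (v j - v k))\<^sup>2)"
    have X0: "X i j k \<ge> 0" if "i < m" "j < m" "k < m" for i j k
      unfolding X_def using W_facts(1)[OF W] that by simp
    have rowid: "(norm (\<Sum>j<m. W i j *\<^sub>R v j))\<^sup>2 = (\<Sum>j<m. W i j * (norm (v j))\<^sup>2) - (1/2) * (\<Sum>j<m. \<Sum>k<m. X i j k)"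
      if "i < m" for i
      unfolding X_def by (rule sq_conv_comb[OF W_facts(2)[OF W that]])
    have "(\<Sum>i<m. (norm (\<Sum>j<m. W i j *\<^sub>R v j))\<^sup>2)
        = (\<Sum>i<m. \<Sum>j<m. W i j * (norm (v j))\<^sup>2) - (1/2) * (\<Sum>i<m. \<Sum>j<m. \<Sum>k<m. X i j k)"
      using rowid by (simp add: sum_subtractf sum_distrib_left)
    also have "(\<Sum>i<m. \<Sum>j<m. W i j * (norm (v j))\<^sup>2) = (\<Sum>j<m. (norm (v j))\<^sup>2)"
    proof -
      have "(\<Sum>i<m. \<Sum>j<m. W i j * (norm (v j))\<^sup>2) = (\<Sum>j<m. \<Sum>i<m. W i j * (norm (v j))\<^sup>2)" by (rule sum.swap)
      also have "\<dots> = (\<Sum>j<m. (\<Sum>i<m. W i j) * (norm (v j))\<^sup>2)" by (simp add: sum_distrib_right)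
      also have "\<dots> = (\<Sum>j<m. (norm (v j))\<^sup>2)" using W_facts(3)[OF W] by simp
      finally show ?thesis .
    qed
    also have "(\<Sum>i<m. \<Sum>j<m. \<Sum>k<m. X i j k) \<ge> \<delta> * S v"
    proof -
      have "(\<Sum>i<m. \<Sum>j<m. \<Sum>k<m. X i j k) = (\<Sum>j<m. \<Sum>i<m. \<Sum>k<m. X i j k)" by (rule sum.swap)
      also have "\<dots> \<ge> (\<Sum>j<m. \<Sum>k<m. X j j k)"
      proof (rule sum_mono)
        fix j assume j: "j \<in> {..<m}"
        show "(\<Sum>k<m. X j j k) \<le> (\<Sum>i<m. \<Sum>k<m. X i j k)"
          using member_le_sum[of j "{..<m}" "\<lambda>i. \<Sum>k<m. X i j k"] j X0 by (auto intro: sum_nonneg)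
      qed
      also have "(\<Sum>j<m. \<Sum>k<m. X j j k) = (\<Sum>p\<in>{..<m} \<times> {..<m}. X (fst p) (fst p) (snd p))"
        by (simp add: sum.cartesian_product case_prod_beta)
      also have "\<dots> \<ge> (\<Sum>p\<in>E. X (fst p) (fst p) (snd p))"
        by (rule sum_mono2) (use Esub X0 in auto)
      also have "(\<Sum>p\<in>E. X (fst p) (fst p) (snd p)) \<ge> (\<Sum>p\<in>E. \<delta> * (norm (v (fst p) - v (snd p)))\<^sup>2)"
      proof (rule sum_mono)
        fix p assume p: "p \<in> E"
        obtain a b where ab: "p = (a, b)" by force
        have "\<delta> \<le> W a a * W a b" using \<delta>le p ab by simp
        thus "\<delta> * (norm (v (fst p) - v (snd p)))\<^sup>2 \<le> X (fst p) (fst p) (snd p)"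
          unfolding X_def ab by (simp add: mult_right_mono)
      qed
      also have "(\<Sum>p\<in>E. \<delta> * (norm (v (fst p) - v (snd p)))\<^sup>2) = \<delta> * S v"
        unfolding S_def by (simp add: sum_distrib_left case_prod_beta)
      finally show ?thesis .
    qed
    moreover have "S v \<ge> 2 * real m / (Cs + 1) * (\<Sum>j<m. (norm (v j))\<^sup>2)"
    proof -
      have "2 * real m * (\<Sum>j<m. (norm (v j))\<^sup>2) \<le> Cs * S v"
        using pairs[of v] sum_pairs_sq[OF v0] by simp
      also have "\<dots> \<le> (Cs + 1) * S v" using S0[of v] by (simp add: algebra_simps)
      finally have "2 * real m * (\<Sum>j<m. (norm (v j))\<^sup>2) \<le> (Cs + 1) * S v" .
      thus ?thesis using Cs0 by (simp add: field_simps)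
    qed
    ultimately have "(\<Sum>i<m. (norm (\<Sum>j<m. W i j *\<^sub>R v j))\<^sup>2)
        \<le> (\<Sum>j<m. (norm (v j))\<^sup>2) - (1/2) * (\<delta> * (2 * real m / (Cs + 1) * (\<Sum>j<m. (norm (v j))\<^sup>2)))"
      using \<delta>pos mult_left_mono[of "2 * real m / (Cs + 1) * (\<Sum>j<m. (norm (v j))\<^sup>2)" "S v" \<delta>]
      by linarith
    also have "\<dots> = (1 - \<kappa>) * (\<Sum>j<m. (norm (v j))\<^sup>2)" by (simp add: \<kappa>_def algebra_simps)
    also have "\<dots> \<le> \<rho> * (\<Sum>j<m. (norm (v j))\<^sup>2)"
      by (intro mult_right_mono) (auto simp: \<rho>_def intro: sum_nonneg)
    finally show "(\<Sum>i<m. (norm (\<Sum>j<m. W i j *\<^sub>R v j))\<^sup>2) \<le> \<rho> * (\<Sum>j<m. (norm (v j))\<^sup>2)" .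
  qed
qed

lemma quad_bound:
  fixes X Y e c A :: real
  assumes "X \<ge> 0" "Y \<ge> 0" "e \<ge> 0" "c > 0" "A \<ge> 0"
    and h: "c * X\<^sup>2 \<le> A * X * Y + e * X + e * Y"
  shows "X \<le> (1 + (A + 2) / c) * (Y + e)"
proof (cases "X \<le> Y + e")
  case True
  have "0 \<le> (A + 2) / c * (Y + e)" using assms by simp
  thus ?thesis using True by (simp add: algebra_simps)
next
  case False
  define s where "s = Y + e"
  have s0: "s \<ge> 0" using assms by (simp add: s_def)
  have Xs: "s < X" using False by (simp add: s_def)
  have X0: "X > 0" using Xs s0 by linarith
  have "A * X * Y \<le> A * X * s" using assms by (intro mult_left_mono) (auto simp: s_def)
  moreover have "e * X \<le> s * X" using assms by (intro mult_right_mono) (auto simp: s_def)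
  moreover have "e * Y \<le> s * X"
  proof -
    have "e * Y \<le> s * s" using assms unfolding s_def by (smt (verit) mult_left_mono mult_right_mono mult_nonneg_nonneg)
    also have "\<dots> \<le> s * X" using s0 Xs by (intro mult_left_mono) auto
    finally show ?thesis .
  qed
  ultimately have "c * X\<^sup>2 \<le> (A + 2) * s * X" using h by (simp add: algebra_simps)
  hence "c * X * X \<le> ((A + 2) * s) * X" by (simp add: power2_eq_square algebra_simps)
  hence "c * X \<le> (A + 2) * s" using X0 by simp
  hence "X \<le> (A + 2) / c * s" using assms(4) by (simp add: field_simps)
  also have "\<dots> \<le> (1 + (A + 2) / c) * s" using s0 by (simp add: algebra_simps)
  finally show ?thesis by (simp add: s_def)
qed

lemma sq_sum_le: "(x + y)\<^sup>2 \<le> 2 * (x\<^sup>2 + y\<^sup>2)" for x y :: real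
proof -
  have "0 \<le> (x - y)\<^sup>2" by simp
  thus ?thesis by (simp add: power2_diff power2_sum)
qed

lemma agentB:
  fixes mt \<mu> Lg LT :: real
  assumes pos: "mt > 0" "\<mu> > 0" "Lg \<ge> 0" "LT \<ge> 0"
  shows "\<exists>\<theta> C4 C5. 0 < \<theta> \<and> \<theta> \<le> 1 \<and> C4 \<ge> 0 \<and> C5 \<ge> 0 \<and>
    (\<forall>\<alpha> a a' nd n\<delta> \<epsilon>. 0 < \<alpha> \<and> \<alpha> \<le> 1 \<and> \<alpha> * Lg \<le> mt / 2 \<and> nd \<ge> 0 \<and> n\<delta> \<ge> 0 \<and> \<epsilon> \<ge> 0 \<and>
       a' \<le> a - \<alpha> * mt * n\<delta>\<^sup>2 + \<alpha> * \<epsilon> * n\<delta> + Lg * \<alpha>\<^sup>2 / 2 * n\<delta>\<^sup>2 \<and>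
       \<mu> * nd\<^sup>2 + mt * n\<delta>\<^sup>2 \<le> (Lg + LT) * nd * n\<delta> + \<epsilon> * nd + \<epsilon> * n\<delta> \<and>
       a \<ge> \<mu> / 2 * nd\<^sup>2 \<and>
       a' \<le> (1 - \<alpha>) * a + \<alpha> * ((LT * n\<delta> + \<epsilon> + Lg * nd) * (nd + n\<delta>) + Lg / 2 * (nd + n\<delta>)\<^sup>2)
     \<longrightarrow> a' \<le> (1 - \<theta> * \<alpha>) * a + \<alpha> * C4 * \<epsilon>\<^sup>2 \<and> n\<delta>\<^sup>2 \<le> C5 * (a + \<epsilon>\<^sup>2))"
proof -
  define K1 where "K1 = 1 + (Lg + LT + 2) / \<mu>"
  define K2 where "K2 = 1 + (Lg + LT + 2) / mt"
  define K3 where "K3 = (LT + 1 + Lg * K1) * (K1 + 1) + Lg / 2 * (K1 + 1)\<^sup>2"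
  define Q where "Q = 2 * K3"
  define \<theta> where "\<theta> = (mt / 2) / (Q + mt / 2)"
  define C4 where "C4 = Q + 1 / mt"
  define C5 where "C5 = 2 * K2\<^sup>2 * (2 / \<mu> + 1)"
  have K1: "K1 \<ge> 1" using pos by (simp add: K1_def)
  have K2: "K2 \<ge> 1" using pos by (simp add: K2_def)
  have K3: "K3 \<ge> 0" using pos K1 unfolding K3_def by (intro add_nonneg_nonneg mult_nonneg_nonneg) auto
  have Q: "Q \<ge> 0" using K3 by (simp add: Q_def)
  have th: "0 < \<theta>" "\<theta> \<le> 1" using pos Q by (auto simp: \<theta>_def field_simps)
  have thQ: "\<theta> * Q = (1 - \<theta>) * (mt / 2)" using pos Q by (simp add: \<theta>_def field_simps)
  show ?thesis
  proof (rule exI[of _ \<theta>], rule exI[of _ C4], rule exI[of _ C5], intro conjI allI impI)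
    show "0 < \<theta>" using th by simp
    show "\<theta> \<le> 1" using th by simp
    show "C4 \<ge> 0" using Q pos by (simp add: C4_def)
    show "C5 \<ge> 0" using pos by (simp add: C5_def)
    fix \<alpha> a a' nd n\<delta> \<epsilon> :: real
    assume H: "0 < \<alpha> \<and> \<alpha> \<le> 1 \<and> \<alpha> * Lg \<le> mt / 2 \<and> nd \<ge> 0 \<and> n\<delta> \<ge> 0 \<and> \<epsilon> \<ge> 0 \<and>
       a' \<le> a - \<alpha> * mt * n\<delta>\<^sup>2 + \<alpha> * \<epsilon> * n\<delta> + Lg * \<alpha>\<^sup>2 / 2 * n\<delta>\<^sup>2 \<and>
       \<mu> * nd\<^sup>2 + mt * n\<delta>\<^sup>2 \<le> (Lg + LT) * nd * n\<delta> + \<epsilon> * nd + \<epsilon> * n\<delta> \<and>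
       a \<ge> \<mu> / 2 * nd\<^sup>2 \<and>
       a' \<le> (1 - \<alpha>) * a + \<alpha> * ((LT * n\<delta> + \<epsilon> + Lg * nd) * (nd + n\<delta>) + Lg / 2 * (nd + n\<delta>)\<^sup>2)"
    have a0: "0 < \<alpha>" "\<alpha> \<le> 1" "\<alpha> * Lg \<le> mt / 2" and nn: "nd \<ge> 0" "n\<delta> \<ge> 0" "\<epsilon> \<ge> 0"
      and A1: "a' \<le> a - \<alpha> * mt * n\<delta>\<^sup>2 + \<alpha> * \<epsilon> * n\<delta> + Lg * \<alpha>\<^sup>2 / 2 * n\<delta>\<^sup>2"
      and A2: "\<mu> * nd\<^sup>2 + mt * n\<delta>\<^sup>2 \<le> (Lg + LT) * nd * n\<delta> + \<epsilon> * nd + \<epsilon> * n\<delta>"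
      and A3: "a \<ge> \<mu> / 2 * nd\<^sup>2"
      and A4: "a' \<le> (1 - \<alpha>) * a + \<alpha> * ((LT * n\<delta> + \<epsilon> + Lg * nd) * (nd + n\<delta>) + Lg / 2 * (nd + n\<delta>)\<^sup>2)"
      using H by auto
    have mtd: "0 \<le> mt * n\<delta>\<^sup>2" using pos by simp
    have mud: "0 \<le> \<mu> * nd\<^sup>2" using pos by simp
    have A2a: "\<mu> * nd\<^sup>2 \<le> (Lg + LT) * nd * n\<delta> + \<epsilon> * nd + \<epsilon> * n\<delta>" using A2 mtd by linarith
    have A2b: "mt * n\<delta>\<^sup>2 \<le> (Lg + LT) * n\<delta> * nd + \<epsilon> * n\<delta> + \<epsilon> * nd" using A2 mud by (simp add: algebra_simps)
    have B1: "nd \<le> K1 * (n\<delta> + \<epsilon>)"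
      unfolding K1_def by (rule quad_bound[OF nn(1) nn(2) nn(3) pos(2) _ A2a]) (use pos in simp)
    have B2: "n\<delta> \<le> K2 * (nd + \<epsilon>)"
      unfolding K2_def by (rule quad_bound[OF nn(2) nn(1) nn(3) pos(1) _ A2b]) (use pos in simp)
    define s where "s = n\<delta> + \<epsilon>"
    have s0: "s \<ge> 0" using nn by (simp add: s_def)
    have e1: "nd + n\<delta> \<le> (K1 + 1) * s" using B1 nn by (simp add: s_def algebra_simps)
    have e2: "LT * n\<delta> + \<epsilon> + Lg * nd \<le> (LT + 1 + Lg * K1) * s"
    proof -
      have "Lg * nd \<le> Lg * (K1 * s)" using B1 pos by (intro mult_left_mono) (auto simp: s_def)
      moreover have "LT * n\<delta> \<le> LT * s" using pos nn by (intro mult_left_mono) (auto simp: s_def)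
      moreover have "\<epsilon> \<le> s" using nn by (simp add: s_def)
      ultimately show ?thesis by (simp add: algebra_simps)
    qed
    have br: "(LT * n\<delta> + \<epsilon> + Lg * nd) * (nd + n\<delta>) + Lg / 2 * (nd + n\<delta>)\<^sup>2 \<le> K3 * s\<^sup>2"
    proof -
      have "(LT * n\<delta> + \<epsilon> + Lg * nd) * (nd + n\<delta>) \<le> ((LT + 1 + Lg * K1) * s) * ((K1 + 1) * s)"
      proof -
        have "0 \<le> (LT + 1 + Lg * K1) * s" using pos K1 s0 by simp
        thus ?thesis using e1 e2 nn pos by (intro mult_mono) auto
      qed
      moreover have "(nd + n\<delta>)\<^sup>2 \<le> ((K1 + 1) * s)\<^sup>2" using e1 nn by (intro power_mono) auto
      hence "Lg / 2 * (nd + n\<delta>)\<^sup>2 \<le> Lg / 2 * ((K1 + 1) * s)\<^sup>2" using pos by (intro mult_left_mono) auto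
      ultimately show ?thesis by (simp add: K3_def power2_eq_square algebra_simps)
    qed
    have s2: "s\<^sup>2 \<le> 2 * (n\<delta>\<^sup>2 + \<epsilon>\<^sup>2)" unfolding s_def by (rule sq_sum_le)
    have "K3 * s\<^sup>2 \<le> K3 * (2 * (n\<delta>\<^sup>2 + \<epsilon>\<^sup>2))" using K3 s2 by (intro mult_left_mono)
    hence D2: "a' \<le> (1 - \<alpha>) * a + \<alpha> * Q * (n\<delta>\<^sup>2 + \<epsilon>\<^sup>2)"
    proof -
      assume k: "K3 * s\<^sup>2 \<le> K3 * (2 * (n\<delta>\<^sup>2 + \<epsilon>\<^sup>2))"
      have "\<alpha> * ((LT * n\<delta> + \<epsilon> + Lg * nd) * (nd + n\<delta>) + Lg / 2 * (nd + n\<delta>)\<^sup>2) \<le> \<alpha> * (K3 * (2 * (n\<delta>\<^sup>2 + \<epsilon>\<^sup>2)))"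
        using br k a0 by (intro mult_left_mono) auto
      thus ?thesis using A4 by (simp add: Q_def algebra_simps)
    qed
    have D1: "a' \<le> a - \<alpha> * (mt / 2) * n\<delta>\<^sup>2 + \<alpha> * (1 / mt) * \<epsilon>\<^sup>2"
    proof -
      have t: "2 * (n\<delta> * \<epsilon>) \<le> (mt / 2) * n\<delta>\<^sup>2 + (1 / (mt / 2)) * \<epsilon>\<^sup>2"
        using two_mul_le[of "mt / 2" n\<delta> \<epsilon>] pos by simp
      hence t': "\<epsilon> * n\<delta> \<le> (mt / 4) * n\<delta>\<^sup>2 + (1 / mt) * \<epsilon>\<^sup>2" by (simp add: field_simps)
      have "\<alpha> * (\<epsilon> * n\<delta>) \<le> \<alpha> * ((mt / 4) * n\<delta>\<^sup>2 + (1 / mt) * \<epsilon>\<^sup>2)" using t' a0 by (intro mult_left_mono) auto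
      moreover have "Lg * \<alpha>\<^sup>2 / 2 * n\<delta>\<^sup>2 \<le> \<alpha> * (mt / 4) * n\<delta>\<^sup>2"
      proof -
        have "Lg * \<alpha>\<^sup>2 / 2 = \<alpha> * (\<alpha> * Lg / 2)" by (simp add: power2_eq_square algebra_simps)
        also have "\<dots> \<le> \<alpha> * (mt / 4)" using a0 by (intro mult_left_mono) (auto simp: mult.commute)
        finally show ?thesis using nn by (intro mult_right_mono) auto
      qed
      ultimately show ?thesis using A1 by (simp add: algebra_simps)
    qed
    have "a' = \<theta> * a' + (1 - \<theta>) * a'" by (simp add: algebra_simps)
    also have "\<dots> \<le> \<theta> * ((1 - \<alpha>) * a + \<alpha> * Q * (n\<delta>\<^sup>2 + \<epsilon>\<^sup>2)) + (1 - \<theta>) * (a - \<alpha> * (mt / 2) * n\<delta>\<^sup>2 + \<alpha> * (1 / mt) * \<epsilon>\<^sup>2)"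
      using D1 D2 th by (intro add_mono mult_left_mono) auto
    also have "\<dots> = (1 - \<theta> * \<alpha>) * a + \<alpha> * n\<delta>\<^sup>2 * (\<theta> * Q - (1 - \<theta>) * (mt / 2)) + \<alpha> * (\<theta> * Q + (1 - \<theta>) * (1 / mt)) * \<epsilon>\<^sup>2"
      by (simp add: algebra_simps)
    also have "\<dots> = (1 - \<theta> * \<alpha>) * a + \<alpha> * (\<theta> * Q + (1 - \<theta>) * (1 / mt)) * \<epsilon>\<^sup>2" using thQ by simp
    also have "\<dots> \<le> (1 - \<theta> * \<alpha>) * a + \<alpha> * C4 * \<epsilon>\<^sup>2"
    proof -
      have "\<theta> * Q \<le> Q" using th Q by (simp add: mult_left_le_one_le)
      moreover have "(1 - \<theta>) * (1 / mt) \<le> 1 / mt" using th pos by (simp add: divide_right_mono)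
      ultimately have "\<theta> * Q + (1 - \<theta>) * (1 / mt) \<le> C4" by (simp add: C4_def)
      hence "\<alpha> * (\<theta> * Q + (1 - \<theta>) * (1 / mt)) * \<epsilon>\<^sup>2 \<le> \<alpha> * C4 * \<epsilon>\<^sup>2"
        using a0 by (intro mult_right_mono mult_left_mono) auto
      thus ?thesis by simp
    qed
    finally show "a' \<le> (1 - \<theta> * \<alpha>) * a + \<alpha> * C4 * \<epsilon>\<^sup>2" .
    have "n\<delta>\<^sup>2 \<le> (K2 * (nd + \<epsilon>))\<^sup>2" using B2 nn by (intro power_mono) auto
    also have "\<dots> = K2\<^sup>2 * (nd + \<epsilon>)\<^sup>2" by (simp add: power_mult_distrib)
    also have "\<dots> \<le> K2\<^sup>2 * (2 * (nd\<^sup>2 + \<epsilon>\<^sup>2))" by (intro mult_left_mono sq_sum_le) auto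
    also have "\<dots> \<le> K2\<^sup>2 * (2 * (2 / \<mu> * a + \<epsilon>\<^sup>2))"
    proof -
      have "nd\<^sup>2 \<le> 2 / \<mu> * a" using A3 pos by (simp add: field_simps)
      thus ?thesis by (intro mult_left_mono) auto
    qed
    also have "\<dots> \<le> C5 * (a + \<epsilon>\<^sup>2)"
    proof -
      have "0 \<le> \<mu> / 2 * nd\<^sup>2" using pos by simp
      hence a00: "a \<ge> 0" using A3 by linarith
      have "0 \<le> 2 / \<mu> * \<epsilon>\<^sup>2" using pos by simp
      hence "2 / \<mu> * a + \<epsilon>\<^sup>2 \<le> (2 / \<mu> + 1) * (a + \<epsilon>\<^sup>2)"
        using a00 by (simp add: distrib_right distrib_left)
      hence "K2\<^sup>2 * (2 * (2 / \<mu> * a + \<epsilon>\<^sup>2)) \<le> K2\<^sup>2 * (2 * ((2 / \<mu> + 1) * (a + \<epsilon>\<^sup>2)))"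
        by (intro mult_left_mono) auto
      also have "\<dots> = C5 * (a + \<epsilon>\<^sup>2)" by (simp add: C5_def)
      finally show ?thesis .
    qed
    finally show "n\<delta>\<^sup>2 \<le> C5 * (a + \<epsilon>\<^sup>2)" .
  qed
qed

lemma vi_min:
  fixes g G :: "'a::real_inner \<Rightarrow> real"
  assumes K: "convex K" and p: "p \<in> K" and z: "z \<in> K"
    and desc: "\<And>a b. a \<in> K \<Longrightarrow> b \<in> K \<Longrightarrow> g b \<le> g a + gg a \<bullet> (b - a) + c / 2 * (norm (b - a))\<^sup>2"
    and Gc: "convex_on K G"
    and min: "\<And>w. w \<in> K \<Longrightarrow> g p + G p \<le> g w + G w"
  shows "gg p \<bullet> (z - p) + G z - G p \<ge> 0"
proof -
  let ?A = "gg p \<bullet> (z - p) + G z - G p"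
  let ?B = "c / 2 * (norm (z - p))\<^sup>2"
  have "0 \<le> ?A + t * ?B" if t: "0 < t" "t \<le> 1" for t
  proof -
    define q where "q = p + t *\<^sub>R (z - p)"
    have q: "q \<in> K" unfolding q_def using seg_in[OF K p z] t by simp
    have qq: "q = (1 - t) *\<^sub>R p + t *\<^sub>R z" by (simp add: q_def algebra_simps)
    have "g p + G p \<le> g q + G q" by (rule min[OF q])
    also have "g q \<le> g p + gg p \<bullet> (q - p) + c / 2 * (norm (q - p))\<^sup>2" by (rule desc[OF p q])
    also have "G q \<le> (1 - t) * G p + t * G z"
      unfolding qq using convex_onD[OF Gc, of t p z] t p z by simp
    finally have "0 \<le> gg p \<bullet> (q - p) + c / 2 * (norm (q - p))\<^sup>2 + t * (G z - G p)"
      by (simp add: algebra_simps)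
    also have "gg p \<bullet> (q - p) = t * (gg p \<bullet> (z - p))" by (simp add: q_def)
    also have "c / 2 * (norm (q - p))\<^sup>2 = t * (t * ?B)"
    proof -
      have "norm (q - p) = t * norm (z - p)" using t by (simp add: q_def)
      thus ?thesis by (simp add: power2_eq_square)
    qed
    finally have "0 \<le> t * (?A + t * ?B)" by (simp add: algebra_simps)
    thus ?thesis using t by (simp add: zero_le_mult_iff)
  qed
  thus ?thesis by (rule eps_limit)
qed

locale sonata_setting =
  fixes m :: nat
    and K Oset :: "'a::euclidean_space set"
    and f :: "nat \<Rightarrow> 'a \<Rightarrow> real"
    and gf :: "nat \<Rightarrow> 'a \<Rightarrow> 'a"
    and Hf :: "nat \<Rightarrow> 'a \<Rightarrow> 'a \<Rightarrow> 'a"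
    and G :: "'a \<Rightarrow> real"
    and \<mu> L :: real
    and xstar :: 'a
    and E :: "(nat \<times> nat) set"
    and W :: "nat \<Rightarrow> nat \<Rightarrow> real"
    and ft :: "nat \<Rightarrow> 'a \<Rightarrow> 'a \<Rightarrow> real"
    and gft :: "nat \<Rightarrow> 'a \<Rightarrow> 'a \<Rightarrow> 'a"
    and Lt mut :: "nat \<Rightarrow> real"
  assumes m_pos: "m \<ge> 1"
    and K_ne: "K \<noteq> {}" and K_convex: "convex K"
    and O_open: "open Oset" and K_sub_O: "K \<subseteq> Oset"
    and f_grad: "\<And>i x. i < m \<Longrightarrow> x \<in> Oset \<Longrightarrow> (f i has_derivative (\<lambda>h. gf i x \<bullet> h)) (at x)"
    and f_hess: "\<And>i x. i < m \<Longrightarrow> x \<in> Oset \<Longrightarrow> (gf i has_derivative Hf i x) (at x)"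
    and f_convex: "\<And>i. i < m \<Longrightarrow> convex_on Oset (f i)"
    and mu_pos: "\<mu> > 0"
    and F_hess_bounds: "\<And>x h. x \<in> K \<Longrightarrow>
          \<mu> * (norm h)\<^sup>2 \<le> h \<bullet> ((1 / real m) *\<^sub>R (\<Sum>i<m. Hf i x h)) \<and>
          h \<bullet> ((1 / real m) *\<^sub>R (\<Sum>i<m. Hf i x h)) \<le> L * (norm h)\<^sup>2"
    and G_convex: "convex_on K G"
    and xstar_in: "xstar \<in> K"
    and xstar_min: "\<And>x. x \<in> K \<Longrightarrow> (1 / real m) * (\<Sum>i<m. f i xstar) + G xstar \<le> (1 / real m) * (\<Sum>i<m. f i x) + G x"
    and graph: "connected_undirected_graph m E"
    and W_ok: "weight_matrix_ok m E W"
    and ft_grad: "\<And>i x y. i < m \<Longrightarrow> x \<in> Oset \<Longrightarrow> y \<in> Oset \<Longrightarrow>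
          ((\<lambda>z. ft i z y) has_derivative (\<lambda>h. gft i x y \<bullet> h)) (at x)"
    and ft_consistent: "\<And>i x. i < m \<Longrightarrow> x \<in> K \<Longrightarrow> gft i x x = gf i x"
    and ft_lipschitz: "\<And>i x. i < m \<Longrightarrow> x \<in> K \<Longrightarrow> lipschitz_on (Lt i) K (\<lambda>z. gft i z x)"
    and mut_pos: "\<And>i. i < m \<Longrightarrow> mut i > 0"
    and ft_strongly_convex: "\<And>i x. i < m \<Longrightarrow> x \<in> K \<Longrightarrow> strongly_convex_on (mut i) K (\<lambda>z. ft i z x)"
begin

definition F where "F x = (1 / real m) * (\<Sum>i<m. f i x)"
definition gF where "gF x = (1 / real m) *\<^sub>R (\<Sum>i<m. gf i x)"
definition HFF where "HFF x h = (1 / real m) *\<^sub>R (\<Sum>i<m. Hf i x h)"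
definition Uf where "Uf x = F x + G x"

lemma m_gt0: "real m > 0" using m_pos by simp

lemma F_deriv: assumes "x \<in> Oset" shows "(F has_derivative (\<lambda>h. gF x \<bullet> h)) (at x)"
proof -
  have "((\<lambda>x. \<Sum>i<m. f i x) has_derivative (\<lambda>h. \<Sum>i<m. gf i x \<bullet> h)) (at x)"
    by (rule has_derivative_sum) (use f_grad assms in auto)
  hence "((\<lambda>x. (1 / real m) * (\<Sum>i<m. f i x)) has_derivative (\<lambda>h. (1 / real m) * (\<Sum>i<m. gf i x \<bullet> h))) (at x)"
    by (rule has_derivative_mult_right)
  moreover have "(\<lambda>h. (1 / real m) * (\<Sum>i<m. gf i x \<bullet> h)) = (\<lambda>h. gF x \<bullet> h)"
    by (auto simp: fun_eq_iff gF_def inner_sum_left)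
  ultimately show ?thesis by (simp add: F_def[abs_def])
qed

lemma gF_deriv: assumes "x \<in> Oset" shows "(gF has_derivative HFF x) (at x)"
proof -
  have "((\<lambda>x. \<Sum>i<m. gf i x) has_derivative (\<lambda>h. \<Sum>i<m. Hf i x h)) (at x)"
    by (rule has_derivative_sum) (use f_hess assms in auto)
  hence "((\<lambda>x. (1 / real m) *\<^sub>R (\<Sum>i<m. gf i x)) has_derivative (\<lambda>h. (1 / real m) *\<^sub>R (\<Sum>i<m. Hf i x h))) (at x)"
    by (rule has_derivative_scaleR_right)
  thus ?thesis by (simp add: gF_def[abs_def] HFF_def[abs_def])
qed

lemma HF_bounds: "x \<in> K \<Longrightarrow> \<mu> * (norm h)\<^sup>2 \<le> h \<bullet> HFF x h \<and> h \<bullet> HFF x h \<le> L * (norm h)\<^sup>2"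
  using F_hess_bounds by (simp add: HFF_def)

lemma mu_le_L: "\<mu> \<le> L"
proof -
  obtain x where x: "x \<in> K" using K_ne by blast
  obtain b :: 'a where b: "b \<in> Basis" using nonempty_Basis by blast
  have "norm b = 1" using b by simp
  thus ?thesis using HF_bounds[OF x, of b] by simp
qed

lemma L_pos: "L > 0" using mu_le_L mu_pos by simp

lemma Hf_sym: "i < m \<Longrightarrow> x \<in> Oset \<Longrightarrow> Hf i x h \<bullet> k = Hf i x k \<bullet> h"
  by (rule schwarz[OF O_open _ _ f_hess]) (auto intro: f_grad)

lemma Hf_psd: "i < m \<Longrightarrow> x \<in> Oset \<Longrightarrow> h \<bullet> Hf i x h \<ge> 0"
  by (rule psd_convex[OF f_convex O_open _ _ f_hess]) (auto intro: f_grad)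

lemma Hf_bound:
  assumes i: "i < m" and x: "x \<in> K"
  shows "norm (Hf i x h) \<le> (real m * L) * norm h"
proof -
  have xO: "x \<in> Oset" using x K_sub_O by auto
  have lin: "linear (Hf i x)" using f_hess[OF i xO] has_derivative_linear by blast
  have up: "k \<bullet> Hf i x k \<le> (real m * L) * (norm k)\<^sup>2" for k
  proof -
    have "k \<bullet> Hf i x k \<le> (\<Sum>j<m. k \<bullet> Hf j x k)"
      using member_le_sum[of i "{..<m}" "\<lambda>j. k \<bullet> Hf j x k"] Hf_psd xO i by auto
    also have "\<dots> = real m * (k \<bullet> HFF x k)"
      using m_gt0 by (simp add: HFF_def inner_sum_right)
    also have "\<dots> \<le> real m * (L * (norm k)\<^sup>2)" using HF_bounds[OF x, of k] m_gt0 by simp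
    finally show ?thesis by simp
  qed
  show ?thesis
    by (rule symm_opnorm[OF lin]) (use Hf_sym[OF i xO] Hf_psd[OF i xO] up in auto)
qed

definition Lg where "Lg = real m * L"

lemma Lg_pos: "Lg > 0" using m_gt0 L_pos by (simp add: Lg_def)

lemma gf_lip: "i < m \<Longrightarrow> x \<in> K \<Longrightarrow> y \<in> K \<Longrightarrow> norm (gf i x - gf i y) \<le> Lg * norm (x - y)"
  unfolding Lg_def
  by (rule lip_from_bound[OF K_convex, where H = "Hf i"]) (use f_hess K_sub_O Hf_bound in auto)

lemma gF_lip:
  assumes x: "x \<in> K" and y: "y \<in> K"
  shows "norm (gF x - gF y) \<le> Lg * norm (x - y)"
proof -
  have "gF x - gF y = (1 / real m) *\<^sub>R (\<Sum>i<m. gf i x - gf i y)"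
    by (simp add: gF_def sum_subtractf scaleR_diff_right)
  hence "norm (gF x - gF y) = (1 / real m) * norm (\<Sum>i<m. gf i x - gf i y)" using m_gt0 by simp
  also have "\<dots> \<le> (1 / real m) * (\<Sum>i<m. norm (gf i x - gf i y))"
    using m_gt0 by (intro mult_left_mono norm_sum) auto
  also have "\<dots> \<le> (1 / real m) * (\<Sum>i<m. Lg * norm (x - y))"
    using m_gt0 gf_lip[OF _ x y] by (intro mult_left_mono sum_mono) auto
  also have "\<dots> = Lg * norm (x - y)" using m_gt0 by simp
  finally show ?thesis .
qed

lemma F_desc: "w \<in> K \<Longrightarrow> z \<in> K \<Longrightarrow> F z \<le> F w + gF w \<bullet> (z - w) + Lg / 2 * (norm (z - w))\<^sup>2"
  by (rule descent_lip[OF K_convex, where gg = gF]) (use F_deriv K_sub_O gF_lip in auto)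

lemma F_sc:
  assumes "w \<in> K" "z \<in> K"
  shows "F z \<ge> F w + gF w \<bullet> (z - w) + \<mu> / 2 * (norm (z - w))\<^sup>2"
    and "(gF z - gF w) \<bullet> (z - w) \<ge> \<mu> * (norm (z - w))\<^sup>2"
  using second_order_lo[OF K_convex assms, where g = F and gg = gF and Hg = HFF and c = \<mu>]
    F_deriv gF_deriv K_sub_O HF_bounds by auto

lemma F_convex: "convex_on K F"
  unfolding convex_on_def
proof (intro conjI K_convex ballI allI impI)
  fix x y :: 'a and u v :: real assume xy: "x \<in> K" "y \<in> K" and uv: "0 \<le> u" "0 \<le> v" "u + v = 1"
  have "(\<Sum>i<m. f i (u *\<^sub>R x + v *\<^sub>R y)) \<le> (\<Sum>i<m. u * f i x + v * f i y)"
  proof (rule sum_mono)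
    fix i assume "i \<in> {..<m}"
    hence i: "i < m" by simp
    show "f i (u *\<^sub>R x + v *\<^sub>R y) \<le> u * f i x + v * f i y"
      using f_convex[OF i] xy uv K_sub_O unfolding convex_on_def by blast
  qed
  hence "(1 / real m) * (\<Sum>i<m. f i (u *\<^sub>R x + v *\<^sub>R y)) \<le> (1 / real m) * (\<Sum>i<m. u * f i x + v * f i y)"
    using m_gt0 by (intro mult_left_mono) auto
  thus "F (u *\<^sub>R x + v *\<^sub>R y) \<le> u * F x + v * F y"
    by (simp add: F_def sum.distrib sum_distrib_left algebra_simps)
qed

lemma U_convex: "convex_on K Uf"
  unfolding Uf_def[abs_def] by (rule convex_on_add[OF F_convex G_convex])

lemma xstar_minU: "x \<in> K \<Longrightarrow> Uf xstar \<le> Uf x"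
  using xstar_min by (simp add: Uf_def F_def)

lemma xstar_VI: "z \<in> K \<Longrightarrow> gF xstar \<bullet> (z - xstar) + G z - G xstar \<ge> 0"
  by (rule vi_min[OF K_convex xstar_in _ F_desc G_convex]) (use xstar_minU in \<open>auto simp: Uf_def\<close>)

lemma U_growth: "x \<in> K \<Longrightarrow> Uf x - Uf xstar \<ge> \<mu> / 2 * (norm (x - xstar))\<^sup>2"
  using F_sc(1)[OF xstar_in, of x] xstar_VI[of x] by (simp add: Uf_def)

lemma ft_desc:
  assumes i: "i < m" and x: "x \<in> K" and w: "w \<in> K" and z: "z \<in> K"
  shows "ft i z x \<le> ft i w x + gft i w x \<bullet> (z - w) + Lt i / 2 * (norm (z - w))\<^sup>2"
proof (rule descent_lip[OF K_convex w z, where gg = "\<lambda>u. gft i u x"])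
  fix u assume "u \<in> K"
  thus "((\<lambda>z. ft i z x) has_derivative (\<lambda>h. gft i u x \<bullet> h)) (at u)"
    using ft_grad[OF i] K_sub_O x by auto
next
  fix u u' assume "u \<in> K" "u' \<in> K"
  thus "norm (gft i u x - gft i u' x) \<le> Lt i * norm (u - u')"
    using ft_lipschitz[OF i x] unfolding lipschitz_on_def dist_norm by auto
qed

lemma Lt_nonneg: "i < m \<Longrightarrow> Lt i \<ge> 0"
  using ft_lipschitz K_ne unfolding lipschitz_on_def by blast

lemma gft_lip: "i < m \<Longrightarrow> x \<in> K \<Longrightarrow> u \<in> K \<Longrightarrow> u' \<in> K \<Longrightarrow> norm (gft i u x - gft i u' x) \<le> Lt i * norm (u - u')"
  using ft_lipschitz unfolding lipschitz_on_def dist_norm by blast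

lemma ft_sc:
  assumes i: "i < m" and x: "x \<in> K" and w: "w \<in> K" and z: "z \<in> K"
  shows "ft i z x \<ge> ft i w x + gft i w x \<bullet> (z - w) + mut i / 2 * (norm (z - w))\<^sup>2"
proof -
  let ?g = "\<lambda>z. ft i z x - (mut i / 2) * (norm z)\<^sup>2"
  have cv: "convex_on K ?g" using ft_strongly_convex[OF i x] unfolding strongly_convex_on_def .
  have wO: "w \<in> Oset" "x \<in> Oset" using w x K_sub_O by auto
  have d1: "((\<lambda>z. ft i z x) has_derivative (\<lambda>h. gft i w x \<bullet> h)) (at w)" using ft_grad[OF i wO] .
  have d2: "((\<lambda>z. (norm z)\<^sup>2) has_derivative (\<lambda>h. (2 *\<^sub>R w) \<bullet> h)) (at w)"
  proof -
    have "((\<lambda>z. z \<bullet> z) has_derivative (\<lambda>h. w \<bullet> h + h \<bullet> w)) (at w)"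
      by (rule has_derivative_inner[OF has_derivative_ident has_derivative_ident])
    moreover have "(\<lambda>h. w \<bullet> h + h \<bullet> w) = (\<lambda>h. (2 *\<^sub>R w) \<bullet> h)" by (auto simp: fun_eq_iff inner_commute)
    ultimately show ?thesis by (simp add: power2_norm_eq_inner)
  qed
  have d: "(?g has_derivative (\<lambda>h. (gft i w x - mut i *\<^sub>R w) \<bullet> h)) (at w)"
  proof -
    have "(?g has_derivative (\<lambda>h. gft i w x \<bullet> h - (mut i / 2) * ((2 *\<^sub>R w) \<bullet> h))) (at w)"
      by (intro has_derivative_diff d1 has_derivative_mult_right d2)
    moreover have "(\<lambda>h. gft i w x \<bullet> h - (mut i / 2) * ((2 *\<^sub>R w) \<bullet> h)) = (\<lambda>h. (gft i w x - mut i *\<^sub>R w) \<bullet> h)"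
      by (auto simp: fun_eq_iff inner_diff_left)
    ultimately show ?thesis by simp
  qed
  have T: "?g z \<ge> ?g w + (gft i w x - mut i *\<^sub>R w) \<bullet> (z - w)"
    by (rule tangent_convex[OF cv K_convex w z d])
  have I: "(gft i w x - mut i *\<^sub>R w) \<bullet> (z - w) = gft i w x \<bullet> (z - w) - mut i * (w \<bullet> (z - w))"
    by (simp add: inner_diff_left)
  have N: "(norm (z - w))\<^sup>2 = (norm z)\<^sup>2 - (norm w)\<^sup>2 - 2 * (w \<bullet> (z - w))"
    by (simp add: power2_norm_eq_inner inner_diff_left inner_diff_right inner_commute)
  have "mut i / 2 * (norm (z - w))\<^sup>2 = mut i / 2 * (norm z)\<^sup>2 - mut i / 2 * (norm w)\<^sup>2 - mut i * (w \<bullet> (z - w))"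
    unfolding N by (simp add: algebra_simps)
  thus ?thesis using T I by linarith
qed

lemma ft_sm:
  assumes i: "i < m" and x: "x \<in> K" and w: "w \<in> K" and z: "z \<in> K"
  shows "(gft i z x - gft i w x) \<bullet> (z - w) \<ge> mut i * (norm (z - w))\<^sup>2"
proof -
  have 1: "ft i z x \<ge> ft i w x + gft i w x \<bullet> (z - w) + mut i / 2 * (norm (z - w))\<^sup>2" by (rule ft_sc[OF assms])
  have 2: "ft i w x \<ge> ft i z x + gft i z x \<bullet> (w - z) + mut i / 2 * (norm (w - z))\<^sup>2" by (rule ft_sc[OF i x z w])
  have "norm (w - z) = norm (z - w)" by (rule norm_minus_commute)
  moreover have "gft i z x \<bullet> (w - z) = - (gft i z x \<bullet> (z - w))" by (simp add: inner_diff_right)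
  ultimately show ?thesis using 1 2 by (simp add: inner_diff_left)
qed

end

context sonata_setting
begin

definition mt where "mt = Min (mut ` {..<m})"
definition LT where "LT = Max (Lt ` {..<m})"

lemma mt_le: "i < m \<Longrightarrow> mt \<le> mut i"
  unfolding mt_def by (intro Min_le) auto

lemma mt_pos: "mt > 0"
proof -
  have "0 \<in> {..<m}" using m_pos by simp
  hence ne: "mut ` {..<m} \<noteq> {}" by blast
  show ?thesis unfolding mt_def using ne mut_pos by (subst Min_gr_iff) auto
qed

lemma LT_ge: "i < m \<Longrightarrow> Lt i \<le> LT"
  unfolding LT_def by (intro Max_ge) auto

lemma LT_nonneg: "LT \<ge> 0"
  using LT_ge[of 0] Lt_nonneg[of 0] m_pos by simp

lemma ip_lower: "a \<bullet> b \<ge> - (norm a * norm b)" for a b :: 'a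
  using Cauchy_Schwarz_ineq2[of a b] by linarith

lemma agentA:
  assumes i: "i < m" and x: "x \<in> K" and p: "p \<in> K"
    and min: "\<And>w. w \<in> K \<Longrightarrow> ft i p x + (y - gf i x) \<bullet> (p - x) + G p \<le> ft i w x + (y - gf i x) \<bullet> (w - x) + G w"
    and a: "0 < \<alpha>" "\<alpha> \<le> 1"
  defines "nd \<equiv> norm (x - xstar)" and "n\<delta> \<equiv> norm (p - x)" and "\<epsilon> \<equiv> norm (y - gF x)"
    and "a \<equiv> Uf x - Uf xstar" and "a' \<equiv> Uf (x + \<alpha> *\<^sub>R (p - x)) - Uf xstar"
  shows "a' \<le> a - \<alpha> * mt * n\<delta>\<^sup>2 + \<alpha> * \<epsilon> * n\<delta> + Lg * \<alpha>\<^sup>2 / 2 * n\<delta>\<^sup>2"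
    and "\<mu> * nd\<^sup>2 + mt * n\<delta>\<^sup>2 \<le> (Lg + LT) * nd * n\<delta> + \<epsilon> * nd + \<epsilon> * n\<delta>"
    and "a \<ge> \<mu> / 2 * nd\<^sup>2"
    and "a' \<le> (1 - \<alpha>) * a + \<alpha> * ((LT * n\<delta> + \<epsilon> + Lg * nd) * (nd + n\<delta>) + Lg / 2 * (nd + n\<delta>)\<^sup>2)"
proof -
  define gx where "gx = gf i x"
  define gp where "gp = gft i p x"
  define xs where "xs = xstar"
  have xs: "xs \<in> K" using xstar_in by (simp add: xs_def)
  have gxx: "gft i x x = gx" using ft_consistent[OF i x] by (simp add: gx_def)
  have VIp: "(gp + (y - gx)) \<bullet> (z - p) + G z - G p \<ge> 0" if z: "z \<in> K" for z
  proof -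
    have "(gft i p x + (y - gf i x)) \<bullet> (z - p) + G z - G p \<ge> 0"
    proof (rule vi_min[OF K_convex p z, where g = "\<lambda>z. ft i z x + (y - gf i x) \<bullet> (z - x)" and c = "Lt i"])
      fix a b assume ab: "a \<in> K" "b \<in> K"
      have "ft i b x \<le> ft i a x + gft i a x \<bullet> (b - a) + Lt i / 2 * (norm (b - a))\<^sup>2" by (rule ft_desc[OF i x ab])
      moreover have "(y - gf i x) \<bullet> (b - x) = (y - gf i x) \<bullet> (a - x) + (y - gf i x) \<bullet> (b - a)"
        by (simp add: inner_diff_right)
      ultimately show "ft i b x + (y - gf i x) \<bullet> (b - x) \<le> ft i a x + (y - gf i x) \<bullet> (a - x)
          + (gft i a x + (y - gf i x)) \<bullet> (b - a) + Lt i / 2 * (norm (b - a))\<^sup>2"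
        by (simp add: inner_add_left)
    next
      show "convex_on K G" by (rule G_convex)
    next
      fix w assume "w \<in> K"
      thus "ft i p x + (y - gf i x) \<bullet> (p - x) + G p \<le> ft i w x + (y - gf i x) \<bullet> (w - x) + G w" by (rule min)
    qed
    thus ?thesis by (simp add: gp_def gx_def)
  qed
  have sm: "(gp - gx) \<bullet> (p - x) \<ge> mt * n\<delta>\<^sup>2"
  proof -
    have "(gp - gx) \<bullet> (p - x) \<ge> mut i * n\<delta>\<^sup>2"
      using ft_sm[OF i x x p] by (simp add: gp_def gxx n\<delta>_def)
    moreover have "mt * n\<delta>\<^sup>2 \<le> mut i * n\<delta>\<^sup>2" using mt_le[OF i] by (intro mult_right_mono) auto
    ultimately show ?thesis by linarith
  qed
  have lipg: "norm (gp - gx) \<le> LT * n\<delta>"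
  proof -
    have "norm (gp - gx) \<le> Lt i * n\<delta>" using gft_lip[OF i x p x] by (simp add: gp_def gxx n\<delta>_def)
    also have "\<dots> \<le> LT * n\<delta>" using LT_ge[OF i] by (intro mult_right_mono) (auto simp: n\<delta>_def)
    finally show ?thesis .
  qed
  define x' where "x' = x + \<alpha> *\<^sub>R (p - x)"
  have x'K: "x' \<in> K" unfolding x'_def using seg_in[OF K_convex x p] a by simp
  have x'eq: "x' = (1 - \<alpha>) *\<^sub>R x + \<alpha> *\<^sub>R p" by (simp add: x'_def algebra_simps)
  have nn: "nd \<ge> 0" "n\<delta> \<ge> 0" "\<epsilon> \<ge> 0" by (auto simp: nd_def n\<delta>_def \<epsilon>_def)
  have Fx': "F x' \<le> F x + gF x \<bullet> (x' - x) + Lg / 2 * (norm (x' - x))\<^sup>2" by (rule F_desc[OF x x'K])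
  have Gx': "G x' \<le> (1 - \<alpha>) * G x + \<alpha> * G p"
    unfolding x'eq using convex_onD[OF G_convex, of \<alpha> x p] a x p by simp
  have vx: "(gp + (y - gx)) \<bullet> (x - p) + G x - G p \<ge> 0" by (rule VIp[OF x])
  have e1: "gF x \<bullet> (x' - x) = \<alpha> * (gF x \<bullet> (p - x))" by (simp add: x'_def)
  have e2: "(norm (x' - x))\<^sup>2 = \<alpha>\<^sup>2 * n\<delta>\<^sup>2" using a by (simp add: x'_def n\<delta>_def power_mult_distrib)
  have e3: "(gp + (y - gx)) \<bullet> (x - p) = - ((gp - gx) \<bullet> (p - x)) - (y \<bullet> (p - x))"
    by (simp add: inner_diff_left inner_diff_right inner_add_left algebra_simps)
  have cs: "(gF x - y) \<bullet> (p - x) \<le> \<epsilon> * n\<delta>"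
  proof -
    have "(gF x - y) \<bullet> (p - x) \<le> norm (gF x - y) * norm (p - x)" by (rule norm_cauchy_schwarz)
    thus ?thesis by (simp add: \<epsilon>_def n\<delta>_def norm_minus_commute)
  qed
  have "G x' \<le> G x + \<alpha> * (G p - G x)" using Gx' by (simp add: algebra_simps)
  also have "\<alpha> * (G p - G x) \<le> \<alpha> * (- ((gp - gx) \<bullet> (p - x)) - (y \<bullet> (p - x)))"
    using vx e3 a by (intro mult_left_mono) auto
  finally have Gb: "G x' \<le> G x + \<alpha> * (- ((gp - gx) \<bullet> (p - x)) - (y \<bullet> (p - x)))" by simp
  have "\<alpha> * ((gp - gx) \<bullet> (p - x)) \<ge> \<alpha> * (mt * n\<delta>\<^sup>2)" using sm a by (intro mult_left_mono) auto
  moreover have "\<alpha> * ((gF x - y) \<bullet> (p - x)) \<le> \<alpha> * (\<epsilon> * n\<delta>)" using cs a by (intro mult_left_mono) auto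
  moreover have "(gF x - y) \<bullet> (p - x) = gF x \<bullet> (p - x) - y \<bullet> (p - x)" by (simp add: inner_diff_left)
  ultimately show "a' \<le> a - \<alpha> * mt * n\<delta>\<^sup>2 + \<alpha> * \<epsilon> * n\<delta> + Lg * \<alpha>\<^sup>2 / 2 * n\<delta>\<^sup>2"
    using Fx' Gb e1 e2 unfolding a'_def a_def x'_def[symmetric] Uf_def
    by (simp add: algebra_simps)
  define d where "d = x - xs"
  define \<delta> where "\<delta> = p - x"
  have pe: "p - xs = \<delta> + d" by (simp add: d_def \<delta>_def)
  have ndd: "norm d = nd" by (simp add: d_def nd_def xs_def)
  have n\<delta>\<delta>: "norm \<delta> = n\<delta>" by (simp add: \<delta>_def n\<delta>_def)
  have ne: "norm (p - xs) \<le> nd + n\<delta>" unfolding pe using norm_triangle_ineq[of \<delta> d] ndd n\<delta>\<delta> by simp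
  have vs: "(gp + (y - gx)) \<bullet> (xs - p) + G xs - G p \<ge> 0" by (rule VIp[OF xs])
  have xv: "gF xs \<bullet> (p - xs) + G p - G xs \<ge> 0" using xstar_VI[OF p] by (simp add: xs_def)
  have key: "((gp - gx) + (y - gF x) + (gF x - gF xs)) \<bullet> (p - xs) \<le> 0"
  proof -
    have "(gp + (y - gx)) \<bullet> (xs - p) = - ((gp + (y - gx)) \<bullet> (p - xs))"
      by (simp add: inner_diff_right)
    hence A: "(gp + (y - gx)) \<bullet> (p - xs) - gF xs \<bullet> (p - xs) \<le> 0" using vs xv by linarith
    have eqv: "((gp - gx) + (y - gF x) + (gF x - gF xs)) = (gp + (y - gx)) - gF xs" by (simp add: algebra_simps)
    show ?thesis unfolding eqv inner_diff_left using A by linarith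
  qed
  have t1: "(gp - gx) \<bullet> \<delta> \<ge> mt * n\<delta>\<^sup>2" using sm by (simp add: \<delta>_def)
  have t2: "(gp - gx) \<bullet> d \<ge> - (LT * n\<delta> * nd)"
  proof -
    have "(gp - gx) \<bullet> d \<ge> - (norm (gp - gx) * norm d)" by (rule ip_lower)
    moreover have "norm (gp - gx) * norm d \<le> LT * n\<delta> * nd"
      unfolding ndd by (rule mult_right_mono[OF lipg]) (simp add: nd_def)
    ultimately show ?thesis by linarith
  qed
  have t3: "(y - gF x) \<bullet> (p - xs) \<ge> - (\<epsilon> * (nd + n\<delta>))"
  proof -
    have "(y - gF x) \<bullet> (p - xs) \<ge> - (norm (y - gF x) * norm (p - xs))" by (rule ip_lower)
    moreover have "norm (y - gF x) * norm (p - xs) \<le> \<epsilon> * (nd + n\<delta>)" using ne by (simp add: \<epsilon>_def mult_left_mono)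
    ultimately show ?thesis by linarith
  qed
  have gFl: "norm (gF x - gF xs) \<le> Lg * nd" using gF_lip[OF x xs] by (simp add: nd_def xs_def)
  have t4: "(gF x - gF xs) \<bullet> d \<ge> \<mu> * nd\<^sup>2" using F_sc(2)[OF xs x] by (simp add: d_def nd_def xs_def)
  have t5: "(gF x - gF xs) \<bullet> \<delta> \<ge> - (Lg * nd * n\<delta>)"
  proof -
    have "(gF x - gF xs) \<bullet> \<delta> \<ge> - (norm (gF x - gF xs) * norm \<delta>)" by (rule ip_lower)
    moreover have "norm (gF x - gF xs) * norm \<delta> \<le> Lg * nd * n\<delta>"
      unfolding n\<delta>\<delta> by (rule mult_right_mono[OF gFl]) (simp add: n\<delta>_def)
    ultimately show ?thesis by linarith
  qed
  have "((gp - gx) + (y - gF x) + (gF x - gF xs)) \<bullet> (p - xs)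
      = (gp - gx) \<bullet> \<delta> + (gp - gx) \<bullet> d + (y - gF x) \<bullet> (p - xs) + (gF x - gF xs) \<bullet> d + (gF x - gF xs) \<bullet> \<delta>"
    unfolding pe by (simp add: inner_add_left inner_add_right algebra_simps)
  hence "mt * n\<delta>\<^sup>2 - LT * n\<delta> * nd - \<epsilon> * (nd + n\<delta>) + \<mu> * nd\<^sup>2 - Lg * nd * n\<delta> \<le> 0"
    using key t1 t2 t3 t4 t5 by linarith
  thus "\<mu> * nd\<^sup>2 + mt * n\<delta>\<^sup>2 \<le> (Lg + LT) * nd * n\<delta> + \<epsilon> * nd + \<epsilon> * n\<delta>"
    by (simp add: algebra_simps)
  show "a \<ge> \<mu> / 2 * nd\<^sup>2" using U_growth[OF x] by (simp add: a_def nd_def)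
  have Ux': "Uf x' \<le> (1 - \<alpha>) * Uf x + \<alpha> * Uf p"
    unfolding x'eq using convex_onD[OF U_convex, of \<alpha> x p] a x p by simp
  have Fp: "F p \<le> F xs + gF xs \<bullet> (p - xs) + Lg / 2 * (norm (p - xs))\<^sup>2" by (rule F_desc[OF xs p])
  have Gp: "G p - G xs \<le> - ((gp + (y - gx)) \<bullet> (p - xs))"
    using vs by (simp add: inner_diff_right)
  define v where "v = (gp - gx) + (y - gF x) + (gF x - gF xs)"
  have nv: "norm v \<le> LT * n\<delta> + \<epsilon> + Lg * nd"
  proof -
    have "norm v \<le> norm (gp - gx) + norm (y - gF x) + norm (gF x - gF xs)"
      unfolding v_def by (meson add_mono norm_triangle_ineq order_trans order_refl)
    thus ?thesis using lipg gFl by (simp add: \<epsilon>_def)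
  qed
  have "Uf p - Uf xs \<le> - (v \<bullet> (p - xs)) + Lg / 2 * (norm (p - xs))\<^sup>2"
  proof -
    have "gF xs \<bullet> (p - xs) - (gp + (y - gx)) \<bullet> (p - xs) = - (v \<bullet> (p - xs))"
      by (simp add: v_def inner_diff_left inner_add_left algebra_simps)
    thus ?thesis using Fp Gp by (simp add: Uf_def)
  qed
  also have "- (v \<bullet> (p - xs)) \<le> (LT * n\<delta> + \<epsilon> + Lg * nd) * (nd + n\<delta>)"
  proof -
    have "- (v \<bullet> (p - xs)) \<le> norm v * norm (p - xs)" using ip_lower[of v "p - xs"] by linarith
    also have "\<dots> \<le> (LT * n\<delta> + \<epsilon> + Lg * nd) * (nd + n\<delta>)" using nv ne order_trans[OF norm_ge_zero nv] by (intro mult_mono) auto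
    finally show ?thesis .
  qed
  also have "Lg / 2 * (norm (p - xs))\<^sup>2 \<le> Lg / 2 * (nd + n\<delta>)\<^sup>2"
    using ne Lg_pos by (intro mult_left_mono power_mono) auto
  finally have Up: "Uf p - Uf xs \<le> (LT * n\<delta> + \<epsilon> + Lg * nd) * (nd + n\<delta>) + Lg / 2 * (nd + n\<delta>)\<^sup>2" by simp
  have "\<alpha> * (Uf p - Uf xs) \<le> \<alpha> * ((LT * n\<delta> + \<epsilon> + Lg * nd) * (nd + n\<delta>) + Lg / 2 * (nd + n\<delta>)\<^sup>2)"
    using Up a by (intro mult_left_mono) auto
  thus "a' \<le> (1 - \<alpha>) * a + \<alpha> * ((LT * n\<delta> + \<epsilon> + Lg * nd) * (nd + n\<delta>) + Lg / 2 * (nd + n\<delta>)\<^sup>2)"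
    using Ux' unfolding a'_def a_def x'_def[symmetric] xs_def by (simp add: algebra_simps)
qed

end

lemma lyap:
  fixes \<theta> a1 b P \<rho>3 :: real
  assumes th: "0 < \<theta>" "\<theta> \<le> 1" and a1: "a1 \<ge> 0" and b: "b \<ge> 0" and P: "P \<ge> 0"
    and r3: "0 \<le> \<rho>3" "\<rho>3 < 1"
  shows "\<exists>\<alpha>max>0. \<forall>\<alpha>. 0 < \<alpha> \<and> \<alpha> \<le> \<alpha>max \<longrightarrow> (\<exists>A B r. A \<ge> 0 \<and> B \<ge> 0 \<and> 0 < r \<and> r < 1 \<and>
     (\<forall>u Ex Ey u' Ex' Ey' :: real. u \<ge> 0 \<and> Ex \<ge> 0 \<and> Ey \<ge> 0 \<and>
        u' \<le> (1 - \<theta> * \<alpha>) * u + \<alpha> * a1 * (Ey + Ex) \<and>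
        Ex' \<le> \<rho>3 * Ex + \<alpha>\<^sup>2 * b * (u + Ey + Ex) \<and>
        Ey' \<le> \<rho>3 * Ey + P * Ex + \<alpha>\<^sup>2 * b * (u + Ey + Ex)
      \<longrightarrow> u' + \<alpha> * A * Ey' + \<alpha> * B * Ex' \<le> r * (u + \<alpha> * A * Ey + \<alpha> * B * Ex)))"
proof -
  define g where "g = (1 - \<rho>3) / 2"
  have g: "g > 0" using r3 by (simp add: g_def)
  define A where "A = 2 * (a1 + 1) / g"
  define B where "B = 2 * (a1 + 1 + A * P) / g"
  have A: "A \<ge> 0" using a1 g by (simp add: A_def)
  have B: "B \<ge> 0" using a1 g A P by (simp add: B_def)
  have Ag: "A * g = 2 * (a1 + 1)" using g by (simp add: A_def)
  have Bg: "B * g = 2 * (a1 + 1 + A * P)" using g by (simp add: B_def)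
  define M where "M = min 1 (\<theta> / 2)"
  have M: "0 < M" "M \<le> 1" "M \<le> \<theta> / 2" using th by (auto simp: M_def)
  define \<alpha>max where "\<alpha>max = min 1 (M / (b * (A + B) + 1))"
  have bAB: "b * (A + B) \<ge> 0" using A B b by simp
  have amax: "\<alpha>max > 0" using M bAB by (simp add: \<alpha>max_def)
  show ?thesis
  proof (rule exI[of _ \<alpha>max], rule conjI[OF amax], intro allI impI)
    fix \<alpha> :: real assume a: "0 < \<alpha> \<and> \<alpha> \<le> \<alpha>max"
    hence a0: "0 < \<alpha>" and a1': "\<alpha> \<le> 1" and aM: "\<alpha> \<le> M / (b * (A + B) + 1)" by (auto simp: \<alpha>max_def)
    define \<epsilon> where "\<epsilon> = \<alpha>\<^sup>2 * b * (A + B)"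
    have e0: "\<epsilon> \<ge> 0" using bAB unfolding \<epsilon>_def by (simp add: mult.assoc)
    have eM: "\<epsilon> \<le> M"
    proof -
      have "\<alpha>\<^sup>2 \<le> \<alpha>" using a0 a1' by (simp add: power2_eq_square mult_le_cancel_left1)
      hence "\<epsilon> \<le> \<alpha> * (b * (A + B))" using bAB by (simp add: \<epsilon>_def mult_right_mono mult.assoc)
      also have "\<dots> \<le> M / (b * (A + B) + 1) * (b * (A + B))" using aM bAB by (intro mult_right_mono) auto
      also have "\<dots> \<le> M" using M bAB by (simp add: field_simps)
      finally show ?thesis .
    qed
    define \<rho>4 where "\<rho>4 = (1 + \<rho>3) / 2"
    define r where "r = max (1 - \<theta> * \<alpha> / 2) \<rho>4"
    have r4: "\<rho>4 \<le> r" "1 - \<theta> * \<alpha> / 2 \<le> r" by (auto simp: r_def)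
    have rpos: "0 < r" using r3 r4 by (simp add: \<rho>4_def) 
    have rlt: "r < 1" using r3 th a0 by (simp add: r_def \<rho>4_def)
    have gr: "\<rho>3 + g = \<rho>4" by (simp add: g_def \<rho>4_def field_simps)
    show "\<exists>A B r. A \<ge> 0 \<and> B \<ge> 0 \<and> 0 < r \<and> r < 1 \<and>
     (\<forall>u Ex Ey u' Ex' Ey' :: real. u \<ge> 0 \<and> Ex \<ge> 0 \<and> Ey \<ge> 0 \<and>
        u' \<le> (1 - \<theta> * \<alpha>) * u + \<alpha> * a1 * (Ey + Ex) \<and>
        Ex' \<le> \<rho>3 * Ex + \<alpha>\<^sup>2 * b * (u + Ey + Ex) \<and>
        Ey' \<le> \<rho>3 * Ey + P * Ex + \<alpha>\<^sup>2 * b * (u + Ey + Ex)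
      \<longrightarrow> u' + \<alpha> * A * Ey' + \<alpha> * B * Ex' \<le> r * (u + \<alpha> * A * Ey + \<alpha> * B * Ex))"
    proof (rule exI[of _ A], rule exI[of _ B], rule exI[of _ r], intro conjI)
      show "A \<ge> 0" by (fact A)
      show "B \<ge> 0" by (fact B)
      show "0 < r" by (fact rpos)
      show "r < 1" by (fact rlt)
      show "\<forall>u Ex Ey u' Ex' Ey' :: real. u \<ge> 0 \<and> Ex \<ge> 0 \<and> Ey \<ge> 0 \<and>
        u' \<le> (1 - \<theta> * \<alpha>) * u + \<alpha> * a1 * (Ey + Ex) \<and>
        Ex' \<le> \<rho>3 * Ex + \<alpha>\<^sup>2 * b * (u + Ey + Ex) \<and>
        Ey' \<le> \<rho>3 * Ey + P * Ex + \<alpha>\<^sup>2 * b * (u + Ey + Ex)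
      \<longrightarrow> u' + \<alpha> * A * Ey' + \<alpha> * B * Ex' \<le> r * (u + \<alpha> * A * Ey + \<alpha> * B * Ex)"
      proof (intro allI impI)
      fix u Ex Ey u' Ex' Ey' :: real
      assume H: "u \<ge> 0 \<and> Ex \<ge> 0 \<and> Ey \<ge> 0 \<and>
        u' \<le> (1 - \<theta> * \<alpha>) * u + \<alpha> * a1 * (Ey + Ex) \<and>
        Ex' \<le> \<rho>3 * Ex + \<alpha>\<^sup>2 * b * (u + Ey + Ex) \<and>
        Ey' \<le> \<rho>3 * Ey + P * Ex + \<alpha>\<^sup>2 * b * (u + Ey + Ex)"
      hence nn: "u \<ge> 0" "Ex \<ge> 0" "Ey \<ge> 0"
        and h1: "u' \<le> (1 - \<theta> * \<alpha>) * u + \<alpha> * a1 * (Ey + Ex)"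
        and h2: "Ex' \<le> \<rho>3 * Ex + \<alpha>\<^sup>2 * b * (u + Ey + Ex)"
        and h3: "Ey' \<le> \<rho>3 * Ey + P * Ex + \<alpha>\<^sup>2 * b * (u + Ey + Ex)" by auto
      have aA: "\<alpha> * A \<ge> 0" "\<alpha> * B \<ge> 0" using a0 A B by auto
      have "\<alpha> * A * Ey' \<le> \<alpha> * A * (\<rho>3 * Ey + P * Ex + \<alpha>\<^sup>2 * b * (u + Ey + Ex))"
        using h3 aA by (intro mult_left_mono) auto
      moreover have "\<alpha> * B * Ex' \<le> \<alpha> * B * (\<rho>3 * Ex + \<alpha>\<^sup>2 * b * (u + Ey + Ex))"
        using h2 aA by (intro mult_left_mono) auto
      ultimately have "u' + \<alpha> * A * Ey' + \<alpha> * B * Ex' \<le>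
          (1 - \<theta> * \<alpha>) * u + \<alpha> * a1 * (Ey + Ex)
          + \<alpha> * A * (\<rho>3 * Ey + P * Ex + \<alpha>\<^sup>2 * b * (u + Ey + Ex))
          + \<alpha> * B * (\<rho>3 * Ex + \<alpha>\<^sup>2 * b * (u + Ey + Ex))" using h1 by linarith
      also have "\<dots> = (1 - \<theta> * \<alpha> + \<alpha> * \<epsilon>) * u + \<alpha> * (a1 + A * \<rho>3 + \<epsilon>) * Ey
            + \<alpha> * (a1 + A * P + B * \<rho>3 + \<epsilon>) * Ex"
        by (simp add: \<epsilon>_def algebra_simps power2_eq_square)
      also have "\<dots> \<le> r * u + r * (\<alpha> * A) * Ey + r * (\<alpha> * B) * Ex"
      proof -
        have c1: "1 - \<theta> * \<alpha> + \<alpha> * \<epsilon> \<le> r"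
        proof -
          have "\<alpha> * \<epsilon> \<le> \<alpha> * (\<theta> / 2)" using eM M a0 by (intro mult_left_mono) auto
          thus ?thesis using r4 by (simp add: algebra_simps)
        qed
        have c2: "\<alpha> * (a1 + A * \<rho>3 + \<epsilon>) \<le> r * (\<alpha> * A)"
        proof -
          have "A * \<rho>4 = A * \<rho>3 + A * g" using gr by (metis distrib_left)
          hence "a1 + A * \<rho>3 + \<epsilon> \<le> A * \<rho>4" using Ag eM M(2) a1 by (smt (verit))
          also have "\<dots> \<le> A * r" using A r4 by (intro mult_left_mono) auto
          finally have "a1 + A * \<rho>3 + \<epsilon> \<le> A * r" .
          hence "\<alpha> * (a1 + A * \<rho>3 + \<epsilon>) \<le> \<alpha> * (A * r)" using a0 by (intro mult_left_mono) auto
          thus ?thesis by (simp add: algebra_simps)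
        qed
        have c3: "\<alpha> * (a1 + A * P + B * \<rho>3 + \<epsilon>) \<le> r * (\<alpha> * B)"
        proof -
          have "B * \<rho>4 = B * \<rho>3 + B * g" using gr by (metis distrib_left)
          moreover have "A * P \<ge> 0" using A P by simp
          ultimately have "a1 + A * P + B * \<rho>3 + \<epsilon> \<le> B * \<rho>4" using Bg eM M(2) a1 by (smt (verit))
          also have "\<dots> \<le> B * r" using B r4 by (intro mult_left_mono) auto
          finally have "a1 + A * P + B * \<rho>3 + \<epsilon> \<le> B * r" .
          hence "\<alpha> * (a1 + A * P + B * \<rho>3 + \<epsilon>) \<le> \<alpha> * (B * r)" using a0 by (intro mult_left_mono) auto
          thus ?thesis by (simp add: algebra_simps)
        qed
        show ?thesis using c1 c2 c3 nn by (intro add_mono mult_right_mono) auto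
      qed
      also have "\<dots> = r * (u + \<alpha> * A * Ey + \<alpha> * B * Ex)" by (simp add: algebra_simps)
      finally show "u' + \<alpha> * A * Ey' + \<alpha> * B * Ex' \<le> r * (u + \<alpha> * A * Ey + \<alpha> * B * Ex)" .
      qed
    qed
  qed
qed

lemma sum_mean_zero:
  fixes z :: "nat \<Rightarrow> 'a::real_vector"
  assumes "m \<ge> 1"
  shows "(\<Sum>j<m. z j - (1 / real m) *\<^sub>R (\<Sum>k<m. z k)) = 0"
proof -
  have "(\<Sum>j<m. z j - (1 / real m) *\<^sub>R (\<Sum>k<m. z k)) = (\<Sum>j<m. z j) - real m *\<^sub>R ((1 / real m) *\<^sub>R (\<Sum>k<m. z k))"
    by (simp add: sum_subtractf sum_constant_scaleR)
  also have "\<dots> = 0" using assms by simp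
  finally show ?thesis .
qed

lemma contraction_mean:
  fixes z :: "nat \<Rightarrow> 'a::real_inner"
  assumes m: "m \<ge> 1"
    and rho: "\<forall>v::nat \<Rightarrow> 'a. (\<Sum>j<m. v j) = 0 \<longrightarrow>
           (\<Sum>i<m. (norm (\<Sum>j<m. W i j *\<^sub>R v j))\<^sup>2) \<le> \<rho> * (\<Sum>j<m. (norm (v j))\<^sup>2)"
    and row: "\<And>i. i < m \<Longrightarrow> (\<Sum>j<m. W i j) = 1"
  shows "(\<Sum>i<m. (norm ((\<Sum>j<m. W i j *\<^sub>R z j) - (1 / real m) *\<^sub>R (\<Sum>k<m. z k)))\<^sup>2)
         \<le> \<rho> * (\<Sum>j<m. (norm (z j - (1 / real m) *\<^sub>R (\<Sum>k<m. z k)))\<^sup>2)"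
proof -
  define zb where "zb = (1 / real m) *\<^sub>R (\<Sum>k<m. z k)"
  define v where "v = (\<lambda>j. z j - zb)"
  have v0: "(\<Sum>j<m. v j) = 0" unfolding v_def zb_def by (rule sum_mean_zero[OF m])
  have eq: "(\<Sum>j<m. W i j *\<^sub>R z j) - zb = (\<Sum>j<m. W i j *\<^sub>R v j)" if "i < m" for i
  proof -
    have "(\<Sum>j<m. W i j *\<^sub>R v j) = (\<Sum>j<m. W i j *\<^sub>R z j) - (\<Sum>j<m. W i j) *\<^sub>R zb"
      by (simp add: v_def scaleR_diff_right sum_subtractf scaleR_sum_left)
    thus ?thesis using row[OF that] by simp
  qed
  have "(\<Sum>i<m. (norm ((\<Sum>j<m. W i j *\<^sub>R z j) - zb))\<^sup>2) = (\<Sum>i<m. (norm (\<Sum>j<m. W i j *\<^sub>R v j))\<^sup>2)"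
    using eq by (intro sum.cong refl) auto
  also have "\<dots> \<le> \<rho> * (\<Sum>j<m. (norm (v j))\<^sup>2)" using rho v0 by blast
  finally show ?thesis by (simp add: v_def zb_def)
qed

lemma sum_sq_eta:
  fixes a b :: "nat \<Rightarrow> 'a::real_inner"
  assumes "\<eta> > 0"
  shows "(\<Sum>j<m. (norm (a j + b j))\<^sup>2) \<le> (1 + \<eta>) * (\<Sum>j<m. (norm (a j))\<^sup>2) + (1 + 1 / \<eta>) * (\<Sum>j<m. (norm (b j))\<^sup>2)"
proof -
  have "(\<Sum>j<m. (norm (a j + b j))\<^sup>2) \<le> (\<Sum>j<m. (1 + \<eta>) * (norm (a j))\<^sup>2 + (1 + 1 / \<eta>) * (norm (b j))\<^sup>2)"
    by (intro sum_mono norm_add_sq_eta assms)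
  also have "\<dots> = (1 + \<eta>) * (\<Sum>j<m. (norm (a j))\<^sup>2) + (1 + 1 / \<eta>) * (\<Sum>j<m. (norm (b j))\<^sup>2)"
    by (simp add: sum.distrib sum_distrib_left)
  finally show ?thesis .
qed

lemma variance_id:
  fixes d :: "nat \<Rightarrow> 'a::real_inner"
  assumes m: "m \<ge> 1"
  shows "(\<Sum>j<m. (norm (d j - (1 / real m) *\<^sub>R (\<Sum>k<m. d k)))\<^sup>2)
       = (\<Sum>j<m. (norm (d j))\<^sup>2) - real m * (norm ((1 / real m) *\<^sub>R (\<Sum>k<m. d k)))\<^sup>2"
proof -
  define db where "db = (1 / real m) *\<^sub>R (\<Sum>k<m. d k)"
  have sd: "(\<Sum>k<m. d k) = real m *\<^sub>R db" using m by (simp add: db_def)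
  have "(\<Sum>j<m. (norm (d j - db))\<^sup>2) = (\<Sum>j<m. (norm (d j))\<^sup>2 - 2 * (db \<bullet> d j) + (norm db)\<^sup>2)"
    by (intro sum.cong refl) (simp add: power2_norm_eq_inner inner_diff_left inner_diff_right inner_commute)
  also have "\<dots> = (\<Sum>j<m. (norm (d j))\<^sup>2) - 2 * (db \<bullet> (\<Sum>j<m. d j)) + real m * (norm db)\<^sup>2"
    by (simp add: sum.distrib sum_subtractf inner_sum_right sum_distrib_left)
  also have "\<dots> = (\<Sum>j<m. (norm (d j))\<^sup>2) - real m * (norm db)\<^sup>2"
    unfolding sd by (simp add: power2_norm_eq_inner)
  finally show ?thesis by (simp add: db_def)
qed

lemma variance_le:
  fixes d :: "nat \<Rightarrow> 'a::real_inner"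
  assumes m: "m \<ge> 1"
  shows "(\<Sum>j<m. (norm (d j - (1 / real m) *\<^sub>R (\<Sum>k<m. d k)))\<^sup>2) \<le> (\<Sum>j<m. (norm (d j))\<^sup>2)"
    and "real m * (norm ((1 / real m) *\<^sub>R (\<Sum>k<m. d k)))\<^sup>2 \<le> (\<Sum>j<m. (norm (d j))\<^sup>2)"
proof -
  have "(\<Sum>j<m. (norm (d j - (1 / real m) *\<^sub>R (\<Sum>k<m. d k)))\<^sup>2) \<ge> 0" by (intro sum_nonneg) auto
  moreover have "real m * (norm ((1 / real m) *\<^sub>R (\<Sum>k<m. d k)))\<^sup>2 \<ge> 0" by simp
  ultimately show "(\<Sum>j<m. (norm (d j - (1 / real m) *\<^sub>R (\<Sum>k<m. d k)))\<^sup>2) \<le> (\<Sum>j<m. (norm (d j))\<^sup>2)"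
    and "real m * (norm ((1 / real m) *\<^sub>R (\<Sum>k<m. d k)))\<^sup>2 \<le> (\<Sum>j<m. (norm (d j))\<^sup>2)"
    using variance_id[OF m, of d] by linarith+
qed

lemma sum_sq_cs:
  fixes t :: "nat \<Rightarrow> real"
  shows "(\<Sum>i<m. t i)\<^sup>2 \<le> real m * (\<Sum>i<m. (t i)\<^sup>2)"
proof -
  have "(\<Sum>i<m. 1 * t i)\<^sup>2 \<le> (\<Sum>i<m. 1\<^sup>2) * (\<Sum>i<m. (t i)\<^sup>2)"
    by (rule Cauchy_Schwarz_ineq_sum)
  thus ?thesis by simp
qed

lemma three_sq: "(norm (a + b + c))\<^sup>2 \<le> 3 * ((norm a)\<^sup>2 + (norm b)\<^sup>2 + (norm (c::'a::real_inner))\<^sup>2)"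
proof -
  have "norm (a + b + c) \<le> norm a + norm b + norm c"
    by (meson add_mono norm_triangle_ineq order_trans order_refl)
  hence "(norm (a + b + c))\<^sup>2 \<le> (norm a + norm b + norm c)\<^sup>2" by (simp add: power_mono)
  also have "\<dots> \<le> 3 * ((norm a)\<^sup>2 + (norm b)\<^sup>2 + (norm c)\<^sup>2)"
  proof -
    have "0 \<le> (norm a - norm b)\<^sup>2 + (norm b - norm c)\<^sup>2 + (norm a - norm c)\<^sup>2" by simp
    thus ?thesis by (simp add: power2_eq_square algebra_simps)
  qed
  finally show ?thesis .
qed

context sonata_setting
begin

definition xb :: "(nat \<Rightarrow> nat \<Rightarrow> 'a) \<Rightarrow> nat \<Rightarrow> 'a" where
  "xb X \<nu> = (1 / real m) *\<^sub>R (\<Sum>j<m. X j \<nu>)"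
definition Ev :: "(nat \<Rightarrow> nat \<Rightarrow> 'a) \<Rightarrow> nat \<Rightarrow> real" where
  "Ev X \<nu> = (\<Sum>j<m. (norm (X j \<nu> - xb X \<nu>))\<^sup>2)"
definition uu :: "(nat \<Rightarrow> nat \<Rightarrow> 'a) \<Rightarrow> nat \<Rightarrow> real" where
  "uu X \<nu> = (\<Sum>j<m. (Uf (X j \<nu>) - Uf xstar))"

lemma Ev_nonneg: "Ev X \<nu> \<ge> 0" unfolding Ev_def by (intro sum_nonneg) auto

lemma W_row: "i < m \<Longrightarrow> (\<Sum>j<m. W i j) = 1" using W_facts(2)[OF W_ok] .
lemma W_col: "j < m \<Longrightarrow> (\<Sum>i<m. W i j) = 1" using W_facts(3)[OF W_ok] .
lemma W_nn: "i < m \<Longrightarrow> j < m \<Longrightarrow> W i j \<ge> 0" using W_facts(1)[OF W_ok] .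

lemma run_in_K:
  assumes run: "sonata_run m K W gf ft G \<alpha> x y xh" and a: "0 \<le> \<alpha>" "\<alpha> \<le> 1"
  shows "j < m \<Longrightarrow> x j \<nu> \<in> K" and "j < m \<Longrightarrow> xh j \<nu> \<in> K"
proof -
  have xhK: "xh j \<nu> \<in> K" if "j < m" for j \<nu>
    using run that unfolding sonata_run_def is_argmin_on_def by blast
  have "\<forall>j<m. x j \<nu> \<in> K"
  proof (induction \<nu>)
    case 0 thus ?case using run unfolding sonata_run_def by blast
  next
    case (Suc \<nu>)
    show ?case
    proof (intro allI impI)
      fix i assume i: "i < m"
      have eq: "x i (Suc \<nu>) = (\<Sum>j<m. W i j *\<^sub>R (x j \<nu> + \<alpha> *\<^sub>R (xh j \<nu> - x j \<nu>)))"
        using run i unfolding sonata_run_def by blast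
      have "(\<Sum>j\<in>{..<m}. W i j *\<^sub>R (x j \<nu> + \<alpha> *\<^sub>R (xh j \<nu> - x j \<nu>))) \<in> K"
      proof (rule convex_sum[OF _ K_convex])
        show "(\<Sum>j\<in>{..<m}. W i j) = 1" using W_row[OF i] .
        show "\<And>j. j \<in> {..<m} \<Longrightarrow> 0 \<le> W i j" using W_nn[OF i] by simp
        show "\<And>j. j \<in> {..<m} \<Longrightarrow> x j \<nu> + \<alpha> *\<^sub>R (xh j \<nu> - x j \<nu>) \<in> K"
          using seg_in[OF K_convex] Suc xhK a by simp
      qed simp
      thus "x i (Suc \<nu>) \<in> K" using eq by simp
    qed
  qed
  thus "j < m \<Longrightarrow> x j \<nu> \<in> K" by blast
  show "j < m \<Longrightarrow> xh j \<nu> \<in> K" by (rule xhK)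
qed

lemma run_ysum:
  assumes run: "sonata_run m K W gf ft G \<alpha> x y xh"
  shows "(\<Sum>j<m. y j \<nu>) = (\<Sum>j<m. gf j (x j \<nu>))"
proof (induction \<nu>)
  case 0 thus ?case using run unfolding sonata_run_def by simp
next
  case (Suc \<nu>)
  have "(\<Sum>i<m. y i (Suc \<nu>)) = (\<Sum>i<m. \<Sum>j<m. W i j *\<^sub>R (y j \<nu> + gf j (x j (Suc \<nu>)) - gf j (x j \<nu>)))"
    using run unfolding sonata_run_def by (intro sum.cong refl) auto
  also have "\<dots> = (\<Sum>j<m. y j \<nu> + gf j (x j (Suc \<nu>)) - gf j (x j \<nu>))" by (rule avg_W[OF W_ok])
  also have "\<dots> = (\<Sum>j<m. y j \<nu>) + (\<Sum>j<m. gf j (x j (Suc \<nu>))) - (\<Sum>j<m. gf j (x j \<nu>))"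
    by (simp add: sum.distrib sum_subtractf)
  finally show ?case using Suc by simp
qed

lemma xb_in_K:
  assumes "\<And>j. j < m \<Longrightarrow> X j \<nu> \<in> K"
  shows "xb X \<nu> \<in> K"
proof -
  have "(\<Sum>j\<in>{..<m}. (1 / real m) *\<^sub>R X j \<nu>) \<in> K"
    by (rule convex_sum[OF _ K_convex]) (use m_gt0 assms in auto)
  thus ?thesis by (simp add: xb_def scaleR_sum_right)
qed

end


locale sonata_run_ctx = sonata_setting +
  fixes \<alpha> :: real and x y xh :: "nat \<Rightarrow> nat \<Rightarrow> 'a"
  assumes run: "sonata_run m K W gf ft G \<alpha> x y xh" and a0: "0 < \<alpha>" and a1: "\<alpha> \<le> 1"
begin

lemma xK: "j < m \<Longrightarrow> x j \<nu> \<in> K" using run_in_K(1)[OF run] a0 a1 by simp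
lemma hK: "j < m \<Longrightarrow> xh j \<nu> \<in> K" using run_in_K(2)[OF run] a0 a1 by simp

definition zz where "zz j \<nu> = x j \<nu> + \<alpha> *\<^sub>R (xh j \<nu> - x j \<nu>)"

lemma zK: "j < m \<Longrightarrow> zz j \<nu> \<in> K"
  unfolding zz_def using seg_in[OF K_convex xK hK] a0 a1 by simp

lemma x_next: "i < m \<Longrightarrow> x i (Suc \<nu>) = (\<Sum>j<m. W i j *\<^sub>R zz j \<nu>)"
  using run unfolding sonata_run_def zz_def by blast

lemma y_next: "i < m \<Longrightarrow> y i (Suc \<nu>) = (\<Sum>j<m. W i j *\<^sub>R (y j \<nu> + gf j (x j (Suc \<nu>)) - gf j (x j \<nu>)))"
  using run unfolding sonata_run_def by blast

lemma xh_min: "j < m \<Longrightarrow> w \<in> K \<Longrightarrow>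
   ft j (xh j \<nu>) (x j \<nu>) + (y j \<nu> - gf j (x j \<nu>)) \<bullet> (xh j \<nu> - x j \<nu>) + G (xh j \<nu>)
   \<le> ft j w (x j \<nu>) + (y j \<nu> - gf j (x j \<nu>)) \<bullet> (w - x j \<nu>) + G w"
  using run unfolding sonata_run_def is_argmin_on_def by blast

lemma uu_nonneg: "uu x \<nu> \<ge> 0"
  unfolding uu_def using xstar_minU xK by (intro sum_nonneg) auto

lemma uu_step:
  "uu x (Suc \<nu>) \<le> (\<Sum>j<m. Uf (zz j \<nu>) - Uf xstar)"
proof -
  have Ui: "Uf (x i (Suc \<nu>)) - Uf xstar \<le> (\<Sum>j<m. W i j * (Uf (zz j \<nu>) - Uf xstar))" if i: "i < m" for i
  proof -
    have "Uf (\<Sum>j\<in>{..<m}. W i j *\<^sub>R zz j \<nu>) \<le> (\<Sum>j\<in>{..<m}. W i j * Uf (zz j \<nu>))"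
      by (rule convex_on_sum[OF _ _ U_convex]) (use m_pos W_row[OF i] W_nn[OF i] zK in auto)
    moreover have "(\<Sum>j<m. W i j * (Uf (zz j \<nu>) - Uf xstar)) = (\<Sum>j<m. W i j * Uf (zz j \<nu>)) - (\<Sum>j<m. W i j) * Uf xstar"
      by (simp add: right_diff_distrib sum_subtractf sum_distrib_right)
    ultimately show ?thesis using x_next[OF i] W_row[OF i] by simp
  qed
  have "uu x (Suc \<nu>) \<le> (\<Sum>i<m. \<Sum>j<m. W i j * (Uf (zz j \<nu>) - Uf xstar))"
    unfolding uu_def by (rule sum_mono) (use Ui in auto)
  also have "\<dots> = (\<Sum>j<m. \<Sum>i<m. W i j * (Uf (zz j \<nu>) - Uf xstar))" by (rule sum.swap)
  also have "\<dots> = (\<Sum>j<m. (\<Sum>i<m. W i j) * (Uf (zz j \<nu>) - Uf xstar))" by (simp add: sum_distrib_right)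
  also have "\<dots> = (\<Sum>j<m. Uf (zz j \<nu>) - Uf xstar)" using W_col by simp
  finally show ?thesis .
qed

end

context sonata_run_ctx
begin

definition dd where "dd j \<nu> = xh j \<nu> - x j \<nu>"
definition Dsum where "Dsum \<nu> = (\<Sum>j<m. (norm (dd j \<nu>))\<^sup>2)"
definition db where "db \<nu> = (1 / real m) *\<^sub>R (\<Sum>j<m. dd j \<nu>)"

lemma zz_dd: "zz j \<nu> = x j \<nu> + \<alpha> *\<^sub>R dd j \<nu>" by (simp add: zz_def dd_def)

lemma zb_eq: "(1 / real m) *\<^sub>R (\<Sum>j<m. zz j \<nu>) = xb x \<nu> + \<alpha> *\<^sub>R db \<nu>"
proof -
  have "(\<Sum>j<m. zz j \<nu>) = (\<Sum>j<m. x j \<nu>) + \<alpha> *\<^sub>R (\<Sum>j<m. dd j \<nu>)"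
    by (simp add: zz_dd sum.distrib scaleR_sum_right)
  thus ?thesis by (simp add: xb_def db_def scaleR_add_right)
qed

lemma xb_next: "xb x (Suc \<nu>) = (1 / real m) *\<^sub>R (\<Sum>j<m. zz j \<nu>)"
proof -
  have "(\<Sum>i<m. x i (Suc \<nu>)) = (\<Sum>i<m. \<Sum>j<m. W i j *\<^sub>R zz j \<nu>)"
    using x_next by (intro sum.cong refl) auto
  also have "\<dots> = (\<Sum>j<m. zz j \<nu>)" by (rule avg_W[OF W_ok])
  finally show ?thesis by (simp add: xb_def)
qed

lemma zdev: "zz j \<nu> - (1 / real m) *\<^sub>R (\<Sum>k<m. zz k \<nu>) = (x j \<nu> - xb x \<nu>) + \<alpha> *\<^sub>R (dd j \<nu> - db \<nu>)"
proof -
  have "zz j \<nu> - (1 / real m) *\<^sub>R (\<Sum>k<m. zz k \<nu>) = zz j \<nu> - (xb x \<nu> + \<alpha> *\<^sub>R db \<nu>)"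
    by (simp only: zb_eq)
  also have "\<dots> = (x j \<nu> - xb x \<nu>) + \<alpha> *\<^sub>R (dd j \<nu> - db \<nu>)"
    by (simp add: zz_dd algebra_simps)
  finally show ?thesis .
qed

lemma zdev_sum:
  assumes eta: "\<eta> > 0"
  shows "(\<Sum>j<m. (norm (zz j \<nu> - (1 / real m) *\<^sub>R (\<Sum>k<m. zz k \<nu>)))\<^sup>2)
         \<le> (1 + \<eta>) * Ev x \<nu> + (1 + 1 / \<eta>) * \<alpha>\<^sup>2 * Dsum \<nu>"
proof -
  have "(\<Sum>j<m. (norm (zz j \<nu> - (1 / real m) *\<^sub>R (\<Sum>k<m. zz k \<nu>)))\<^sup>2)
      = (\<Sum>j<m. (norm ((x j \<nu> - xb x \<nu>) + \<alpha> *\<^sub>R (dd j \<nu> - db \<nu>)))\<^sup>2)"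
    by (simp only: zdev)
  also have "\<dots> \<le> (1 + \<eta>) * (\<Sum>j<m. (norm (x j \<nu> - xb x \<nu>))\<^sup>2) + (1 + 1 / \<eta>) * (\<Sum>j<m. (norm (\<alpha> *\<^sub>R (dd j \<nu> - db \<nu>)))\<^sup>2)"
    by (rule sum_sq_eta[OF eta])
  also have "(\<Sum>j<m. (norm (\<alpha> *\<^sub>R (dd j \<nu> - db \<nu>)))\<^sup>2) = \<alpha>\<^sup>2 * (\<Sum>j<m. (norm (dd j \<nu> - db \<nu>))\<^sup>2)"
    by (simp add: power_mult_distrib sum_distrib_left)
  also have "(\<Sum>j<m. (norm (dd j \<nu> - db \<nu>))\<^sup>2) \<le> Dsum \<nu>"
    unfolding db_def Dsum_def by (rule variance_le(1)[OF m_pos])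
  finally show ?thesis
    using eta by (simp add: Ev_def mult_left_mono mult.assoc)
qed


lemma Ex_step:
  assumes rho: "\<forall>v::nat \<Rightarrow> 'a. (\<Sum>j<m. v j) = 0 \<longrightarrow>
           (\<Sum>i<m. (norm (\<Sum>j<m. W i j *\<^sub>R v j))\<^sup>2) \<le> \<rho> * (\<Sum>j<m. (norm (v j))\<^sup>2)"
    and r0: "0 \<le> \<rho>" and eta: "\<eta> > 0"
  shows "Ev x (Suc \<nu>) \<le> \<rho> * ((1 + \<eta>) * Ev x \<nu> + (1 + 1 / \<eta>) * \<alpha>\<^sup>2 * Dsum \<nu>)"
proof -
  have "Ev x (Suc \<nu>) = (\<Sum>i<m. (norm ((\<Sum>j<m. W i j *\<^sub>R zz j \<nu>) - (1 / real m) *\<^sub>R (\<Sum>k<m. zz k \<nu>)))\<^sup>2)"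
    unfolding Ev_def xb_next using x_next by (intro sum.cong refl) auto
  also have "\<dots> \<le> \<rho> * (\<Sum>j<m. (norm (zz j \<nu> - (1 / real m) *\<^sub>R (\<Sum>k<m. zz k \<nu>)))\<^sup>2)"
    by (rule contraction_mean[OF m_pos rho W_row])
  also have "\<dots> \<le> \<rho> * ((1 + \<eta>) * Ev x \<nu> + (1 + 1 / \<eta>) * \<alpha>\<^sup>2 * Dsum \<nu>)"
    using zdev_sum[OF eta] r0 by (intro mult_left_mono) auto
  finally show ?thesis .
qed

lemma dx_sum:
  assumes rho: "\<forall>v::nat \<Rightarrow> 'a. (\<Sum>j<m. v j) = 0 \<longrightarrow>
           (\<Sum>i<m. (norm (\<Sum>j<m. W i j *\<^sub>R v j))\<^sup>2) \<le> \<rho> * (\<Sum>j<m. (norm (v j))\<^sup>2)"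
    and r0: "0 \<le> \<rho>" "\<rho> \<le> 1"
  shows "(\<Sum>j<m. (norm (x j (Suc \<nu>) - x j \<nu>))\<^sup>2) \<le> 9 * Ev x \<nu> + 9 * \<alpha>\<^sup>2 * Dsum \<nu>"
proof -
  define zb where "zb = (1 / real m) *\<^sub>R (\<Sum>k<m. zz k \<nu>)"
  have zb: "zb = xb x \<nu> + \<alpha> *\<^sub>R db \<nu>" using zb_eq by (simp add: zb_def)
  have split: "x j (Suc \<nu>) - x j \<nu> = (x j (Suc \<nu>) - zb) + (zb - xb x \<nu>) + (xb x \<nu> - x j \<nu>)" for j
    by simp
  have "(\<Sum>j<m. (norm (x j (Suc \<nu>) - x j \<nu>))\<^sup>2)
      \<le> (\<Sum>j<m. 3 * ((norm (x j (Suc \<nu>) - zb))\<^sup>2 + (norm (zb - xb x \<nu>))\<^sup>2 + (norm (xb x \<nu> - x j \<nu>))\<^sup>2))"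
    by (intro sum_mono) (simp only: split three_sq)
  also have "\<dots> = 3 * (Ev x (Suc \<nu>) + real m * (norm (zb - xb x \<nu>))\<^sup>2 + Ev x \<nu>)"
    by (simp add: sum.distrib sum_distrib_left Ev_def xb_next zb_def[symmetric] norm_minus_commute)
  also have "Ev x (Suc \<nu>) \<le> 2 * Ev x \<nu> + 2 * \<alpha>\<^sup>2 * Dsum \<nu>"
  proof -
    have "Ev x (Suc \<nu>) \<le> \<rho> * ((1 + 1) * Ev x \<nu> + (1 + 1 / 1) * \<alpha>\<^sup>2 * Dsum \<nu>)"
      by (rule Ex_step[OF rho r0(1)]) simp
    also have "\<dots> \<le> 1 * ((1 + 1) * Ev x \<nu> + (1 + 1 / 1) * \<alpha>\<^sup>2 * Dsum \<nu>)"
    proof (rule mult_right_mono[OF r0(2)])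
      have "Dsum \<nu> \<ge> 0" unfolding Dsum_def by (intro sum_nonneg) auto
      thus "0 \<le> (1 + 1) * Ev x \<nu> + (1 + 1 / 1) * \<alpha>\<^sup>2 * Dsum \<nu>" using Ev_nonneg[of x \<nu>] by simp
    qed
    finally show ?thesis by simp
  qed
  also have "real m * (norm (zb - xb x \<nu>))\<^sup>2 \<le> \<alpha>\<^sup>2 * Dsum \<nu>"
  proof -
    have "real m * (norm (zb - xb x \<nu>))\<^sup>2 = \<alpha>\<^sup>2 * (real m * (norm (db \<nu>))\<^sup>2)"
      by (simp add: zb power_mult_distrib)
    also have "real m * (norm (db \<nu>))\<^sup>2 \<le> Dsum \<nu>"
      unfolding db_def Dsum_def by (rule variance_le(2)[OF m_pos])
    finally show ?thesis by (simp add: mult_left_mono)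
  qed
  finally show ?thesis by (simp add: mult_ac)
qed


lemma Ey_step:
  assumes rho: "\<forall>v::nat \<Rightarrow> 'a. (\<Sum>j<m. v j) = 0 \<longrightarrow>
           (\<Sum>i<m. (norm (\<Sum>j<m. W i j *\<^sub>R v j))\<^sup>2) \<le> \<rho> * (\<Sum>j<m. (norm (v j))\<^sup>2)"
    and r0: "0 \<le> \<rho>" "\<rho> \<le> 1" and eta: "\<eta> > 0"
  shows "Ev y (Suc \<nu>) \<le> \<rho> * ((1 + \<eta>) * Ev y \<nu> + (1 + 1 / \<eta>) * (Lg\<^sup>2 * (9 * Ev x \<nu> + 9 * \<alpha>\<^sup>2 * Dsum \<nu>)))"
proof -
  define \<Delta> where "\<Delta> j = gf j (x j (Suc \<nu>)) - gf j (x j \<nu>)" for j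
  define w where "w j = y j \<nu> + \<Delta> j" for j
  define \<Delta>b where "\<Delta>b = (1 / real m) *\<^sub>R (\<Sum>j<m. \<Delta> j)"
  have ynext: "y i (Suc \<nu>) = (\<Sum>j<m. W i j *\<^sub>R w j)" if "i < m" for i
    using y_next[OF that] by (simp add: w_def \<Delta>_def algebra_simps)
  have wb: "(1 / real m) *\<^sub>R (\<Sum>j<m. w j) = xb y \<nu> + \<Delta>b"
    by (simp add: w_def \<Delta>b_def xb_def sum.distrib scaleR_add_right)
  have ybn: "xb y (Suc \<nu>) = (1 / real m) *\<^sub>R (\<Sum>j<m. w j)"
  proof -
    have "(\<Sum>i<m. y i (Suc \<nu>)) = (\<Sum>i<m. \<Sum>j<m. W i j *\<^sub>R w j)"
      using ynext by (intro sum.cong refl) auto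
    also have "\<dots> = (\<Sum>j<m. w j)" by (rule avg_W[OF W_ok])
    finally show ?thesis by (simp add: xb_def)
  qed
  have wdev: "w j - (1 / real m) *\<^sub>R (\<Sum>k<m. w k) = (y j \<nu> - xb y \<nu>) + (\<Delta> j - \<Delta>b)" for j
  proof -
    have "w j - (1 / real m) *\<^sub>R (\<Sum>k<m. w k) = w j - (xb y \<nu> + \<Delta>b)" by (simp only: wb)
    thus ?thesis by (simp add: w_def algebra_simps)
  qed
  have "Ev y (Suc \<nu>) = (\<Sum>i<m. (norm ((\<Sum>j<m. W i j *\<^sub>R w j) - (1 / real m) *\<^sub>R (\<Sum>k<m. w k)))\<^sup>2)"
    unfolding Ev_def ybn using ynext by (intro sum.cong refl) auto
  also have "\<dots> \<le> \<rho> * (\<Sum>j<m. (norm (w j - (1 / real m) *\<^sub>R (\<Sum>k<m. w k)))\<^sup>2)"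
    by (rule contraction_mean[OF m_pos rho W_row])
  also have "(\<Sum>j<m. (norm (w j - (1 / real m) *\<^sub>R (\<Sum>k<m. w k)))\<^sup>2)
      \<le> (1 + \<eta>) * Ev y \<nu> + (1 + 1 / \<eta>) * (Lg\<^sup>2 * (9 * Ev x \<nu> + 9 * \<alpha>\<^sup>2 * Dsum \<nu>))"
  proof -
    have "(\<Sum>j<m. (norm (w j - (1 / real m) *\<^sub>R (\<Sum>k<m. w k)))\<^sup>2)
        = (\<Sum>j<m. (norm ((y j \<nu> - xb y \<nu>) + (\<Delta> j - \<Delta>b)))\<^sup>2)" by (simp only: wdev)
    also have "\<dots> \<le> (1 + \<eta>) * (\<Sum>j<m. (norm (y j \<nu> - xb y \<nu>))\<^sup>2) + (1 + 1 / \<eta>) * (\<Sum>j<m. (norm (\<Delta> j - \<Delta>b))\<^sup>2)"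
      by (rule sum_sq_eta[OF eta])
    also have "(\<Sum>j<m. (norm (\<Delta> j - \<Delta>b))\<^sup>2) \<le> (\<Sum>j<m. (norm (\<Delta> j))\<^sup>2)"
      unfolding \<Delta>b_def by (rule variance_le(1)[OF m_pos])
    also have "(\<Sum>j<m. (norm (\<Delta> j))\<^sup>2) \<le> (\<Sum>j<m. Lg\<^sup>2 * (norm (x j (Suc \<nu>) - x j \<nu>))\<^sup>2)"
    proof (rule sum_mono)
      fix j assume "j \<in> {..<m}"
      hence j: "j < m" by simp
      have "norm (\<Delta> j) \<le> Lg * norm (x j (Suc \<nu>) - x j \<nu>)"
        unfolding \<Delta>_def by (rule gf_lip[OF j xK[OF j] xK[OF j]])
      hence "(norm (\<Delta> j))\<^sup>2 \<le> (Lg * norm (x j (Suc \<nu>) - x j \<nu>))\<^sup>2" by (intro power_mono) auto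
      thus "(norm (\<Delta> j))\<^sup>2 \<le> Lg\<^sup>2 * (norm (x j (Suc \<nu>) - x j \<nu>))\<^sup>2" by (simp add: power_mult_distrib)
    qed
    also have "\<dots> = Lg\<^sup>2 * (\<Sum>j<m. (norm (x j (Suc \<nu>) - x j \<nu>))\<^sup>2)" by (simp add: sum_distrib_left)
    also have "\<dots> \<le> Lg\<^sup>2 * (9 * Ev x \<nu> + 9 * \<alpha>\<^sup>2 * Dsum \<nu>)"
      by (intro mult_left_mono dx_sum[OF rho r0]) auto
    finally show ?thesis using eta by (simp add: Ev_def mult_left_mono)
  qed
  hence "\<rho> * (\<Sum>j<m. (norm (w j - (1 / real m) *\<^sub>R (\<Sum>k<m. w k)))\<^sup>2)
      \<le> \<rho> * ((1 + \<eta>) * Ev y \<nu> + (1 + 1 / \<eta>) * (Lg\<^sup>2 * (9 * Ev x \<nu> + 9 * \<alpha>\<^sup>2 * Dsum \<nu>)))"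
    using r0 by (intro mult_left_mono) auto
  finally show ?thesis .
qed

lemma S_bound:
  "(\<Sum>j<m. (norm (y j \<nu> - gF (x j \<nu>)))\<^sup>2) \<le> 3 * Ev y \<nu> + 6 * Lg\<^sup>2 * Ev x \<nu>"
proof -
  define Xb where "Xb = xb x \<nu>"
  define Yb where "Yb = xb y \<nu>"
  have XbK: "Xb \<in> K" unfolding Xb_def by (rule xb_in_K) (rule xK)
  define t where "t i = norm (x i \<nu> - Xb)" for i
  have Yb_eq: "Yb = (1 / real m) *\<^sub>R (\<Sum>i<m. gf i (x i \<nu>))"
    unfolding Yb_def xb_def using run_ysum[OF run] by simp
  have YgF: "Yb - gF Xb = (1 / real m) *\<^sub>R (\<Sum>i<m. gf i (x i \<nu>) - gf i Xb)"
    by (simp add: Yb_eq gF_def sum_subtractf scaleR_diff_right)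
  have nYg: "norm (Yb - gF Xb) \<le> Lg * ((1 / real m) * (\<Sum>i<m. t i))"
  proof -
    have "norm (Yb - gF Xb) = (1 / real m) * norm (\<Sum>i<m. gf i (x i \<nu>) - gf i Xb)"
      using m_gt0 by (simp add: YgF)
    also have "\<dots> \<le> (1 / real m) * (\<Sum>i<m. norm (gf i (x i \<nu>) - gf i Xb))"
      using m_gt0 by (intro mult_left_mono norm_sum) auto
    also have "\<dots> \<le> (1 / real m) * (\<Sum>i<m. Lg * t i)"
      using m_gt0 gf_lip xK XbK by (intro mult_left_mono sum_mono) (auto simp: t_def)
    also have "\<dots> = Lg * ((1 / real m) * (\<Sum>i<m. t i))" by (simp add: sum_distrib_left)
    finally show ?thesis .
  qed
  have msq: "real m * ((1 / real m) * (\<Sum>i<m. t i))\<^sup>2 \<le> Ev x \<nu>"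
  proof -
    have "real m * ((1 / real m) * (\<Sum>i<m. t i))\<^sup>2 = (\<Sum>i<m. t i)\<^sup>2 / real m"
      using m_gt0 by (simp add: power2_eq_square field_simps)
    also have "\<dots> \<le> (real m * (\<Sum>i<m. (t i)\<^sup>2)) / real m"
      using m_gt0 sum_sq_cs[of t m] by (intro divide_right_mono) auto
    also have "\<dots> = Ev x \<nu>" using m_gt0 by (simp add: Ev_def t_def Xb_def)
    finally show ?thesis .
  qed
  have each: "(norm (y j \<nu> - gF (x j \<nu>)))\<^sup>2 \<le> 3 * ((norm (y j \<nu> - Yb))\<^sup>2 + Lg\<^sup>2 * ((1 / real m) * (\<Sum>i<m. t i))\<^sup>2 + Lg\<^sup>2 * (norm (x j \<nu> - Xb))\<^sup>2)"
    if j: "j < m" for j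
  proof -
    have "y j \<nu> - gF (x j \<nu>) = (y j \<nu> - Yb) + (Yb - gF Xb) + (gF Xb - gF (x j \<nu>))" by simp
    hence "(norm (y j \<nu> - gF (x j \<nu>)))\<^sup>2 \<le> 3 * ((norm (y j \<nu> - Yb))\<^sup>2 + (norm (Yb - gF Xb))\<^sup>2 + (norm (gF Xb - gF (x j \<nu>)))\<^sup>2)"
      by (metis three_sq)
    also have "(norm (Yb - gF Xb))\<^sup>2 \<le> Lg\<^sup>2 * ((1 / real m) * (\<Sum>i<m. t i))\<^sup>2"
      using nYg by (metis norm_ge_zero power_mono power_mult_distrib)
    also have "(norm (gF Xb - gF (x j \<nu>)))\<^sup>2 \<le> Lg\<^sup>2 * (norm (x j \<nu> - Xb))\<^sup>2"
    proof -
      have "norm (gF Xb - gF (x j \<nu>)) \<le> Lg * norm (Xb - x j \<nu>)" by (rule gF_lip[OF XbK xK[OF j]])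
      hence "(norm (gF Xb - gF (x j \<nu>)))\<^sup>2 \<le> (Lg * norm (Xb - x j \<nu>))\<^sup>2" by (intro power_mono) auto
      thus ?thesis by (simp add: power_mult_distrib norm_minus_commute)
    qed
    finally show ?thesis by simp
  qed
  have "(\<Sum>j<m. (norm (y j \<nu> - gF (x j \<nu>)))\<^sup>2)
      \<le> (\<Sum>j<m. 3 * ((norm (y j \<nu> - Yb))\<^sup>2 + Lg\<^sup>2 * ((1 / real m) * (\<Sum>i<m. t i))\<^sup>2 + Lg\<^sup>2 * (norm (x j \<nu> - Xb))\<^sup>2))"
    using each by (intro sum_mono) auto
  also have "\<dots> = 3 * Ev y \<nu> + 3 * Lg\<^sup>2 * (real m * ((1 / real m) * (\<Sum>i<m. t i))\<^sup>2) + 3 * Lg\<^sup>2 * Ev x \<nu>"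
    by (simp add: sum.distrib sum_distrib_left Ev_def Xb_def Yb_def algebra_simps)
  also have "\<dots> \<le> 3 * Ev y \<nu> + 3 * Lg\<^sup>2 * Ev x \<nu> + 3 * Lg\<^sup>2 * Ev x \<nu>"
  proof -
    have "Lg\<^sup>2 * (real m * ((1 / real m) * (\<Sum>i<m. t i))\<^sup>2) \<le> Lg\<^sup>2 * Ev x \<nu>"
      by (rule mult_left_mono[OF msq]) simp
    thus ?thesis by linarith
  qed
  finally show ?thesis by (simp add: mult_ac)
qed

end

context sonata_run_ctx
begin

lemma agent_ineq:
  assumes aL: "\<alpha> * Lg \<le> mt / 2"
    and AB: "\<forall>\<alpha> a a' nd n\<delta> \<epsilon>. 0 < \<alpha> \<and> \<alpha> \<le> 1 \<and> \<alpha> * Lg \<le> mt / 2 \<and> nd \<ge> 0 \<and> n\<delta> \<ge> 0 \<and> \<epsilon> \<ge> 0 \<and>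
       a' \<le> a - \<alpha> * mt * n\<delta>\<^sup>2 + \<alpha> * \<epsilon> * n\<delta> + Lg * \<alpha>\<^sup>2 / 2 * n\<delta>\<^sup>2 \<and>
       \<mu> * nd\<^sup>2 + mt * n\<delta>\<^sup>2 \<le> (Lg + LT) * nd * n\<delta> + \<epsilon> * nd + \<epsilon> * n\<delta> \<and>
       a \<ge> \<mu> / 2 * nd\<^sup>2 \<and>
       a' \<le> (1 - \<alpha>) * a + \<alpha> * ((LT * n\<delta> + \<epsilon> + Lg * nd) * (nd + n\<delta>) + Lg / 2 * (nd + n\<delta>)\<^sup>2)
     \<longrightarrow> a' \<le> (1 - \<theta> * \<alpha>) * a + \<alpha> * C4 * \<epsilon>\<^sup>2 \<and> n\<delta>\<^sup>2 \<le> C5 * (a + \<epsilon>\<^sup>2)"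
    and j: "j < m"
  shows "Uf (zz j \<nu>) - Uf xstar \<le> (1 - \<theta> * \<alpha>) * (Uf (x j \<nu>) - Uf xstar) + \<alpha> * C4 * (norm (y j \<nu> - gF (x j \<nu>)))\<^sup>2
         \<and> (norm (dd j \<nu>))\<^sup>2 \<le> C5 * ((Uf (x j \<nu>) - Uf xstar) + (norm (y j \<nu> - gF (x j \<nu>)))\<^sup>2)"
proof -
  note A = agentA[OF j xK[OF j, of \<nu>] hK[OF j, of \<nu>] xh_min[OF j, of _ \<nu>] a0 a1]
  have zz: "x j \<nu> + \<alpha> *\<^sub>R (xh j \<nu> - x j \<nu>) = zz j \<nu>" by (simp add: zz_def)
  have dd: "xh j \<nu> - x j \<nu> = dd j \<nu>" by (simp add: dd_def)
  let ?a = "Uf (x j \<nu>) - Uf xstar" and ?a' = "Uf (zz j \<nu>) - Uf xstar" and ?nd = "norm (x j \<nu> - xstar)"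
    and ?nh = "norm (dd j \<nu>)" and ?e = "norm (y j \<nu> - gF (x j \<nu>))"
  have imp: "0 < \<alpha> \<and> \<alpha> \<le> 1 \<and> \<alpha> * Lg \<le> mt / 2 \<and> ?nd \<ge> 0 \<and> ?nh \<ge> 0 \<and> ?e \<ge> 0 \<and>
       ?a' \<le> ?a - \<alpha> * mt * ?nh\<^sup>2 + \<alpha> * ?e * ?nh + Lg * \<alpha>\<^sup>2 / 2 * ?nh\<^sup>2 \<and>
       \<mu> * ?nd\<^sup>2 + mt * ?nh\<^sup>2 \<le> (Lg + LT) * ?nd * ?nh + ?e * ?nd + ?e * ?nh \<and>
       ?a \<ge> \<mu> / 2 * ?nd\<^sup>2 \<and>
       ?a' \<le> (1 - \<alpha>) * ?a + \<alpha> * ((LT * ?nh + ?e + Lg * ?nd) * (?nd + ?nh) + Lg / 2 * (?nd + ?nh)\<^sup>2)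
     \<longrightarrow> ?a' \<le> (1 - \<theta> * \<alpha>) * ?a + \<alpha> * C4 * ?e\<^sup>2 \<and> ?nh\<^sup>2 \<le> C5 * (?a + ?e\<^sup>2)"
    using AB by blast
  have hyp: "0 < \<alpha> \<and> \<alpha> \<le> 1 \<and> \<alpha> * Lg \<le> mt / 2 \<and> ?nd \<ge> 0 \<and> ?nh \<ge> 0 \<and> ?e \<ge> 0 \<and>
       ?a' \<le> ?a - \<alpha> * mt * ?nh\<^sup>2 + \<alpha> * ?e * ?nh + Lg * \<alpha>\<^sup>2 / 2 * ?nh\<^sup>2 \<and>
       \<mu> * ?nd\<^sup>2 + mt * ?nh\<^sup>2 \<le> (Lg + LT) * ?nd * ?nh + ?e * ?nd + ?e * ?nh \<and>
       ?a \<ge> \<mu> / 2 * ?nd\<^sup>2 \<and>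
       ?a' \<le> (1 - \<alpha>) * ?a + \<alpha> * ((LT * ?nh + ?e + Lg * ?nd) * (?nd + ?nh) + Lg / 2 * (?nd + ?nh)\<^sup>2)"
    using A a0 a1 aL unfolding dd zz_dd[symmetric] by (intro conjI) auto
  show ?thesis using imp hyp by blast
qed

definition Ssum where "Ssum \<nu> = (\<Sum>j<m. (norm (y j \<nu> - gF (x j \<nu>)))\<^sup>2)"

lemma u_D_step:
  assumes aL: "\<alpha> * Lg \<le> mt / 2"
    and AB: "\<forall>\<alpha> a a' nd n\<delta> \<epsilon>. 0 < \<alpha> \<and> \<alpha> \<le> 1 \<and> \<alpha> * Lg \<le> mt / 2 \<and> nd \<ge> 0 \<and> n\<delta> \<ge> 0 \<and> \<epsilon> \<ge> 0 \<and>
       a' \<le> a - \<alpha> * mt * n\<delta>\<^sup>2 + \<alpha> * \<epsilon> * n\<delta> + Lg * \<alpha>\<^sup>2 / 2 * n\<delta>\<^sup>2 \<and>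
       \<mu> * nd\<^sup>2 + mt * n\<delta>\<^sup>2 \<le> (Lg + LT) * nd * n\<delta> + \<epsilon> * nd + \<epsilon> * n\<delta> \<and>
       a \<ge> \<mu> / 2 * nd\<^sup>2 \<and>
       a' \<le> (1 - \<alpha>) * a + \<alpha> * ((LT * n\<delta> + \<epsilon> + Lg * nd) * (nd + n\<delta>) + Lg / 2 * (nd + n\<delta>)\<^sup>2)
     \<longrightarrow> a' \<le> (1 - \<theta> * \<alpha>) * a + \<alpha> * C4 * \<epsilon>\<^sup>2 \<and> n\<delta>\<^sup>2 \<le> C5 * (a + \<epsilon>\<^sup>2)"
  shows "uu x (Suc \<nu>) \<le> (1 - \<theta> * \<alpha>) * uu x \<nu> + \<alpha> * C4 * Ssum \<nu>"
    and "Dsum \<nu> \<le> C5 * (uu x \<nu> + Ssum \<nu>)"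
proof -
  note ag = agent_ineq[OF aL AB]
  have "uu x (Suc \<nu>) \<le> (\<Sum>j<m. Uf (zz j \<nu>) - Uf xstar)" by (rule uu_step)
  also have "\<dots> \<le> (\<Sum>j<m. (1 - \<theta> * \<alpha>) * (Uf (x j \<nu>) - Uf xstar) + \<alpha> * C4 * (norm (y j \<nu> - gF (x j \<nu>)))\<^sup>2)"
    using ag by (intro sum_mono) auto
  also have "\<dots> = (1 - \<theta> * \<alpha>) * uu x \<nu> + \<alpha> * C4 * Ssum \<nu>"
    by (simp add: sum.distrib sum_distrib_left uu_def Ssum_def)
  finally show "uu x (Suc \<nu>) \<le> (1 - \<theta> * \<alpha>) * uu x \<nu> + \<alpha> * C4 * Ssum \<nu>" .
  have "Dsum \<nu> \<le> (\<Sum>j<m. C5 * ((Uf (x j \<nu>) - Uf xstar) + (norm (y j \<nu> - gF (x j \<nu>)))\<^sup>2))"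
    unfolding Dsum_def using ag by (intro sum_mono) auto
  also have "\<dots> = C5 * (uu x \<nu> + Ssum \<nu>)"
    by (simp only: uu_def Ssum_def sum_distrib_left[symmetric] sum.distrib)
  finally show "Dsum \<nu> \<le> C5 * (uu x \<nu> + Ssum \<nu>)" .
qed

end

context sonata_setting
begin

lemma main_conv:
  "\<exists>\<alpha>bar. 0 < \<alpha>bar \<and> \<alpha>bar \<le> 1 \<and>
     (\<forall>\<alpha> x y xh. 0 < \<alpha> \<and> \<alpha> < \<alpha>bar \<and> sonata_run m K W gf ft G \<alpha> x y xh \<longrightarrow>
        (\<forall>i<m. \<exists>z C. 0 < z \<and> z < 1 \<and> (\<forall>\<nu>. \<bar>Uf (x i \<nu>) - Uf xstar\<bar> \<le> C * z ^ \<nu>)))"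
proof -
  obtain \<rho> where \<rho>: "0 < \<rho>" "\<rho> < 1"
    and rho: "\<forall>v::nat \<Rightarrow> 'a. (\<Sum>j<m. v j) = 0 \<longrightarrow>
           (\<Sum>i<m. (norm (\<Sum>j<m. W i j *\<^sub>R v j))\<^sup>2) \<le> \<rho> * (\<Sum>j<m. (norm (v j))\<^sup>2)"
    using consensus_contraction0[OF m_pos graph W_ok] by blast
  have Lg0: "Lg \<ge> 0" using Lg_pos by simp
  obtain \<theta> C4 C5 where th: "0 < \<theta>" "\<theta> \<le> 1" "C4 \<ge> 0" "C5 \<ge> 0"
    and AB: "\<forall>\<alpha> a a' nd n\<delta> \<epsilon>. 0 < \<alpha> \<and> \<alpha> \<le> 1 \<and> \<alpha> * Lg \<le> mt / 2 \<and> nd \<ge> 0 \<and> n\<delta> \<ge> 0 \<and> \<epsilon> \<ge> 0 \<and>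
       a' \<le> a - \<alpha> * mt * n\<delta>\<^sup>2 + \<alpha> * \<epsilon> * n\<delta> + Lg * \<alpha>\<^sup>2 / 2 * n\<delta>\<^sup>2 \<and>
       \<mu> * nd\<^sup>2 + mt * n\<delta>\<^sup>2 \<le> (Lg + LT) * nd * n\<delta> + \<epsilon> * nd + \<epsilon> * n\<delta> \<and>
       a \<ge> \<mu> / 2 * nd\<^sup>2 \<and>
       a' \<le> (1 - \<alpha>) * a + \<alpha> * ((LT * n\<delta> + \<epsilon> + Lg * nd) * (nd + n\<delta>) + Lg / 2 * (nd + n\<delta>)\<^sup>2)
     \<longrightarrow> a' \<le> (1 - \<theta> * \<alpha>) * a + \<alpha> * C4 * \<epsilon>\<^sup>2 \<and> n\<delta>\<^sup>2 \<le> C5 * (a + \<epsilon>\<^sup>2)"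
    using agentB[OF mt_pos mu_pos Lg0 LT_nonneg] by blast
  define \<eta> where "\<eta> = (1 - \<rho>) / (2 * \<rho>)"
  have eta: "\<eta> > 0" using \<rho> by (simp add: \<eta>_def)
  define \<rho>3 where "\<rho>3 = \<rho> * (1 + \<eta>)"
  have r3eq: "\<rho>3 = (1 + \<rho>) / 2" using \<rho> by (simp add: \<rho>3_def \<eta>_def field_simps)
  have r3: "0 \<le> \<rho>3" "\<rho>3 < 1" using \<rho> r3eq by auto
  define Cd where "Cd = \<rho> * (1 + 1 / \<eta>)"
  have Cd: "Cd \<ge> 0" using \<rho> eta by (simp add: Cd_def)
  define P2 where "P2 = 3 + 6 * Lg\<^sup>2"
  have P2: "P2 \<ge> 3" "P2 \<ge> 6 * Lg\<^sup>2" by (auto simp: P2_def)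
  define a1 where "a1 = C4 * P2"
  define b where "b = Cd * C5 * (1 + P2) * (1 + 9 * Lg\<^sup>2)"
  define PP where "PP = 9 * Cd * Lg\<^sup>2"
  have a1: "a1 \<ge> 0" using th P2 by (simp add: a1_def)
  have b: "b \<ge> 0" using th Cd P2 by (simp add: b_def)
  have PP: "PP \<ge> 0" using Cd by (simp add: PP_def)
  obtain \<alpha>max where am: "\<alpha>max > 0"
    and LY: "\<forall>\<alpha>. 0 < \<alpha> \<and> \<alpha> \<le> \<alpha>max \<longrightarrow> (\<exists>A B r. A \<ge> 0 \<and> B \<ge> 0 \<and> 0 < r \<and> r < 1 \<and>
     (\<forall>u Ex Ey u' Ex' Ey' :: real. u \<ge> 0 \<and> Ex \<ge> 0 \<and> Ey \<ge> 0 \<and>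
        u' \<le> (1 - \<theta> * \<alpha>) * u + \<alpha> * a1 * (Ey + Ex) \<and>
        Ex' \<le> \<rho>3 * Ex + \<alpha>\<^sup>2 * b * (u + Ey + Ex) \<and>
        Ey' \<le> \<rho>3 * Ey + PP * Ex + \<alpha>\<^sup>2 * b * (u + Ey + Ex)
      \<longrightarrow> u' + \<alpha> * A * Ey' + \<alpha> * B * Ex' \<le> r * (u + \<alpha> * A * Ey + \<alpha> * B * Ex)))"
    using lyap[OF th(1) th(2) a1 b PP r3] by blast
  define \<alpha>bar where "\<alpha>bar = min (min 1 (mt / (2 * Lg))) \<alpha>max"
  have abar: "0 < \<alpha>bar" using am mt_pos Lg_pos by (simp add: \<alpha>bar_def)
  show ?thesis
  proof (rule exI[of _ \<alpha>bar], intro conjI allI impI)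
    show "0 < \<alpha>bar" by (fact abar)
    show "\<alpha>bar \<le> 1" by (simp add: \<alpha>bar_def)
    fix \<alpha> :: real and x y xh :: "nat \<Rightarrow> nat \<Rightarrow> 'a"
    assume H: "0 < \<alpha> \<and> \<alpha> < \<alpha>bar \<and> sonata_run m K W gf ft G \<alpha> x y xh"
    have a0: "0 < \<alpha>" and a1': "\<alpha> \<le> 1" and amx: "\<alpha> \<le> \<alpha>max" and run: "sonata_run m K W gf ft G \<alpha> x y xh"
      using H by (auto simp: \<alpha>bar_def)
    have aL: "\<alpha> * Lg \<le> mt / 2"
    proof -
      have "\<alpha> \<le> mt / (2 * Lg)" using H by (simp add: \<alpha>bar_def)
      hence "\<alpha> * Lg \<le> mt / (2 * Lg) * Lg" using Lg_pos by (intro mult_right_mono) auto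
      also have "\<dots> = mt / 2" using Lg_pos by simp
      finally show ?thesis .
    qed
    interpret R: sonata_run_ctx m K Oset f gf Hf G \<mu> L xstar E W ft gft Lt mut \<alpha> x y xh
      by (intro sonata_run_ctx.intro sonata_setting_axioms sonata_run_ctx_axioms.intro run a0 a1')
    have ex: "\<exists>A B r. A \<ge> 0 \<and> B \<ge> 0 \<and> 0 < r \<and> r < 1 \<and>
     (\<forall>u Ex Ey u' Ex' Ey' :: real. u \<ge> 0 \<and> Ex \<ge> 0 \<and> Ey \<ge> 0 \<and>
        u' \<le> (1 - \<theta> * \<alpha>) * u + \<alpha> * a1 * (Ey + Ex) \<and>
        Ex' \<le> \<rho>3 * Ex + \<alpha>\<^sup>2 * b * (u + Ey + Ex) \<and>
        Ey' \<le> \<rho>3 * Ey + PP * Ex + \<alpha>\<^sup>2 * b * (u + Ey + Ex)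
      \<longrightarrow> u' + \<alpha> * A * Ey' + \<alpha> * B * Ex' \<le> r * (u + \<alpha> * A * Ey + \<alpha> * B * Ex))"
      by (rule LY[rule_format]) (use a0 amx in simp)
    then obtain A B r where AB0: "A \<ge> 0" "B \<ge> 0" "0 < r" "r < 1"
      and LYa: "\<forall>u Ex Ey u' Ex' Ey' :: real. u \<ge> 0 \<and> Ex \<ge> 0 \<and> Ey \<ge> 0 \<and>
        u' \<le> (1 - \<theta> * \<alpha>) * u + \<alpha> * a1 * (Ey + Ex) \<and>
        Ex' \<le> \<rho>3 * Ex + \<alpha>\<^sup>2 * b * (u + Ey + Ex) \<and>
        Ey' \<le> \<rho>3 * Ey + PP * Ex + \<alpha>\<^sup>2 * b * (u + Ey + Ex)
      \<longrightarrow> u' + \<alpha> * A * Ey' + \<alpha> * B * Ex' \<le> r * (u + \<alpha> * A * Ey + \<alpha> * B * Ex)"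
      by (elim exE conjE) (rule that, assumption+)
    define V where "V \<nu> = uu x \<nu> + \<alpha> * A * Ev y \<nu> + \<alpha> * B * Ev x \<nu>" for \<nu>
    have step: "V (Suc \<nu>) \<le> r * V \<nu>" for \<nu>
    proof -
      let ?u = "uu x \<nu>" and ?Ex = "Ev x \<nu>" and ?Ey = "Ev y \<nu>" and ?D = "R.Dsum \<nu>" and ?S = "R.Ssum \<nu>"
      have u0: "?u \<ge> 0" by (rule R.uu_nonneg)
      have Ex0: "?Ex \<ge> 0" and Ey0: "?Ey \<ge> 0" by (rule Ev_nonneg)+
      have S0: "?S \<ge> 0" unfolding R.Ssum_def by (intro sum_nonneg) auto
      have u1: "uu x (Suc \<nu>) \<le> (1 - \<theta> * \<alpha>) * ?u + \<alpha> * C4 * ?S" by (rule R.u_D_step(1)[OF aL AB])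
      have D1: "?D \<le> C5 * (?u + ?S)" by (rule R.u_D_step(2)[OF aL AB])
      have S1: "?S \<le> 3 * ?Ey + 6 * Lg\<^sup>2 * ?Ex" unfolding R.Ssum_def by (rule R.S_bound)
      have E1: "Ev x (Suc \<nu>) \<le> \<rho> * ((1 + \<eta>) * ?Ex + (1 + 1 / \<eta>) * \<alpha>\<^sup>2 * ?D)"
        by (rule R.Ex_step[OF rho _ eta]) (use \<rho> in simp)
      have E2: "Ev y (Suc \<nu>) \<le> \<rho> * ((1 + \<eta>) * ?Ey + (1 + 1 / \<eta>) * (Lg\<^sup>2 * (9 * ?Ex + 9 * \<alpha>\<^sup>2 * ?D)))"
        by (rule R.Ey_step[OF rho _ _ eta]) (use \<rho> in simp_all)
      have SP: "?S \<le> P2 * (?Ey + ?Ex)"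
      proof -
        have "3 * ?Ey \<le> P2 * ?Ey" using P2 Ey0 by (intro mult_right_mono) auto
        moreover have "6 * Lg\<^sup>2 * ?Ex \<le> P2 * ?Ex" using P2 Ex0 by (intro mult_right_mono) auto
        ultimately show ?thesis using S1 by (simp add: distrib_left)
      qed
      have DP: "?D \<le> C5 * (1 + P2) * (?u + ?Ey + ?Ex)"
      proof -
        have "?u + ?S \<le> ?u + P2 * (?Ey + ?Ex)" using SP by simp
        also have "\<dots> \<le> (1 + P2) * (?u + ?Ey + ?Ex)" using u0 Ex0 Ey0 P2 by (simp add: algebra_simps)
        finally have "C5 * (?u + ?S) \<le> C5 * ((1 + P2) * (?u + ?Ey + ?Ex))" using th by (intro mult_left_mono) auto
        thus ?thesis using D1 by (simp add: mult.assoc)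
      qed
      have W0: "?u + ?Ey + ?Ex \<ge> 0" using u0 Ex0 Ey0 by simp
      have bge1: "Cd * C5 * (1 + P2) \<le> b"
      proof -
        have "Cd * C5 * (1 + P2) * 1 \<le> Cd * C5 * (1 + P2) * (1 + 9 * Lg\<^sup>2)"
          using Cd th P2 by (intro mult_left_mono) auto
        thus ?thesis by (simp add: b_def)
      qed
      have bge2: "9 * Cd * Lg\<^sup>2 * (C5 * (1 + P2)) \<le> b"
      proof -
        have "9 * Cd * Lg\<^sup>2 * (C5 * (1 + P2)) = Cd * C5 * (1 + P2) * (9 * Lg\<^sup>2)" by (simp add: algebra_simps)
        also have "\<dots> \<le> Cd * C5 * (1 + P2) * (1 + 9 * Lg\<^sup>2)" using Cd th P2 by (intro mult_left_mono) auto
        finally show ?thesis by (simp add: b_def)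
      qed
      have a2: "\<alpha>\<^sup>2 \<ge> 0" by simp
      have hu: "uu x (Suc \<nu>) \<le> (1 - \<theta> * \<alpha>) * ?u + \<alpha> * a1 * (?Ey + ?Ex)"
      proof -
        have "\<alpha> * C4 * ?S \<le> \<alpha> * C4 * (P2 * (?Ey + ?Ex))" using SP a0 th by (intro mult_left_mono) auto
        thus ?thesis using u1 by (simp add: a1_def mult.assoc)
      qed
      have hx: "Ev x (Suc \<nu>) \<le> \<rho>3 * ?Ex + \<alpha>\<^sup>2 * b * (?u + ?Ey + ?Ex)"
      proof -
        have "\<rho> * ((1 + \<eta>) * ?Ex + (1 + 1 / \<eta>) * \<alpha>\<^sup>2 * ?D) = \<rho>3 * ?Ex + \<alpha>\<^sup>2 * (Cd * ?D)"
          by (simp add: \<rho>3_def Cd_def algebra_simps)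
        also have "Cd * ?D \<le> Cd * (C5 * (1 + P2) * (?u + ?Ey + ?Ex))" using DP Cd by (intro mult_left_mono)
        also have "\<dots> = (Cd * C5 * (1 + P2)) * (?u + ?Ey + ?Ex)" by (simp add: mult.assoc)
        also have "\<dots> \<le> b * (?u + ?Ey + ?Ex)" using bge1 W0 by (intro mult_right_mono)
        finally show ?thesis using E1 a2 by (simp add: mult_left_mono mult.assoc)
      qed
      have hy: "Ev y (Suc \<nu>) \<le> \<rho>3 * ?Ey + PP * ?Ex + \<alpha>\<^sup>2 * b * (?u + ?Ey + ?Ex)"
      proof -
        have "\<rho> * ((1 + \<eta>) * ?Ey + (1 + 1 / \<eta>) * (Lg\<^sup>2 * (9 * ?Ex + 9 * \<alpha>\<^sup>2 * ?D)))
            = \<rho>3 * ?Ey + PP * ?Ex + \<alpha>\<^sup>2 * (9 * Cd * Lg\<^sup>2 * ?D)"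
          by (simp add: \<rho>3_def Cd_def PP_def algebra_simps)
        also have "9 * Cd * Lg\<^sup>2 * ?D \<le> 9 * Cd * Lg\<^sup>2 * (C5 * (1 + P2) * (?u + ?Ey + ?Ex))"
          using DP Cd by (intro mult_left_mono) auto
        also have "\<dots> = (9 * Cd * Lg\<^sup>2 * (C5 * (1 + P2))) * (?u + ?Ey + ?Ex)" by (simp add: mult.assoc)
        also have "\<dots> \<le> b * (?u + ?Ey + ?Ex)" using bge2 W0 by (intro mult_right_mono)
        finally show ?thesis using E2 a2 by (simp add: mult_left_mono mult.assoc)
      qed
      have "uu x (Suc \<nu>) + \<alpha> * A * Ev y (Suc \<nu>) + \<alpha> * B * Ev x (Suc \<nu>) \<le> r * (?u + \<alpha> * A * ?Ey + \<alpha> * B * ?Ex)"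
        by (rule LYa[rule_format]) (intro conjI u0 Ex0 Ey0 hu hx hy)
      thus ?thesis by (simp add: V_def)
    qed
    have Vb: "V \<nu> \<le> V 0 * r ^ \<nu>" for \<nu>
    proof (induction \<nu>)
      case 0 show ?case by simp
    next
      case (Suc n)
      have "V (Suc n) \<le> r * V n" by (rule step)
      also have "\<dots> \<le> r * (V 0 * r ^ n)" using Suc AB0 by (intro mult_left_mono) auto
      finally show ?case by (simp add: algebra_simps)
    qed
    fix i assume i: "i < m"
    show "\<exists>z C. 0 < z \<and> z < 1 \<and> (\<forall>\<nu>. \<bar>Uf (x i \<nu>) - Uf xstar\<bar> \<le> C * z ^ \<nu>)"
      proof (rule exI[of _ r], rule exI[of _ "V 0"], intro conjI allI)
        show "0 < r" "r < 1" by (fact AB0)+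
        fix \<nu>
        have nn: "Uf (x i \<nu>) - Uf xstar \<ge> 0" using xstar_minU[OF R.xK[OF i]] by simp
        have "Uf (x i \<nu>) - Uf xstar \<le> uu x \<nu>"
          unfolding uu_def using member_le_sum[of i "{..<m}" "\<lambda>j. Uf (x j \<nu>) - Uf xstar"] i xstar_minU R.xK by auto
        also have "uu x \<nu> \<le> V \<nu>"
          using AB0 a0 Ev_nonneg[of y \<nu>] Ev_nonneg[of x \<nu>] by (simp add: V_def)
        also have "\<dots> \<le> V 0 * r ^ \<nu>" by (rule Vb)
        finally show "\<bar>Uf (x i \<nu>) - Uf xstar\<bar> \<le> V 0 * r ^ \<nu>" using nn by simp
      qed
  qed
qed

end

theorem theorem3p9:
  fixes m :: nat
    and K Oset :: "'a::euclidean_space set"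
    and f :: "nat \<Rightarrow> 'a \<Rightarrow> real"
    and gf :: "nat \<Rightarrow> 'a \<Rightarrow> 'a"
    and Hf :: "nat \<Rightarrow> 'a \<Rightarrow> 'a \<Rightarrow> 'a"
    and G :: "'a \<Rightarrow> real"
    and \<mu> L :: real
    and xstar :: 'a
    and E :: "(nat \<times> nat) set"
    and W :: "nat \<Rightarrow> nat \<Rightarrow> real"
    and ft :: "nat \<Rightarrow> 'a \<Rightarrow> 'a \<Rightarrow> real"
    and gft :: "nat \<Rightarrow> 'a \<Rightarrow> 'a \<Rightarrow> 'a"
    and Hft :: "nat \<Rightarrow> 'a \<Rightarrow> 'a \<Rightarrow> 'a \<Rightarrow> 'a"
    and Lt mut Dl Du :: "nat \<Rightarrow> real"
  defines "HF \<equiv> (\<lambda>x h. (1 / real m) *\<^sub>R (\<Sum>i<m. Hf i x h))"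
    and "U \<equiv> (\<lambda>x. (1 / real m) * (\<Sum>i<m. f i x) + G x)"
  assumes m_pos: "m \<ge> 1"
    (* Assumption (A) *)
    and K_ne: "K \<noteq> {}" and K_closed: "closed K" and K_convex: "convex K"
    and O_open: "open Oset" and K_sub_O: "K \<subseteq> Oset"
    and f_grad: "\<And>i x. i < m \<Longrightarrow> x \<in> Oset \<Longrightarrow> (f i has_derivative (\<lambda>h. gf i x \<bullet> h)) (at x)"
    and f_hess: "\<And>i x. i < m \<Longrightarrow> x \<in> Oset \<Longrightarrow> (gf i has_derivative Hf i x) (at x)"
    and f_convex: "\<And>i. i < m \<Longrightarrow> convex_on Oset (f i)"
    and mu_pos: "\<mu> > 0"
    and F_hess_bounds: "\<And>x h. x \<in> K \<Longrightarrow>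
          \<mu> * (norm h)\<^sup>2 \<le> h \<bullet> HF x h \<and> h \<bullet> HF x h \<le> L * (norm h)\<^sup>2"
    and G_convex: "convex_on K G"
    and xstar_min: "xstar \<in> K" "\<And>x. x \<in> K \<Longrightarrow> U xstar \<le> U x"
    (* Assumption (B) *)
    and graph: "connected_undirected_graph m E"
    (* Assumption (W) *)
    and W_ok: "weight_matrix_ok m E W"
    (* Assumption (C) *)
    and ft_C2: "\<And>i. i < m \<Longrightarrow> C2_on (Oset \<times> Oset) (\<lambda>p. ft i (fst p) (snd p))"
    and ft_grad: "\<And>i x y. i < m \<Longrightarrow> x \<in> Oset \<Longrightarrow> y \<in> Oset \<Longrightarrow>
          ((\<lambda>z. ft i z y) has_derivative (\<lambda>h. gft i x y \<bullet> h)) (at x)"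
    and ft_hess: "\<And>i x y. i < m \<Longrightarrow> x \<in> Oset \<Longrightarrow> y \<in> Oset \<Longrightarrow>
          ((\<lambda>z. gft i z y) has_derivative Hft i x y) (at x)"
    and ft_consistent: "\<And>i x. i < m \<Longrightarrow> x \<in> K \<Longrightarrow> gft i x x = gf i x"
    and ft_lipschitz: "\<And>i x. i < m \<Longrightarrow> x \<in> K \<Longrightarrow> lipschitz_on (Lt i) K (\<lambda>z. gft i z x)"
    and mut_pos: "\<And>i. i < m \<Longrightarrow> mut i > 0"
    and ft_strongly_convex: "\<And>i x. i < m \<Longrightarrow> x \<in> K \<Longrightarrow> strongly_convex_on (mut i) K (\<lambda>z. ft i z x)"
    and D_le: "\<And>i. i < m \<Longrightarrow> Dl i \<le> Du i"
    and D_bounds: "\<And>i x y h. i < m \<Longrightarrow> x \<in> K \<Longrightarrow> y \<in> K \<Longrightarrow>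
          Dl i * (norm h)\<^sup>2 \<le> h \<bullet> (Hft i x y h - HF x h) \<and>
          h \<bullet> (Hft i x y h - HF x h) \<le> Du i * (norm h)\<^sup>2"
    (* the condition of the theorem *)
    and mu_min_ge: "Min (mut ` {..<m}) \<ge> Min (Dl ` {..<m})"
  shows "\<exists>\<alpha>bar. 0 < \<alpha>bar \<and> \<alpha>bar \<le> 1 \<and>
           (\<forall>\<alpha> x y xh. 0 < \<alpha> \<and> \<alpha> < \<alpha>bar \<and> sonata_run m K W gf ft G \<alpha> x y xh \<longrightarrow>
              (\<forall>i<m. \<exists>z C. 0 < z \<and> z < 1 \<and>
                 (\<forall>\<nu>. \<bar>U (x i \<nu>) - U xstar\<bar> \<le> C * z ^ \<nu>)))"
proof -
  have F': "\<And>x h. x \<in> K \<Longrightarrow>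
          \<mu> * (norm h)\<^sup>2 \<le> h \<bullet> ((1 / real m) *\<^sub>R (\<Sum>i<m. Hf i x h)) \<and>
          h \<bullet> ((1 / real m) *\<^sub>R (\<Sum>i<m. Hf i x h)) \<le> L * (norm h)\<^sup>2"
    using F_hess_bounds unfolding HF_def by simp
  have X': "\<And>x. x \<in> K \<Longrightarrow> (1 / real m) * (\<Sum>i<m. f i xstar) + G xstar \<le> (1 / real m) * (\<Sum>i<m. f i x) + G x"
    using xstar_min(2) unfolding U_def by simp
  have SS: "sonata_setting m K Oset f gf Hf G \<mu> L xstar E W ft gft Lt mut"
    by (rule sonata_setting.intro, (fact m_pos K_ne K_convex O_open K_sub_O f_grad f_hess f_convex mu_pos F'
        G_convex xstar_min(1) X' graph W_ok ft_grad ft_consistent ft_lipschitz mut_pos ft_strongly_convex)+)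
  interpret S: sonata_setting m K Oset f gf Hf G \<mu> L xstar E W ft gft Lt mut by (rule SS)
  have U_eq: "U = S.Uf" by (simp add: fun_eq_iff U_def S.Uf_def S.F_def)
  show ?thesis using S.main_conv unfolding U_eq .
qed

end
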